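(* Let $A\in{\sf BDO}(\Gamma)$ and $\mathbf A:=(P_{Y_n}AP_{Y_n})_{n\ge1}$. (i) Let $h$ tend to infinity such that the limit operator $(\mathrm{Op}(\mathbf A)+P_{\Gamma'})_h$ exists, and suppose there is an integer $r\ge0$ such that for infinitely many $n$ there is $k$ with $h(n)\in v_k(\partial_\Omega Y_k)^{-1}\Omega_r$. Then one can choose a strictly increasing sequence $(k_j)$, elements $\eta_j\in(\partial_\Omega Y_{k_j})^{-1}$ and $w_*\in\Gamma$ such that $(v_{k_j}\eta_jw_* )_j$ is a subsequence of $h$, the strong limit $\mathrm{s\text{-}lim}_j P_{Y_{k_j}\eta_jw_*}=:P_{\mathcal Y^{(h)}}$ exists for some set $\mathcal Y^{(h)}\subseteq\Gamma$, and there is a limit operator $A_g$ of $A$ with respect to a subsequence $g$ of $(\eta_jw_* )_j$ such that \[(\mathrm{Op}(\mathbf A)+P_{\Gamma'})_h=P_{\mathcal Y^{(h)}}A_gP_{\mathcal Y^{(h)}}+(I-P_{\mathcal Y^{(h)}}).\] (ii) Conversely, let $(k_n)$ be strictly increasing, $\eta_{k_n}\in(\partial_\Omega Y_{k_n})^{-1}$, $w_*\in\Gamma$, such that $\mathrm{s\text{-}lim}_nP_{Y_{k_n}\eta_{k_n}w_*}=P_{\mathcal Y^{(h)}}$ exists, and let $A_g$ be the limit operator of $A$ with respect to a subsequence $g=(g_r)_{r\ge1}=(\eta_{k_{n_r}}w_* )_{r\ge1}$. Then for $h:=(v_{k_{n_r}}g_r)_{r\ge1}$ the limit operator $(\mathrm{Op}(\mathbf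 A)+P_{\Gamma'})_h$ exists and equals $P_{\mathcal Y^{(h)}}A_gP_{\mathcal Y^{(h)}}+(I-P_{\mathcal Y^{(h)}})$.
   Context: $\Gamma$ is a countable discrete group with identity $e$. For $X\subseteq\Gamma$, $P_X$ is the orthogonal projection of $l^2(\Gamma)$ onto $l^2(X)$. For $r\in\Gamma$, $(L_ru)(t)=u(r^{-1}t)$ and $(R_ru)(t)=u(tr)$. ${\sf BDO}(\Gamma)$ is the smallest closed subalgebra of $L(l^2(\Gamma))$ containing all $L_r$ and all multiplication operators $aI$, $a\in l^\infty(\Gamma)$. $\Omega\subseteq\Gamma$ is finite, contains $e$, generates $\Gamma$ as a semigroup; $\Omega_0=\{e\}$, $\Omega_n$ = set of products of at most $n$ elements of $\Omega$. For $A\subseteq\Gamma$: $\mathrm{int}_\Omega A=\{a\in A:\Omega a\subseteq A\}$, $\partial_\Omega A=A\setminus\mathrm{int}_\Omega A$; set products and inverses are elementwise. $\mathcal Y=(Y_n)$ is an increasing sequence of finite subsets of $\Gamma$ with union $\Gamma$. Fix $(v_n)$ in $\Gamma$ inflating for $Z_n:=(Y_n\cup\Omega_n)(Y_n\cup\Omega_n)^{-1}(Y_n\cup\Omega_n)$, i.e. $Z_mv_m^{-1}\cap Z_nv_n^{-1}=\emptyset$ for $m\ne n$. For a bounded sequence $\mathbf A=(A_n)$ of operators on $\mathrm{im}\,P_{Y_n}$, $\mathrm{Op}(\mathbf A):=\sum_nR_{v_n}A_nP_{Y_n}R_{v_n}^{-1}$ (strongly convergent), and $\Gamma':=\Gamma\setminus\bigcup_nY_nv_n^{-1}$.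 A sequence $h:\mathbb N\to\Gamma$ tends to infinity if for each finite $\Gamma_0$, $h(n)\notin\Gamma_0$ for large $n$. For $B\in L(l^2(\Gamma))$, $B_h$ is the limit operator of $B$ with respect to $h$ if $R_{h(m)}^{-1}BR_{h(m)}\to B_h$ and $R_{h(m)}^{-1}B^*R_{h(m)}\to B_h^*$ strongly. *)

theory Defs
  imports "HOL-Analysis.Analysis" "HOL-Library.Countable"
begin

text \<open>The group \<Gamma> is a type of class group_add (not necessarily commutative) written
additively: the product t r is t + r, the inverse r^-1 is -r, the identity e is 0.\<close>

type_synonym 'g lop = "('g \<Rightarrow> complex) \<Rightarrow> ('g \<Rightarrow> complex)"

definition l2 :: "('g \<Rightarrow> complex) set" where
  "l2 = {u. (\<lambda>t. (cmod (u t))\<^sup>2) summable_on UNIV}"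

definition l2norm :: "('g \<Rightarrow> complex) \<Rightarrow> real" where
  "l2norm u = sqrt (\<Sum>\<^sub>\<infinity>t. (cmod (u t))\<^sup>2)"

definition l2inner :: "('g \<Rightarrow> complex) \<Rightarrow> ('g \<Rightarrow> complex) \<Rightarrow> complex" where
  "l2inner u v = (\<Sum>\<^sub>\<infinity>t. u t * cnj (v t))"

definition Proj :: "'g set \<Rightarrow> 'g lop" where
  "Proj X u = (\<lambda>t. if t \<in> X then u t else 0)"

definition Lsh :: "'g::group_add \<Rightarrow> 'g lop" where
  "Lsh r u = (\<lambda>t. u (- r + t))"

definition Rsh :: "'g::group_add \<Rightarrow> 'g lop" where
  "Rsh r u = (\<lambda>t. u (t + r))"

definition mult_op :: "('g \<Rightarrow> complex) \<Rightarrow> 'g lop" where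
  "mult_op a u = (\<lambda>t. a t * u t)"

inductive_set BDO_gen :: "('g::group_add) lop set" where
  shift: "Lsh r \<in> BDO_gen"
| mult: "bounded (range a) \<Longrightarrow> mult_op a \<in> BDO_gen"
| add: "S \<in> BDO_gen \<Longrightarrow> T \<in> BDO_gen \<Longrightarrow> (\<lambda>u t. S u t + T u t) \<in> BDO_gen"
| scale: "S \<in> BDO_gen \<Longrightarrow> (\<lambda>u t. c * S u t) \<in> BDO_gen"
| comp: "S \<in> BDO_gen \<Longrightarrow> T \<in> BDO_gen \<Longrightarrow> S \<circ> T \<in> BDO_gen"

definition BDO :: "('g::group_add) lop set" where
  "BDO = {A. \<forall>\<epsilon>>0. \<exists>B\<in>BDO_gen. \<forall>u\<in>l2.
      (\<lambda>t. A u t - B u t) \<in> l2 \<and> l2norm (\<lambda>t. A u t - B u t) \<le> \<epsilon> * l2norm u}"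

definition strong_conv :: "(nat \<Rightarrow> 'g lop) \<Rightarrow> 'g lop \<Rightarrow> bool" where
  "strong_conv T S \<longleftrightarrow> (\<forall>u\<in>l2. S u \<in> l2 \<and> (\<forall>n. T n u \<in> l2) \<and>
      (\<lambda>n. l2norm (\<lambda>t. T n u t - S u t)) \<longlonglongrightarrow> 0)"

definition is_adjoint :: "'g lop \<Rightarrow> 'g lop \<Rightarrow> bool" where
  "is_adjoint B C \<longleftrightarrow> (\<forall>u\<in>l2. \<forall>w\<in>l2. B u \<in> l2 \<and> C w \<in> l2 \<and>
      l2inner (B u) w = l2inner u (C w))"

definition is_limit_op :: "('g::group_add) lop \<Rightarrow> (nat \<Rightarrow> 'g) \<Rightarrow> 'g lop \<Rightarrow> bool" where
  "is_limit_op B h Bh \<longleftrightarrow>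
     strong_conv (\<lambda>m. Rsh (- h m) \<circ> B \<circ> Rsh (h m)) Bh \<and>
     (\<exists>Bs Bhs. is_adjoint B Bs \<and> is_adjoint Bh Bhs \<and>
        strong_conv (\<lambda>m. Rsh (- h m) \<circ> Bs \<circ> Rsh (h m)) Bhs)"

definition tends_to_inf :: "(nat \<Rightarrow> 'g) \<Rightarrow> bool" where
  "tends_to_inf h \<longleftrightarrow> (\<forall>F. finite F \<longrightarrow> (\<forall>\<^sub>F n in sequentially. h n \<notin> F))"

definition gmul :: "'g::group_add set \<Rightarrow> 'g set \<Rightarrow> 'g set" where
  "gmul X Z = {a + b | a b. a \<in> X \<and> b \<in> Z}"

definition ginv :: "'g::group_add set \<Rightarrow> 'g set" where
  "ginv X = uminus ` X"

fun Omega_pow :: "'g::group_add set \<Rightarrow> nat \<Rightarrow> 'g set" where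
  "Omega_pow \<Omega> 0 = {0}"
| "Omega_pow \<Omega> (Suc n) = gmul \<Omega> (Omega_pow \<Omega> n)"

definition Omega_le :: "'g::group_add set \<Rightarrow> nat \<Rightarrow> 'g set" where
  "Omega_le \<Omega> n = (\<Union>k\<le>n. Omega_pow \<Omega> k)"

definition int_Om :: "'g::group_add set \<Rightarrow> 'g set \<Rightarrow> 'g set" where
  "int_Om \<Omega> X = {a \<in> X. \<forall>w\<in>\<Omega>. w + a \<in> X}"

definition bd_Om :: "'g::group_add set \<Rightarrow> 'g set \<Rightarrow> 'g set" where
  "bd_Om \<Omega> X = X - int_Om \<Omega> X"

definition Zset :: "'g::group_add set \<Rightarrow> (nat \<Rightarrow> 'g set) \<Rightarrow> nat \<Rightarrow> 'g set" where
  "Zset \<Omega> Y n = (let W = Y n \<union> Omega_le \<Omega> n in gmul (gmul W (ginv W)) W)"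

text \<open>Op(A) = \<Sum>_{n\<ge>1} R_{v_n} A_n P_{Y_n} R_{v_n}^{-1}; the summands have pairwise disjoint
supports, so the strong limit is computed pointwise.\<close>
definition Op_seq :: "(nat \<Rightarrow> 'g::group_add) \<Rightarrow> (nat \<Rightarrow> 'g set) \<Rightarrow> (nat \<Rightarrow> 'g lop) \<Rightarrow> 'g lop" where
  "Op_seq v Y As u = (\<lambda>t. \<Sum>n. if n = 0 then 0
      else Rsh (v n) (As n (Proj (Y n) (Rsh (- v n) u))) t)"

definition Gamma' :: "(nat \<Rightarrow> 'g set) \<Rightarrow> (nat \<Rightarrow> 'g::group_add) \<Rightarrow> 'g set" where
  "Gamma' Y v = UNIV - (\<Union>n\<in>{1..}. gmul (Y n) {- v n})"

end

theory Submission
  imports Defs "HOL-Library.Diagonal_Subsequence"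
begin

lemma sq_nonneg': "0 \<le> (cmod z)\<^sup>2" by simp

lemma l2_summable: "u \<in> l2 \<Longrightarrow> (\<lambda>t. (cmod (u t))\<^sup>2) summable_on A"
  unfolding l2_def by (auto intro: summable_on_subset_banach)

lemma l2_finsum_le_infsum:
  assumes "u \<in> l2" "finite F"
  shows "(\<Sum>t\<in>F. (cmod (u t))\<^sup>2) \<le> (\<Sum>\<^sub>\<infinity>t. (cmod (u t))\<^sup>2)"
  using assms by (intro finite_sum_le_infsum) (auto simp: l2_def)

lemma l2norm_sq: "(l2norm u)\<^sup>2 = (\<Sum>\<^sub>\<infinity>t. (cmod (u t))\<^sup>2)"
proof -
  have "0 \<le> (\<Sum>\<^sub>\<infinity>t. (cmod (u t))\<^sup>2)" by (rule infsum_nonneg) simp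
  then show ?thesis unfolding l2norm_def by simp
qed

lemma l2norm_ge0[simp]: "0 \<le> l2norm u"
proof -
  have "0 \<le> (\<Sum>\<^sub>\<infinity>t. (cmod (u t))\<^sup>2)" by (rule infsum_nonneg) simp
  then show ?thesis unfolding l2norm_def by simp
qed

lemma l2_finsum_le:
  assumes "u \<in> l2" "finite F"
  shows "(\<Sum>t\<in>F. (cmod (u t))\<^sup>2) \<le> (l2norm u)\<^sup>2"
  using l2_finsum_le_infsum[OF assms] l2norm_sq[of u] by simp

lemma l2I:
  assumes C: "0 \<le> C" and b: "\<And>F. finite F \<Longrightarrow> (\<Sum>t\<in>F. (cmod (u t))\<^sup>2) \<le> C\<^sup>2"
  shows "u \<in> l2 \<and> l2norm u \<le> C"
proof -
  have bdd: "bdd_above (sum (\<lambda>t. (cmod (u t))\<^sup>2) ` {F. F \<subseteq> UNIV \<and> finite F})"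
    using b by (intro bdd_aboveI2[where M="C\<^sup>2"]) auto
  have s: "(\<lambda>t. (cmod (u t))\<^sup>2) summable_on UNIV"
    by (rule nonneg_bdd_above_summable_on[OF _ bdd]) auto
  have eq: "(\<Sum>\<^sub>\<infinity>t. (cmod (u t))\<^sup>2) = (SUP F\<in>{F. finite F \<and> F \<subseteq> UNIV}. (\<Sum>t\<in>F. (cmod (u t))\<^sup>2))"
    by (rule infsum_nonneg_is_SUPREMUM_real[OF s]) auto
  have "(SUP F\<in>{F. finite F \<and> F \<subseteq> UNIV}. (\<Sum>t\<in>F. (cmod (u t))\<^sup>2)) \<le> C\<^sup>2"
    by (rule cSUP_least) (use b in auto)
  then have "(\<Sum>\<^sub>\<infinity>t. (cmod (u t))\<^sup>2) \<le> C\<^sup>2" using eq by simp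
  then have "l2norm u \<le> sqrt (C\<^sup>2)" unfolding l2norm_def by (rule real_sqrt_le_mono)
  with C have "l2norm u \<le> C" by simp
  with s show ?thesis by (simp add: l2_def)
qed

lemma l2_approx:
  assumes "u \<in> l2" "0 < e"
  shows "\<exists>F. finite F \<and> (l2norm u)\<^sup>2 - e < (\<Sum>t\<in>F. (cmod (u t))\<^sup>2)"
proof -
  have s: "(\<lambda>t. (cmod (u t))\<^sup>2) summable_on UNIV" using assms l2_def by auto
  have eq: "(\<Sum>\<^sub>\<infinity>t. (cmod (u t))\<^sup>2) = (SUP F\<in>{F. finite F \<and> F \<subseteq> UNIV}. (\<Sum>t\<in>F. (cmod (u t))\<^sup>2))"
    by (rule infsum_nonneg_is_SUPREMUM_real[OF s]) auto
  have bdd: "bdd_above ((\<lambda>F. \<Sum>t\<in>F. (cmod (u t))\<^sup>2) ` {F. finite F \<and> F \<subseteq> UNIV})"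
    using l2_finsum_le[OF assms(1)] by (intro bdd_aboveI2) auto
  have "(l2norm u)\<^sup>2 - e < (SUP F\<in>{F. finite F \<and> F \<subseteq> UNIV}. (\<Sum>t\<in>F. (cmod (u t))\<^sup>2))"
    using eq l2norm_sq[of u] assms by simp
  then show ?thesis using less_cSUP_iff[OF _ bdd] by auto
qed

lemma l2_tail:
  assumes "u \<in> l2" "0 < e"
  shows "\<exists>F. finite F \<and> (\<lambda>t. if t \<in> F then 0 else u t) \<in> l2 \<and> l2norm (\<lambda>t. if t \<in> F then 0 else u t) \<le> e"
proof -
  obtain F where F: "finite F" "(l2norm u)\<^sup>2 - e\<^sup>2 < (\<Sum>t\<in>F. (cmod (u t))\<^sup>2)"
    using l2_approx[OF assms(1), of "e\<^sup>2"] assms by auto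
  have "(\<lambda>t. if t \<in> F then 0 else u t) \<in> l2 \<and> l2norm (\<lambda>t. if t \<in> F then 0 else u t) \<le> e"
  proof (rule l2I)
    fix G :: "'a set" assume G: "finite G"
    have "(\<Sum>t\<in>G. (cmod (if t \<in> F then 0 else u t))\<^sup>2) = (\<Sum>t\<in>G - F. (cmod (u t))\<^sup>2)"
      using G by (intro sum.mono_neutral_cong_right) auto
    also have "\<dots> = (\<Sum>t\<in>(G \<union> F). (cmod (u t))\<^sup>2) - (\<Sum>t\<in>F. (cmod (u t))\<^sup>2)"
    proof -
      have "(\<Sum>t\<in>(G \<union> F). (cmod (u t))\<^sup>2) = (\<Sum>t\<in>(G - F) \<union> F. (cmod (u t))\<^sup>2)" by (simp add: Un_Diff_cancel2)
      also have "\<dots> = (\<Sum>t\<in>G - F. (cmod (u t))\<^sup>2) + (\<Sum>t\<in>F. (cmod (u t))\<^sup>2)"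
        using G F by (intro sum.union_disjoint) auto
      finally show ?thesis by simp
    qed
    also have "\<dots> \<le> (l2norm u)\<^sup>2 - (\<Sum>t\<in>F. (cmod (u t))\<^sup>2)"
      using l2_finsum_le[OF assms(1), of "G \<union> F"] G F by simp
    also have "\<dots> \<le> e\<^sup>2" using F by simp
    finally show "(\<Sum>t\<in>G. (cmod (if t \<in> F then 0 else u t))\<^sup>2) \<le> e\<^sup>2" .
  qed (use assms in auto)
  with F show ?thesis by blast
qed

lemma l2_dom:
  assumes "u \<in> l2" "0 \<le> c" "\<And>t. cmod (x t) \<le> c * cmod (u t)"
  shows "x \<in> l2 \<and> l2norm x \<le> c * l2norm u"
proof (rule l2I)
  show "0 \<le> c * l2norm u" using assms by simp
  fix F :: "'a set" assume F: "finite F"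
  have "(\<Sum>t\<in>F. (cmod (x t))\<^sup>2) \<le> (\<Sum>t\<in>F. c\<^sup>2 * (cmod (u t))\<^sup>2)"
  proof (rule sum_mono)
    fix t show "(cmod (x t))\<^sup>2 \<le> c\<^sup>2 * (cmod (u t))\<^sup>2"
      using assms(3)[of t] by (metis norm_ge_zero power_mono power_mult_distrib)
  qed
  also have "\<dots> = c\<^sup>2 * (\<Sum>t\<in>F. (cmod (u t))\<^sup>2)" by (simp add: sum_distrib_left)
  also have "\<dots> \<le> c\<^sup>2 * (l2norm u)\<^sup>2" using l2_finsum_le[OF assms(1) F] by (simp add: mult_left_mono)
  also have "\<dots> = (c * l2norm u)\<^sup>2" by (simp add: power_mult_distrib)
  finally show "(\<Sum>t\<in>F. (cmod (x t))\<^sup>2) \<le> (c * l2norm u)\<^sup>2" .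
qed

lemma l2_dom1:
  assumes "u \<in> l2" "\<And>t. cmod (x t) \<le> cmod (u t)"
  shows "x \<in> l2 \<and> l2norm x \<le> l2norm u"
  using l2_dom[OF assms(1), of 1 x] assms(2) by simp

lemma l2_add:
  assumes "u \<in> l2" "w \<in> l2"
  shows "(\<lambda>t. u t + w t) \<in> l2 \<and> l2norm (\<lambda>t. u t + w t) \<le> l2norm u + l2norm w"
proof (rule l2I)
  show "0 \<le> l2norm u + l2norm w" by simp
  fix F :: "'a set" assume F: "finite F"
  have "sqrt (\<Sum>t\<in>F. (cmod (u t + w t))\<^sup>2) = L2_set (\<lambda>t. cmod (u t + w t)) F"
    by (simp add: L2_set_def)
  also have "\<dots> \<le> L2_set (\<lambda>t. cmod (u t) + cmod (w t)) F"
    by (rule L2_set_mono) (auto intro: norm_triangle_ineq)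
  also have "\<dots> \<le> L2_set (\<lambda>t. cmod (u t)) F + L2_set (\<lambda>t. cmod (w t)) F"
    by (rule L2_set_triangle_ineq)
  also have "\<dots> \<le> l2norm u + l2norm w"
  proof (rule add_mono)
    show "L2_set (\<lambda>t. cmod (u t)) F \<le> l2norm u"
      unfolding L2_set_def using l2_finsum_le[OF assms(1) F]
      by (metis l2norm_ge0 real_sqrt_le_iff real_sqrt_unique)
    show "L2_set (\<lambda>t. cmod (w t)) F \<le> l2norm w"
      unfolding L2_set_def using l2_finsum_le[OF assms(2) F]
      by (metis l2norm_ge0 real_sqrt_le_iff real_sqrt_unique)
  qed
  finally have "sqrt (\<Sum>t\<in>F. (cmod (u t + w t))\<^sup>2) \<le> l2norm u + l2norm w" .
  then show "(\<Sum>t\<in>F. (cmod (u t + w t))\<^sup>2) \<le> (l2norm u + l2norm w)\<^sup>2"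
  proof -
    have nn: "0 \<le> (\<Sum>t\<in>F. (cmod (u t + w t))\<^sup>2)" by (rule sum_nonneg) simp
    then have "(\<Sum>t\<in>F. (cmod (u t + w t))\<^sup>2) = (sqrt (\<Sum>t\<in>F. (cmod (u t + w t))\<^sup>2))\<^sup>2" by (rule real_sqrt_pow2[symmetric])
    also have "\<dots> \<le> (l2norm u + l2norm w)\<^sup>2"
      by (rule power_mono[OF \<open>sqrt _ \<le> _\<close>]) (use nn in simp)
    finally show ?thesis .
  qed
qed

lemma l2_scale:
  assumes "u \<in> l2"
  shows "(\<lambda>t. c * u t) \<in> l2 \<and> l2norm (\<lambda>t. c * u t) \<le> cmod c * l2norm u"
  using l2_dom[OF assms, of "cmod c" "\<lambda>t. c * u t"] by (simp add: norm_mult)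

lemma l2_uminus:
  assumes "u \<in> l2"
  shows "(\<lambda>t. - u t) \<in> l2 \<and> l2norm (\<lambda>t. - u t) \<le> l2norm u"
  using l2_dom1[OF assms, of "\<lambda>t. - u t"] by simp

lemma l2_diff:
  assumes "u \<in> l2" "w \<in> l2"
  shows "(\<lambda>t. u t - w t) \<in> l2 \<and> l2norm (\<lambda>t. u t - w t) \<le> l2norm u + l2norm w"
  using l2_add[OF assms(1) l2_uminus[OF assms(2), THEN conjunct1]] l2_uminus[OF assms(2)] by auto

lemma l2_zero[simp]: "(\<lambda>t. 0) \<in> l2" by (simp add: l2_def)
lemma l2norm_zero[simp]: "l2norm (\<lambda>t. 0) = 0" by (simp add: l2norm_def)

lemma l2_point:
  assumes "u \<in> l2"
  shows "cmod (u t) \<le> l2norm u"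
proof -
  have "(\<Sum>s\<in>{t}. (cmod (u s))\<^sup>2) \<le> (l2norm u)\<^sup>2" by (rule l2_finsum_le[OF assms]) auto
  then show ?thesis by (simp add: power2_le_iff_abs_le abs_le_square_iff)
qed

lemma l2norm_eq0:
  assumes "u \<in> l2" "l2norm u = 0"
  shows "u = (\<lambda>t. 0)"
  using l2_point[OF assms(1)] assms(2) by (auto intro!: ext)

lemma l2_reindex:
  assumes "bij p"
  shows "(\<lambda>t. u (p t)) \<in> l2 \<longleftrightarrow> u \<in> l2" and "l2norm (\<lambda>t. u (p t)) = l2norm u"
proof -
  have b: "bij_betw p UNIV UNIV" using assms by (simp add: bij_def)
  show "(\<lambda>t. u (p t)) \<in> l2 \<longleftrightarrow> u \<in> l2"
    unfolding l2_def using summable_on_reindex_bij_betw[OF b, of "\<lambda>t. (cmod (u t))\<^sup>2"] by simp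
  show "l2norm (\<lambda>t. u (p t)) = l2norm u"
    unfolding l2norm_def using infsum_reindex_bij_betw[OF b, of "\<lambda>t. (cmod (u t))\<^sup>2"] by simp
qed

lemma l2_finsupp:
  assumes "finite F" "\<And>t. t \<notin> F \<Longrightarrow> u t = 0"
  shows "u \<in> l2" and "(l2norm u)\<^sup>2 = (\<Sum>t\<in>F. (cmod (u t))\<^sup>2)"
proof -
  have "(\<lambda>t. (cmod (u t))\<^sup>2) summable_on UNIV"
    by (rule summable_on_cong_neutral[THEN iffD1, of _ F]) (use assms in auto)
  then show "u \<in> l2" by (simp add: l2_def)
  have "(\<Sum>\<^sub>\<infinity>t. (cmod (u t))\<^sup>2) = (\<Sum>\<^sub>\<infinity>t\<in>F. (cmod (u t))\<^sup>2)"
    by (rule infsum_cong_neutral) (use assms in auto)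
  then show "(l2norm u)\<^sup>2 = (\<Sum>t\<in>F. (cmod (u t))\<^sup>2)" using l2norm_sq[of u] assms by simp
qed


lemma L2_set_le_l2norm:
  assumes "u \<in> l2" shows "L2_set (\<lambda>t. cmod (u t)) F \<le> l2norm u"
proof (cases "finite F")
  case True
  then show ?thesis unfolding L2_set_def using l2_finsum_le[OF assms True]
    by (metis l2norm_ge0 real_sqrt_le_iff real_sqrt_unique)
qed simp

lemma inner_abs_summable:
  assumes "u \<in> l2" "w \<in> l2"
  shows "(\<lambda>t. norm (u t * cnj (w t))) summable_on A"
  and "\<And>F. finite F \<Longrightarrow> (\<Sum>t\<in>F. norm (u t * cnj (w t))) \<le> l2norm u * l2norm w"
proof -
  have b: "(\<Sum>t\<in>F. norm (u t * cnj (w t))) \<le> l2norm u * l2norm w" for F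
  proof -
    have "(\<Sum>t\<in>F. norm (u t * cnj (w t))) = (\<Sum>t\<in>F. \<bar>cmod (u t)\<bar> * \<bar>cmod (w t)\<bar>)"
      by (simp add: norm_mult)
    also have "\<dots> \<le> L2_set (\<lambda>t. cmod (u t)) F * L2_set (\<lambda>t. cmod (w t)) F"
      by (rule L2_set_mult_ineq)
    also have "\<dots> \<le> l2norm u * l2norm w"
      by (intro mult_mono L2_set_le_l2norm assms) auto
    finally show ?thesis .
  qed
  then show "\<And>F. finite F \<Longrightarrow> (\<Sum>t\<in>F. norm (u t * cnj (w t))) \<le> l2norm u * l2norm w" by blast
  show "(\<lambda>t. norm (u t * cnj (w t))) summable_on A"
    unfolding abs_summable_iff_bdd_above using b by (intro bdd_aboveI2) auto
qed

lemma inner_summable: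
  assumes "u \<in> l2" "w \<in> l2"
  shows "(\<lambda>t. u t * cnj (w t)) summable_on A"
  by (rule abs_summable_summable) (rule inner_abs_summable(1)[OF assms])

lemma inner_bound:
  assumes "u \<in> l2" "w \<in> l2"
  shows "cmod (l2inner u w) \<le> l2norm u * l2norm w"
proof -
  have "cmod (l2inner u w) \<le> (\<Sum>\<^sub>\<infinity>t. norm (u t * cnj (w t)))"
    unfolding l2inner_def by (rule norm_infsum_bound) (rule inner_abs_summable[OF assms])
  also have "\<dots> \<le> l2norm u * l2norm w"
    by (rule infsum_le_finite_sums) (use inner_abs_summable[OF assms] in auto)
  finally show ?thesis .
qed

lemma inner_add_left:
  assumes "u \<in> l2" "v \<in> l2" "w \<in> l2"
  shows "l2inner (\<lambda>t. u t + v t) w = l2inner u w + l2inner v w"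
  unfolding l2inner_def using infsum_add[OF inner_summable[OF assms(1,3)] inner_summable[OF assms(2,3)]]
  by (simp add: distrib_right)

lemma inner_diff_left:
  assumes "u \<in> l2" "v \<in> l2" "w \<in> l2"
  shows "l2inner (\<lambda>t. u t - v t) w = l2inner u w - l2inner v w"
proof -
  have "l2inner (\<lambda>t. u t - v t) w + l2inner v w = l2inner u w"
    using inner_add_left[OF l2_diff[OF assms(1,2), THEN conjunct1] assms(2,3)] by simp
  then show ?thesis by (simp add: algebra_simps)
qed

lemma inner_scale_left: "l2inner (\<lambda>t. c * u t) w = c * l2inner u w"
  unfolding l2inner_def using infsum_cmult_right'[of c "\<lambda>t. u t * cnj (w t)"]
  by (simp add: mult.assoc)

lemma inner_cnj: "l2inner w u = cnj (l2inner u w)"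
  unfolding l2inner_def infsum_cnj[symmetric] by (simp add: mult.commute)

lemma inner_add_right:
  assumes "u \<in> l2" "v \<in> l2" "w \<in> l2"
  shows "l2inner w (\<lambda>t. u t + v t) = l2inner w u + l2inner w v"
  using inner_add_left[OF assms] by (simp add: inner_cnj[of w])

lemma inner_diff_right:
  assumes "u \<in> l2" "v \<in> l2" "w \<in> l2"
  shows "l2inner w (\<lambda>t. u t - v t) = l2inner w u - l2inner w v"
  using inner_diff_left[OF assms] by (simp add: inner_cnj[of w])

lemma inner_scale_right: "l2inner w (\<lambda>t. c * u t) = cnj c * l2inner w u"
  using inner_scale_left[of c u w] by (simp add: inner_cnj[of w])

definition delta :: "'a \<Rightarrow> 'a \<Rightarrow> complex" where
  "delta t = (\<lambda>s. if s = t then 1 else 0)"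

lemma delta_l2[simp]: "delta t \<in> l2"
  by (rule l2_finsupp(1)[of "{t}"]) (auto simp: delta_def)

lemma inner_finsupp:
  assumes "finite F" "\<And>t. t \<notin> F \<Longrightarrow> u t = 0"
  shows "l2inner u z = (\<Sum>t\<in>F. u t * cnj (z t))"
proof -
  have "l2inner u z = (\<Sum>\<^sub>\<infinity>t\<in>F. u t * cnj (z t))"
    unfolding l2inner_def by (rule infsum_cong_neutral) (use assms in auto)
  then show ?thesis using assms by simp
qed

lemma inner_delta_right: "l2inner u (delta t) = u t"
  using inner_finsupp[of "{t}" "delta t" u] by (simp add: delta_def inner_cnj[of u])

lemma inner_delta_left: "l2inner (delta t) z = cnj (z t)"
  using inner_finsupp[of "{t}" "delta t" z] by (simp add: delta_def)

lemma bij_plusr: "bij (\<lambda>t::'g::group_add. t + s)"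
  by (rule bij_plus_right)

lemma Rsh_l2:
  assumes "u \<in> l2" shows "Rsh s u \<in> l2" and "l2norm (Rsh s u) = l2norm u"
  unfolding Rsh_def using l2_reindex[OF bij_plusr[of s], of u] assms by auto

lemma Rsh_comp: "Rsh a (Rsh b u) = Rsh (a + b) u"
  by (simp add: Rsh_def add.assoc)

lemma Rsh_0[simp]: "Rsh 0 u = u"
  by (simp add: Rsh_def)

lemma Rsh_inv1[simp]: "Rsh (- s) (Rsh s u) = u"
  by (simp add: Rsh_comp)

lemma Rsh_inv2[simp]: "Rsh s (Rsh (- s) u) = u"
  by (simp add: Rsh_comp)

lemma inner_Rsh: "l2inner (Rsh s x) y = l2inner x (Rsh (- s) y)"
proof -
  have b: "bij_betw (\<lambda>t. t + s) UNIV UNIV" using bij_plusr[of s] by (simp add: bij_def)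
  have "l2inner x (Rsh (- s) y) = (\<Sum>\<^sub>\<infinity>t. (\<lambda>t. x t * cnj (Rsh (- s) y t)) (t + s))"
    unfolding l2inner_def using infsum_reindex_bij_betw[OF b, of "\<lambda>t. x t * cnj (Rsh (- s) y t)"] by simp
  also have "\<dots> = l2inner (Rsh s x) y"
    unfolding l2inner_def Rsh_def by (simp add: add.assoc)
  finally show ?thesis by simp
qed

lemma Proj_l2:
  assumes "u \<in> l2" shows "Proj X u \<in> l2" and "l2norm (Proj X u) \<le> l2norm u"
  using l2_dom1[OF assms, of "Proj X u"] by (auto simp: Proj_def)

lemma inner_Proj: "l2inner (Proj X x) y = l2inner x (Proj X y)"
  unfolding l2inner_def Proj_def by (rule infsum_cong) simp

lemma Proj_Proj[simp]: "Proj X (Proj X u) = Proj X u"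
  by (rule ext) (simp add: Proj_def)

definition lin :: "'a lop \<Rightarrow> bool" where
  "lin T \<longleftrightarrow> (\<forall>u\<in>l2. \<forall>w\<in>l2. T (\<lambda>t. u t + w t) = (\<lambda>t. T u t + T w t)) \<and>
     (\<forall>u\<in>l2. \<forall>c. T (\<lambda>t. c * u t) = (\<lambda>t. c * T u t))"

definition bnd :: "'a lop \<Rightarrow> real \<Rightarrow> bool" where
  "bnd T C \<longleftrightarrow> 0 \<le> C \<and> (\<forall>u\<in>l2. T u \<in> l2 \<and> l2norm (T u) \<le> C * l2norm u)"

definition bl :: "'a lop \<Rightarrow> real \<Rightarrow> bool" where
  "bl T C \<longleftrightarrow> lin T \<and> bnd T C"

lemma linD:
  assumes "lin T" "u \<in> l2" "w \<in> l2"
  shows "T (\<lambda>t. u t + w t) = (\<lambda>t. T u t + T w t)" and "T (\<lambda>t. c * u t) = (\<lambda>t. c * T u t)"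
  using assms unfolding lin_def by auto

lemma lin_zero:
  assumes "lin T" shows "T (\<lambda>t. 0) = (\<lambda>t. 0)"
  using linD(2)[OF assms l2_zero l2_zero, of 0] by simp

lemma lin_diff:
  assumes "lin T" "u \<in> l2" "w \<in> l2"
  shows "T (\<lambda>t. u t - w t) = (\<lambda>t. T u t - T w t)"
proof -
  have m: "(\<lambda>t. - 1 * w t) \<in> l2" using l2_scale[OF assms(3)] by blast
  have "T (\<lambda>t. u t - w t) = T (\<lambda>t. u t + (- 1) * w t)" by simp
  also have "\<dots> = (\<lambda>t. T u t + T (\<lambda>t. (- 1) * w t) t)" using linD(1)[OF assms(1,2) m] by simp
  also have "\<dots> = (\<lambda>t. T u t - T w t)" using linD(2)[OF assms(1,3) assms(3), of "- 1"] by simp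
  finally show ?thesis .
qed

lemma bndD:
  assumes "bnd T C" "u \<in> l2"
  shows "T u \<in> l2" "l2norm (T u) \<le> C * l2norm u" "0 \<le> C"
  using assms unfolding bnd_def by auto

lemma blD:
  assumes "bl T C"
  shows "lin T" "bnd T C" "0 \<le> C"
  using assms unfolding bl_def bnd_def by auto

lemma bl_diff_norm:
  assumes "bl T C" "u \<in> l2" "w \<in> l2"
  shows "(\<lambda>t. T u t - T w t) \<in> l2" "l2norm (\<lambda>t. T u t - T w t) \<le> C * l2norm (\<lambda>t. u t - w t)"
proof -
  have d: "(\<lambda>t. u t - w t) \<in> l2" using l2_diff[OF assms(2,3)] by blast
  have e: "T (\<lambda>t. u t - w t) = (\<lambda>t. T u t - T w t)" using lin_diff[OF blD(1)[OF assms(1)] assms(2,3)] .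
  show "(\<lambda>t. T u t - T w t) \<in> l2" using bndD(1)[OF blD(2)[OF assms(1)] d] e by simp
  show "l2norm (\<lambda>t. T u t - T w t) \<le> C * l2norm (\<lambda>t. u t - w t)"
    using bndD(2)[OF blD(2)[OF assms(1)] d] e by simp
qed


lemma l2_sum:
  assumes "finite F" "\<And>t. t \<in> F \<Longrightarrow> g t \<in> l2"
  shows "(\<lambda>s. \<Sum>t\<in>F. g t s) \<in> l2"
  using assms
proof (induction F rule: finite_induct)
  case (insert x F)
  then have "(\<lambda>s. g x s + (\<Sum>t\<in>F. g t s)) \<in> l2" using l2_add by blast
  then show ?case using insert by simp
qed simp

lemma inner_sum_left:
  assumes "finite F" "\<And>t. t \<in> F \<Longrightarrow> g t \<in> l2" "w \<in> l2"
  shows "l2inner (\<lambda>s. \<Sum>t\<in>F. g t s) w = (\<Sum>t\<in>F. l2inner (g t) w)"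
  using assms
proof (induction F rule: finite_induct)
  case empty
  then show ?case by (simp add: l2inner_def)
next
  case (insert x F)
  have "l2inner (\<lambda>s. \<Sum>t\<in>insert x F. g t s) w = l2inner (\<lambda>s. g x s + (\<Sum>t\<in>F. g t s)) w"
    using insert by simp
  also have "\<dots> = l2inner (g x) w + l2inner (\<lambda>s. \<Sum>t\<in>F. g t s) w"
    by (rule inner_add_left) (use insert l2_sum in auto)
  finally show ?case using insert by simp
qed

lemma lin_sum:
  assumes "lin T" "finite F" "\<And>t. t \<in> F \<Longrightarrow> g t \<in> l2"
  shows "T (\<lambda>s. \<Sum>t\<in>F. g t s) = (\<lambda>s. \<Sum>t\<in>F. T (g t) s)"
  using assms(2,3)
proof (induction F rule: finite_induct)
  case empty
  then show ?case using lin_zero[OF assms(1)] by simp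
next
  case (insert x F)
  have "T (\<lambda>s. \<Sum>t\<in>insert x F. g t s) = T (\<lambda>s. g x s + (\<Sum>t\<in>F. g t s))"
    using insert by simp
  also have "\<dots> = (\<lambda>s. T (g x) s + T (\<lambda>s. \<Sum>t\<in>F. g t s) s)"
    by (rule linD(1)[OF assms(1)]) (use insert l2_sum in auto)
  finally show ?case using insert by simp
qed

lemma finsupp_delta:
  assumes "finite F" "\<And>t. t \<notin> F \<Longrightarrow> u t = 0"
  shows "u = (\<lambda>s. \<Sum>t\<in>F. u t * delta t s)"
proof (rule ext)
  fix s
  show "u s = (\<Sum>t\<in>F. u t * delta t s)"
  proof (cases "s \<in> F")
    case True
    have "(\<Sum>t\<in>F. u t * delta t s) = (\<Sum>t\<in>{s}. u t * delta t s)"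
      by (rule sum.mono_neutral_right) (use True assms in \<open>auto simp: delta_def\<close>)
    then show ?thesis by (simp add: delta_def)
  next
    case False
    then show ?thesis using assms by (auto simp: delta_def intro!: sum.neutral)
  qed
qed

definition adj :: "'a lop \<Rightarrow> 'a lop" where
  "adj T w = (\<lambda>t. l2inner w (T (delta t)))"

lemma adj_fin:
  assumes T: "bl T C" and w: "w \<in> l2" and F: "finite F" "\<And>t. t \<notin> F \<Longrightarrow> u t = 0"
  shows "l2inner (T u) w = l2inner u (adj T w)"
proof -
  have dl: "\<And>t. (\<lambda>s. u t * delta t s) \<in> l2" by (rule l2_scale[OF delta_l2, THEN conjunct1])
  have Td: "\<And>t. T (delta t) \<in> l2" using bndD(1)[OF blD(2)[OF T] delta_l2] .
  have "T u = T (\<lambda>s. \<Sum>t\<in>F. u t * delta t s)" using finsupp_delta[OF F] by simp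
  also have "\<dots> = (\<lambda>s. \<Sum>t\<in>F. T (\<lambda>s. u t * delta t s) s)"
    by (rule lin_sum[OF blD(1)[OF T] F(1)]) (use dl in auto)
  also have "\<dots> = (\<lambda>s. \<Sum>t\<in>F. u t * T (delta t) s)"
    using linD(2)[OF blD(1)[OF T] delta_l2 delta_l2] by simp
  finally have Tu: "T u = (\<lambda>s. \<Sum>t\<in>F. u t * T (delta t) s)" .
  have "l2inner (T u) w = (\<Sum>t\<in>F. l2inner (\<lambda>s. u t * T (delta t) s) w)"
    unfolding Tu by (rule inner_sum_left[OF F(1) _ w]) (use l2_scale[OF Td] in auto)
  also have "\<dots> = (\<Sum>t\<in>F. u t * l2inner (T (delta t)) w)"
    by (simp add: inner_scale_left)
  also have "\<dots> = (\<Sum>t\<in>F. u t * cnj (adj T w t))"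
    by (simp add: adj_def inner_cnj[of w])
  also have "\<dots> = l2inner u (adj T w)"
    using inner_finsupp[OF F] by simp
  finally show ?thesis .
qed

lemma adj_l2:
  assumes T: "bl T C" and w: "w \<in> l2"
  shows "adj T w \<in> l2 \<and> l2norm (adj T w) \<le> C * l2norm w"
proof (rule l2I)
  show "0 \<le> C * l2norm w" using blD(3)[OF T] by simp
  fix F :: "'a set" assume F: "finite F"
  define z where "z = Proj F (adj T w)"
  define S where "S = (\<Sum>t\<in>F. (cmod (adj T w t))\<^sup>2)"
  have S0: "0 \<le> S" unfolding S_def by (rule sum_nonneg) simp
  have zs: "\<And>t. t \<notin> F \<Longrightarrow> z t = 0" unfolding z_def Proj_def by simp
  have zl2: "z \<in> l2" using l2_finsupp(1)[OF F zs] .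
  have zn: "(l2norm z)\<^sup>2 = S"
    using l2_finsupp(2)[OF F zs] unfolding S_def z_def Proj_def by simp
  have "l2inner z (adj T w) = (\<Sum>t\<in>F. z t * cnj (adj T w t))" using inner_finsupp[OF F zs] .
  also have "\<dots> = (\<Sum>t\<in>F. complex_of_real ((cmod (adj T w t))\<^sup>2))"
    unfolding z_def Proj_def by (intro sum.cong) (auto simp: complex_norm_square[symmetric])
  also have "\<dots> = complex_of_real S" unfolding S_def by simp
  finally have e1: "l2inner z (adj T w) = complex_of_real S" .
  have "S = cmod (l2inner (T z) w)" using adj_fin[OF T w F zs] e1 S0 by simp
  also have "\<dots> \<le> l2norm (T z) * l2norm w" by (rule inner_bound[OF bndD(1)[OF blD(2)[OF T] zl2] w])
  also have "\<dots> \<le> C * l2norm z * l2norm w"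
    by (rule mult_right_mono) (use bndD(2)[OF blD(2)[OF T] zl2] in auto)
  finally have Sle: "S \<le> C * l2norm w * sqrt S"
    using zn by (metis l2norm_ge0 mult.commute mult.left_commute real_sqrt_unique)
  have "sqrt S \<le> C * l2norm w"
  proof (cases "S = 0")
    case True then show ?thesis using blD(3)[OF T] by simp
  next
    case False
    then have p: "0 < sqrt S" using S0 by simp
    have "sqrt S * sqrt S = S" using S0 by simp
    then have "sqrt S * sqrt S \<le> C * l2norm w * sqrt S" using Sle by simp
    then show ?thesis using p by (rule mult_right_le_imp_le)
  qed
  then have "(sqrt S)\<^sup>2 \<le> (C * l2norm w)\<^sup>2" by (rule power_mono) (use S0 in simp)
  then show "(\<Sum>t\<in>F. (cmod (adj T w t))\<^sup>2) \<le> (C * l2norm w)\<^sup>2" using S0 unfolding S_def by simp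
qed

lemma small_zero:
  assumes "\<And>e. 0 < e \<Longrightarrow> cmod z \<le> K * e" "0 \<le> K"
  shows "z = 0"
proof (rule ccontr)
  assume "z \<noteq> 0"
  then have p: "0 < cmod z" by simp
  define e where "e = cmod z / (2 * (K + 1))"
  have e: "0 < e" unfolding e_def using p assms(2) by simp
  have "K * e < cmod z"
  proof -
    have "K * e = cmod z * (K / (2 * (K + 1)))" unfolding e_def by simp
    also have "\<dots> < cmod z * 1"
      by (rule mult_strict_left_mono) (use p assms(2) in \<open>auto simp: field_simps\<close>)
    finally show ?thesis by simp
  qed
  with assms(1)[OF e] show False by simp
qed

lemma adj_is_adjoint:
  assumes T: "bl T C"
  shows "is_adjoint T (adj T)"
  unfolding is_adjoint_def
proof (intro ballI conjI)
  fix u w :: "'a \<Rightarrow> complex" assume u: "u \<in> l2" and w: "w \<in> l2"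
  show Tu: "T u \<in> l2" using bndD(1)[OF blD(2)[OF T] u] .
  show Aw: "adj T w \<in> l2" using adj_l2[OF T w] by blast
  have C0: "0 \<le> C" using blD(3)[OF T] .
  show "l2inner (T u) w = l2inner u (adj T w)"
  proof -
    have "l2inner (T u) w - l2inner u (adj T w) = 0"
    proof (rule small_zero[where K="2 * C * l2norm w"])
      fix e :: real assume e: "0 < e"
      obtain F where F: "finite F" and rl: "(\<lambda>t. if t \<in> F then 0 else u t) \<in> l2"
        and rn: "l2norm (\<lambda>t. if t \<in> F then 0 else u t) \<le> e"
        using l2_tail[OF u e] by blast
      define r where "r = (\<lambda>t. if t \<in> F then 0 else u t)"
      define uF where "uF = (\<lambda>t. if t \<in> F then u t else 0)"
      have ufs: "\<And>t. t \<notin> F \<Longrightarrow> uF t = 0" unfolding uF_def by simp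
      have uFl: "uF \<in> l2" using l2_finsupp(1)[OF F ufs] .
      have rl2: "r \<in> l2" using rl unfolding r_def .
      have ud: "u = (\<lambda>t. uF t + r t)" unfolding uF_def r_def by auto
      have "T u = (\<lambda>t. T uF t + T r t)" using linD(1)[OF blD(1)[OF T] uFl rl2] ud by simp
      then have "l2inner (T u) w = l2inner (T uF) w + l2inner (T r) w"
        using inner_add_left[OF bndD(1)[OF blD(2)[OF T] uFl] bndD(1)[OF blD(2)[OF T] rl2] w] by simp
      moreover have "l2inner u (adj T w) = l2inner uF (adj T w) + l2inner r (adj T w)"
        using inner_add_left[OF uFl rl2 Aw] ud by simp
      moreover have "l2inner (T uF) w = l2inner uF (adj T w)" by (rule adj_fin[OF T w F ufs])
      ultimately have eq: "l2inner (T u) w - l2inner u (adj T w) = l2inner (T r) w - l2inner r (adj T w)"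
        by simp
      have "cmod (l2inner (T r) w) \<le> C * e * l2norm w"
      proof -
        have "cmod (l2inner (T r) w) \<le> l2norm (T r) * l2norm w"
          by (rule inner_bound[OF bndD(1)[OF blD(2)[OF T] rl2] w])
        also have "\<dots> \<le> C * e * l2norm w"
          using bndD(2)[OF blD(2)[OF T] rl2] rn C0 unfolding r_def
          by (intro mult_right_mono) (auto intro: order_trans mult_left_mono)
        finally show ?thesis .
      qed
      moreover have "cmod (l2inner r (adj T w)) \<le> C * e * l2norm w"
      proof -
        have "cmod (l2inner r (adj T w)) \<le> l2norm r * l2norm (adj T w)"
          by (rule inner_bound[OF rl2 Aw])
        also have "\<dots> \<le> e * (C * l2norm w)"
          using adj_l2[OF T w] rn e unfolding r_def by (intro mult_mono) auto
        finally show ?thesis by (simp add: algebra_simps)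
      qed
      ultimately show "cmod (l2inner (T u) w - l2inner u (adj T w)) \<le> 2 * C * l2norm w * e"
      proof -
        have "C * e * l2norm w + C * e * l2norm w = 2 * C * l2norm w * e" by simp
        then show ?thesis unfolding eq using norm_triangle_ineq4[of "l2inner (T r) w" "l2inner r (adj T w)"]
          \<open>cmod (l2inner (T r) w) \<le> C * e * l2norm w\<close> \<open>cmod (l2inner r (adj T w)) \<le> C * e * l2norm w\<close>
          by linarith
      qed
    qed (use C0 in simp)
    then show ?thesis by simp
  qed
qed

lemma adj_unique:
  assumes "is_adjoint T X" "w \<in> l2"
  shows "X w = adj T w"
proof (rule ext)
  fix t
  have "l2inner (T (delta t)) w = l2inner (delta t) (X w)"
    using assms unfolding is_adjoint_def by auto
  then have "cnj (l2inner w (T (delta t))) = cnj (X w t)"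
    by (simp add: inner_delta_left inner_cnj[of w])
  then show "X w t = adj T w t" unfolding adj_def by simp
qed

lemma adj_lin:
  assumes T: "bl T C"
  shows "lin (adj T)"
  unfolding lin_def
proof (intro conjI ballI allI)
  have Td: "\<And>t. T (delta t) \<in> l2" using bndD(1)[OF blD(2)[OF T] delta_l2] .
  fix u w :: "'a \<Rightarrow> complex" assume "u \<in> l2" "w \<in> l2"
  then show "adj T (\<lambda>t. u t + w t) = (\<lambda>t. adj T u t + adj T w t)"
    unfolding adj_def using inner_add_left Td by blast
next
  fix u :: "'a \<Rightarrow> complex" and c assume "u \<in> l2"
  show "adj T (\<lambda>t. c * u t) = (\<lambda>t. c * adj T u t)"
    unfolding adj_def by (simp add: inner_scale_left)
qed

lemma adj_bl:
  assumes T: "bl T C" shows "bl (adj T) C"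
  unfolding bl_def bnd_def using adj_lin[OF T] adj_l2[OF T] blD(3)[OF T] by auto

lemma strong_convD:
  assumes "strong_conv T S" "u \<in> l2"
  shows "S u \<in> l2" "T n u \<in> l2" "(\<lambda>n. l2norm (\<lambda>t. T n u t - S u t)) \<longlonglongrightarrow> 0"
  using assms unfolding strong_conv_def by auto

lemma strong_conv_cong:
  assumes "strong_conv T S" "\<And>n u. u \<in> l2 \<Longrightarrow> T' n u = T n u" "\<And>u. u \<in> l2 \<Longrightarrow> S' u = S u"
  shows "strong_conv T' S'"
  using assms unfolding strong_conv_def by simp

lemma strong_conv_subseq:
  assumes "strong_conv T S" "strict_mono r"
  shows "strong_conv (\<lambda>n. T (r n)) S"
  using assms unfolding strong_conv_def
  by (auto intro: LIMSEQ_subseq_LIMSEQ[unfolded o_def])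

lemma lim_le0:
  fixes a b :: "nat \<Rightarrow> real"
  assumes "a \<longlonglongrightarrow> 0" "b \<longlonglongrightarrow> 0" "\<And>n. x \<le> a n + b n"
  shows "x \<le> 0"
proof -
  have "(\<lambda>n. a n + b n) \<longlonglongrightarrow> 0" using tendsto_add[OF assms(1,2)] by simp
  then show ?thesis using assms(3) by (intro tendsto_lowerbound[where F=sequentially]) auto
qed

lemma strong_conv_unique:
  assumes "strong_conv T S" "strong_conv T S'" "u \<in> l2"
  shows "S u = S' u"
proof -
  have a: "S u \<in> l2" "S' u \<in> l2" using strong_convD[OF assms(1,3)] strong_convD[OF assms(2,3)] by auto
  have "l2norm (\<lambda>t. S u t - S' u t) \<le> 0"
  proof (rule lim_le0[OF strong_convD(3)[OF assms(1,3)] strong_convD(3)[OF assms(2,3)]])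
    fix n
    have "(\<lambda>t. S u t - S' u t) = (\<lambda>t. (T n u t - S' u t) - (T n u t - S u t))" by simp
    moreover have "l2norm (\<lambda>t. (T n u t - S' u t) - (T n u t - S u t)) \<le> l2norm (\<lambda>t. T n u t - S' u t) + l2norm (\<lambda>t. T n u t - S u t)"
      by (rule l2_diff[THEN conjunct2]) (use l2_diff strong_convD(2)[OF assms(1,3)] a in auto)
    ultimately show "l2norm (\<lambda>t. S u t - S' u t) \<le> l2norm (\<lambda>t. T n u t - S u t) + l2norm (\<lambda>t. T n u t - S' u t)"
      by simp
  qed
  then have "l2norm (\<lambda>t. S u t - S' u t) = 0" using l2norm_ge0[of "\<lambda>t. S u t - S' u t"] by linarith
  then have "(\<lambda>t. S u t - S' u t) = (\<lambda>t. 0)" using l2norm_eq0 l2_diff[OF a] by blast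
  then show ?thesis by (metis (no_types) eq_iff_diff_eq_0 ext)
qed

lemma inner_conv_left:
  assumes "strong_conv T S" "u \<in> l2" "w \<in> l2"
  shows "(\<lambda>n. l2inner (T n u) w) \<longlonglongrightarrow> l2inner (S u) w"
proof -
  note d = strong_convD[OF assms(1,2)]
  have "(\<lambda>n. cmod (l2inner (T n u) w - l2inner (S u) w)) \<longlonglongrightarrow> 0"
  proof (rule tendsto_sandwich[where f="\<lambda>n. 0" and h="\<lambda>n. l2norm (\<lambda>t. T n u t - S u t) * l2norm w"])
    show "\<forall>\<^sub>F n in sequentially. cmod (l2inner (T n u) w - l2inner (S u) w) \<le> l2norm (\<lambda>t. T n u t - S u t) * l2norm w"
    proof (intro always_eventually allI)
      fix n
      have "l2inner (T n u) w - l2inner (S u) w = l2inner (\<lambda>t. T n u t - S u t) w"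
        using inner_diff_left[OF d(2) d(1) assms(3)] by simp
      then show "cmod (l2inner (T n u) w - l2inner (S u) w) \<le> l2norm (\<lambda>t. T n u t - S u t) * l2norm w"
        using inner_bound[OF l2_diff[OF d(2) d(1), THEN conjunct1] assms(3)] by simp
    qed
    show "(\<lambda>n. l2norm (\<lambda>t. T n u t - S u t) * l2norm w) \<longlonglongrightarrow> 0"
      using tendsto_mult_left_zero[OF d(3)] by simp
  qed auto
  then show ?thesis by (simp add: LIM_zero_iff tendsto_norm_zero_iff)
qed

lemma adjoint_limit:
  assumes "strong_conv T S" "strong_conv T' S'" "\<And>n. is_adjoint (T n) (T' n)"
  shows "is_adjoint S S'"
  unfolding is_adjoint_def
proof (intro ballI conjI)
  fix u w :: "'a \<Rightarrow> complex" assume u: "u \<in> l2" and w: "w \<in> l2"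
  show "S u \<in> l2" using strong_convD[OF assms(1) u] by simp
  show "S' w \<in> l2" using strong_convD[OF assms(2) w] by simp
  have l1: "(\<lambda>n. l2inner (T n u) w) \<longlonglongrightarrow> l2inner (S u) w" by (rule inner_conv_left[OF assms(1) u w])
  have "(\<lambda>n. l2inner (T' n w) u) \<longlonglongrightarrow> l2inner (S' w) u" by (rule inner_conv_left[OF assms(2) w u])
  then have "(\<lambda>n. cnj (l2inner (T' n w) u)) \<longlonglongrightarrow> cnj (l2inner (S' w) u)" by (rule tendsto_cnj)
  then have l2: "(\<lambda>n. l2inner u (T' n w)) \<longlonglongrightarrow> l2inner u (S' w)" by (simp add: inner_cnj[of u])
  have "\<And>n. l2inner (T n u) w = l2inner u (T' n w)" using assms(3) u w unfolding is_adjoint_def by blast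
  then show "l2inner (S u) w = l2inner u (S' w)" using l1 l2 LIMSEQ_unique by simp
qed

lemma inner_Rsh_right: "l2inner x (Rsh s y) = l2inner (Rsh (- s) x) y"
  using inner_Rsh[of "- s" x y] by simp

lemma conj_adjoint:
  fixes T X :: "('g::group_add) lop"
  assumes "is_adjoint T X"
  shows "is_adjoint (Rsh (- s) \<circ> T \<circ> Rsh s) (Rsh (- s) \<circ> X \<circ> Rsh s)"
  unfolding is_adjoint_def
proof (intro ballI conjI)
  fix u w :: "'g \<Rightarrow> complex" assume u: "u \<in> l2" and w: "w \<in> l2"
  have su: "Rsh s u \<in> l2" and sw: "Rsh s w \<in> l2" using Rsh_l2 u w by auto
  show "(Rsh (- s) \<circ> T \<circ> Rsh s) u \<in> l2" using assms su unfolding is_adjoint_def by (auto intro: Rsh_l2)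
  show "(Rsh (- s) \<circ> X \<circ> Rsh s) w \<in> l2" using assms sw unfolding is_adjoint_def by (auto intro: Rsh_l2)
  have "l2inner ((Rsh (- s) \<circ> T \<circ> Rsh s) u) w = l2inner (T (Rsh s u)) (Rsh s w)"
    by (simp add: inner_Rsh)
  also have "\<dots> = l2inner (Rsh s u) (X (Rsh s w))" using assms su sw unfolding is_adjoint_def by blast
  also have "\<dots> = l2inner u ((Rsh (- s) \<circ> X \<circ> Rsh s) w)" by (simp add: inner_Rsh)
  finally show "l2inner ((Rsh (- s) \<circ> T \<circ> Rsh s) u) w = l2inner u ((Rsh (- s) \<circ> X \<circ> Rsh s) w)" .
qed

lemma Rsh_add: "Rsh s (\<lambda>t. u t + w t) = (\<lambda>t. Rsh s u t + Rsh s w t)"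
  by (simp add: Rsh_def)
lemma Rsh_scale: "Rsh s (\<lambda>t. c * u t) = (\<lambda>t. c * Rsh s u t)"
  by (simp add: Rsh_def)

lemma conj_bl:
  fixes T :: "('g::group_add) lop"
  assumes "bl T C"
  shows "bl (Rsh (- s) \<circ> T \<circ> Rsh s) C"
  unfolding bl_def lin_def bnd_def
proof (intro conjI ballI allI)
  note L = blD(1)[OF assms] and B = blD(2)[OF assms]
  show "0 \<le> C" using blD(3)[OF assms] .
  fix u :: "'g \<Rightarrow> complex" assume u: "u \<in> l2"
  have su: "Rsh s u \<in> l2" using Rsh_l2 u by auto
  show "(Rsh (- s) \<circ> T \<circ> Rsh s) u \<in> l2" using bndD(1)[OF B su] by (simp add: Rsh_l2)
  show "l2norm ((Rsh (- s) \<circ> T \<circ> Rsh s) u) \<le> C * l2norm u"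
    using bndD(2)[OF B su] bndD(1)[OF B su] Rsh_l2(2)[OF u] by (simp add: Rsh_l2)
  fix c
  show "(Rsh (- s) \<circ> T \<circ> Rsh s) (\<lambda>t. c * u t) = (\<lambda>t. c * (Rsh (- s) \<circ> T \<circ> Rsh s) u t)"
    using linD(2)[OF L su su] by (simp add: Rsh_scale)
next
  note L = blD(1)[OF assms]
  fix u w :: "'g \<Rightarrow> complex" assume u: "u \<in> l2" and w: "w \<in> l2"
  have su: "Rsh s u \<in> l2" "Rsh s w \<in> l2" using Rsh_l2 u w by auto
  show "(Rsh (- s) \<circ> T \<circ> Rsh s) (\<lambda>t. u t + w t) = (\<lambda>t. (Rsh (- s) \<circ> T \<circ> Rsh s) u t + (Rsh (- s) \<circ> T \<circ> Rsh s) w t)"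
    using linD(1)[OF L su] by (simp add: Rsh_add)
qed


lemma gmul_single: "t \<in> gmul X {g} \<longleftrightarrow> t + - g \<in> (X::'g::group_add set)"
proof
  assume "t \<in> gmul X {g}"
  then obtain a where "a \<in> X" "t = a + g" unfolding gmul_def by blast
  then show "t + - g \<in> X" by (simp add: add.assoc)
next
  assume "t + - g \<in> X"
  moreover have "t = (t + - g) + g" by (simp add: add.assoc)
  ultimately show "t \<in> gmul X {g}" unfolding gmul_def by blast
qed

lemma projnorm_sq:
  assumes "u \<in> l2"
  shows "(l2norm (Proj S u))\<^sup>2 = (\<Sum>\<^sub>\<infinity>t\<in>S. (cmod (u t))\<^sup>2)"
proof -
  have "(l2norm (Proj S u))\<^sup>2 = (\<Sum>\<^sub>\<infinity>t. (cmod (Proj S u t))\<^sup>2)" by (rule l2norm_sq)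
  also have "\<dots> = (\<Sum>\<^sub>\<infinity>t\<in>S. (cmod (u t))\<^sup>2)"
    by (rule infsum_cong_neutral) (auto simp: Proj_def)
  finally show ?thesis .
qed

lemma infsum_UN_fin:
  assumes "finite I" "\<forall>i\<in>I. \<forall>j\<in>I. i \<noteq> j \<longrightarrow> S i \<inter> S j = {}" "u \<in> l2"
  shows "(\<Sum>i\<in>I. (\<Sum>\<^sub>\<infinity>t\<in>S i. (cmod (u t))\<^sup>2)) = (\<Sum>\<^sub>\<infinity>t\<in>(\<Union>i\<in>I. S i). (cmod (u t))\<^sup>2)"
  using assms(1,2)
proof (induction I rule: finite_induct)
  case empty then show ?case by simp
next
  case (insert x I)
  have "\<forall>i\<in>I. S x \<inter> S i = {}"
  proof
    fix i assume "i \<in> I"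
    then have "i \<noteq> x" using insert.hyps(2) by auto
    then show "S x \<inter> S i = {}" using insert.prems \<open>i \<in> I\<close> by simp
  qed
  then have d: "S x \<inter> (\<Union>i\<in>I. S i) = {}" by auto
  have IH: "(\<Sum>i\<in>I. (\<Sum>\<^sub>\<infinity>t\<in>S i. (cmod (u t))\<^sup>2)) = (\<Sum>\<^sub>\<infinity>t\<in>(\<Union>i\<in>I. S i). (cmod (u t))\<^sup>2)"
    by (rule insert.IH) (use insert.prems in simp)
  have "(\<Sum>\<^sub>\<infinity>t\<in>(\<Union>i\<in>insert x I. S i). (cmod (u t))\<^sup>2) = (\<Sum>\<^sub>\<infinity>t\<in>(S x \<union> (\<Union>i\<in>I. S i)). (cmod (u t))\<^sup>2)"
    by simp
  also have "\<dots> = (\<Sum>\<^sub>\<infinity>t\<in>S x. (cmod (u t))\<^sup>2) + (\<Sum>\<^sub>\<infinity>t\<in>(\<Union>i\<in>I. S i). (cmod (u t))\<^sup>2)"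
    by (rule infsum_Un_disjoint[OF l2_summable[OF assms(3)] l2_summable[OF assms(3)] d])
  finally show ?case using IH insert.hyps by simp
qed

lemma proj_sum_le:
  assumes "finite I" "\<forall>i\<in>I. \<forall>j\<in>I. i \<noteq> j \<longrightarrow> S i \<inter> S j = {}" "u \<in> l2"
  shows "(\<Sum>i\<in>I. (l2norm (Proj (S i) u))\<^sup>2) \<le> (l2norm u)\<^sup>2"
proof -
  have "(\<Sum>i\<in>I. (l2norm (Proj (S i) u))\<^sup>2) = (\<Sum>\<^sub>\<infinity>t\<in>(\<Union>i\<in>I. S i). (cmod (u t))\<^sup>2)"
    using infsum_UN_fin[OF assms] projnorm_sq[OF assms(3)] by simp
  also have "\<dots> \<le> (\<Sum>\<^sub>\<infinity>t. (cmod (u t))\<^sup>2)"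
    by (rule infsum_mono2[OF l2_summable[OF assms(3)] l2_summable[OF assms(3)]]) auto
  also have "\<dots> = (l2norm u)\<^sup>2" by (simp add: l2norm_sq)
  finally show ?thesis .
qed

lemma Omega_le_mono: "m \<le> n \<Longrightarrow> Omega_le \<Omega> m \<subseteq> Omega_le \<Omega> n"
  unfolding Omega_le_def by (auto intro: le_trans)

lemma zero_Omega_le: "0 \<in> Omega_le \<Omega> n"
  unfolding Omega_le_def by (auto intro!: bexI[of _ 0])

lemma Proj_add: "Proj S (\<lambda>t. u t + w t) = (\<lambda>t. Proj S u t + Proj S w t)"
  by (rule ext) (simp add: Proj_def)
lemma Proj_scale: "Proj S (\<lambda>t. c * u t) = (\<lambda>t. c * Proj S u t)"
  by (rule ext) (simp add: Proj_def)

locale opsetup =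
  fixes \<Omega> :: "'g::group_add set" and Y :: "nat \<Rightarrow> 'g set" and v :: "nat \<Rightarrow> 'g"
  assumes Om_gen: "(\<Union>k\<in>{1..}. Omega_pow \<Omega> k) = UNIV"
    and v_infl: "\<And>m n. 1 \<le> m \<Longrightarrow> 1 \<le> n \<Longrightarrow> m \<noteq> n \<Longrightarrow>
        gmul (Zset \<Omega> Y m) {- v m} \<inter> gmul (Zset \<Omega> Y n) {- v n} = {}"
begin

definition X :: "nat \<Rightarrow> 'g set" where "X n = gmul (Y n) {- v n}"

definition Blk :: "'g lop \<Rightarrow> nat \<Rightarrow> 'g lop" where
  "Blk A n u = Rsh (v n) ((Proj (Y n) \<circ> A \<circ> Proj (Y n)) (Proj (Y n) (Rsh (- v n) u)))"

definition Ob :: "'g lop \<Rightarrow> 'g lop" where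
  "Ob A = (\<lambda>u t. Op_seq v Y (\<lambda>n. Proj (Y n) \<circ> A \<circ> Proj (Y n)) u t + Proj (Gamma' Y v) u t)"

lemma X_mem: "t \<in> X n \<longleftrightarrow> t + v n \<in> Y n"
  unfolding X_def gmul_single by simp

lemma Y_sub_Z: "Y n \<subseteq> Zset \<Omega> Y n"
proof
  fix y assume y: "y \<in> Y n"
  let ?W = "Y n \<union> Omega_le \<Omega> n"
  have "y + - y \<in> gmul ?W (ginv ?W)" using y unfolding gmul_def ginv_def by blast
  then have "(y + - y) + y \<in> gmul (gmul ?W (ginv ?W)) ?W" using y unfolding gmul_def by blast
  then show "y \<in> Zset \<Omega> Y n" unfolding Zset_def Let_def by simp
qed

lemma X_sub: "X n \<subseteq> gmul (Zset \<Omega> Y n) {- v n}"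
  unfolding X_def using Y_sub_Z unfolding gmul_def by blast

lemma X_disj: "1 \<le> m \<Longrightarrow> 1 \<le> n \<Longrightarrow> m \<noteq> n \<Longrightarrow> X m \<inter> X n = {}"
  using v_infl[of m n] X_sub[of m] X_sub[of n] by blast

lemma Gamma'_mem: "t \<in> Gamma' Y v \<longleftrightarrow> (\<forall>n\<ge>1. t \<notin> X n)"
  unfolding Gamma'_def X_def by auto

lemma Blk_out: "t \<notin> X n \<Longrightarrow> Blk A n u t = 0"
  unfolding Blk_def Rsh_def X_mem by (simp add: Proj_def)

lemma Op_pt1:
  assumes "1 \<le> n" "t \<in> X n"
  shows "Op_seq v Y (\<lambda>n. Proj (Y n) \<circ> A \<circ> Proj (Y n)) u t = Blk A n u t"
proof -
  have "(\<lambda>i. if i = 0 then 0 else Rsh (v i) ((\<lambda>n. Proj (Y n) \<circ> A \<circ> Proj (Y n)) i (Proj (Y i) (Rsh (- v i) u))) t)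
        = (\<lambda>i. if i = n then Blk A n u t else 0)"
  proof (rule ext)
    fix i
    show "(if i = 0 then 0 else Rsh (v i) ((\<lambda>n. Proj (Y n) \<circ> A \<circ> Proj (Y n)) i (Proj (Y i) (Rsh (- v i) u))) t)
        = (if i = n then Blk A n u t else 0)"
    proof (cases "i = n")
      case True then show ?thesis using assms by (simp add: Blk_def)
    next
      case False
      show ?thesis
      proof (cases "i = 0")
        case False
        then have "t \<notin> X i" using X_disj[of i n] assms \<open>i \<noteq> n\<close> by auto
        then show ?thesis using Blk_out[of t i A u] False \<open>i \<noteq> n\<close> by (simp add: Blk_def)
      qed (use False in simp)
    qed
  qed
  moreover have "(\<lambda>i. if i = n then Blk A n u t else 0) sums Blk A n u t"
    using sums_single[of n "\<lambda>_. Blk A n u t"] by simp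
  ultimately show ?thesis unfolding Op_seq_def by (simp add: sums_iff)
qed

lemma Op_pt0:
  assumes "\<forall>n\<ge>1. t \<notin> X n"
  shows "Op_seq v Y (\<lambda>n. Proj (Y n) \<circ> A \<circ> Proj (Y n)) u t = 0"
proof -
  have "(\<lambda>i. if i = 0 then 0 else Rsh (v i) ((\<lambda>n. Proj (Y n) \<circ> A \<circ> Proj (Y n)) i (Proj (Y i) (Rsh (- v i) u))) t)
        = (\<lambda>i. 0)"
  proof (rule ext)
    fix i show "(if i = 0 then 0 else Rsh (v i) ((\<lambda>n. Proj (Y n) \<circ> A \<circ> Proj (Y n)) i (Proj (Y i) (Rsh (- v i) u))) t) = 0"
      using Blk_out[of t i A u] assms by (cases "i = 0") (auto simp: Blk_def)
  qed
  then show ?thesis unfolding Op_seq_def by simp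
qed

lemma Ob_pt1: "1 \<le> n \<Longrightarrow> t \<in> X n \<Longrightarrow> Ob A u t = Blk A n u t"
  unfolding Ob_def using Op_pt1[of n t A u] Gamma'_mem[of t] by (auto simp: Proj_def)

lemma Ob_pt0: "\<forall>n\<ge>1. t \<notin> X n \<Longrightarrow> Ob A u t = u t"
  unfolding Ob_def using Op_pt0[of t A u] Gamma'_mem[of t] by (auto simp: Proj_def)

lemma Blk_zero:
  assumes "lin A" "\<And>s. s \<in> X n \<Longrightarrow> u s = 0"
  shows "Blk A n u = (\<lambda>t. 0)"
proof -
  have "Proj (Y n) (Rsh (- v n) u) = (\<lambda>t. 0)"
  proof (rule ext)
    fix s show "Proj (Y n) (Rsh (- v n) u) s = 0"
      using assms(2)[of "s + - v n"] unfolding Proj_def Rsh_def X_mem by (simp add: add.assoc)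
  qed
  then show ?thesis unfolding Blk_def using lin_zero[OF assms(1)] by (simp add: Proj_def Rsh_def)
qed

lemma Ob_local:
  assumes "lin A" "1 \<le> n" "\<And>m s. 1 \<le> m \<Longrightarrow> m \<noteq> n \<Longrightarrow> s \<in> X m \<Longrightarrow> u s = 0"
  shows "Ob A u = (\<lambda>t. Blk A n u t + Proj (Gamma' Y v) u t)"
proof (rule ext)
  fix t
  show "Ob A u t = Blk A n u t + Proj (Gamma' Y v) u t"
  proof (cases "\<exists>m\<ge>1. t \<in> X m")
    case True
    then obtain m where m: "1 \<le> m" "t \<in> X m" by blast
    have tg: "t \<notin> Gamma' Y v" using m Gamma'_mem by auto
    show ?thesis
    proof (cases "m = n")
      case True then show ?thesis using Ob_pt1[OF m] tg by (simp add: Proj_def)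
    next
      case False
      have "Blk A m u = (\<lambda>t. 0)" by (rule Blk_zero[OF assms(1)]) (use assms(3) m False in auto)
      moreover have "t \<notin> X n" using X_disj[of m n] m assms(2) False by auto
      ultimately show ?thesis using Ob_pt1[OF m] tg Blk_out[of t n A u] by (simp add: Proj_def)
    qed
  next
    case False
    then show ?thesis using Ob_pt0[of t A u] Gamma'_mem[of t] Blk_out[of t n A u] assms(2) by (auto simp: Proj_def)
  qed
qed


lemma Blk_alt: "Blk A n x = Rsh (v n) (Proj (Y n) (A (Proj (Y n) (Rsh (- v n) x))))"
  by (simp add: Blk_def)

lemma Blk_l2:
  assumes "bl A C" "u \<in> l2"
  shows "Blk A n u \<in> l2" "l2norm (Blk A n u) \<le> C * l2norm (Proj (X n) u)"
proof -
  have e: "Proj (Y n) (Rsh (- v n) u) = Rsh (- v n) (Proj (X n) u)"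
    by (rule ext) (simp add: Proj_def Rsh_def X_mem add.assoc)
  have pl: "Proj (X n) u \<in> l2" using Proj_l2[OF assms(2)] by simp
  have a: "Proj (Y n) (Rsh (- v n) u) \<in> l2" unfolding e using Rsh_l2[OF pl] by simp
  note B = blD(2)[OF assms(1)]
  have Al: "A (Proj (Y n) (Rsh (- v n) u)) \<in> l2" using bndD(1)[OF B a] .
  show "Blk A n u \<in> l2" unfolding Blk_alt by (rule Rsh_l2(1)[OF Proj_l2(1)[OF Al]])
  have "l2norm (Blk A n u) = l2norm (Proj (Y n) (A (Proj (Y n) (Rsh (- v n) u))))"
    unfolding Blk_alt by (rule Rsh_l2(2)[OF Proj_l2(1)[OF Al]])
  also have "\<dots> \<le> l2norm (A (Proj (Y n) (Rsh (- v n) u)))" using Proj_l2(2)[OF Al] .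
  also have "\<dots> \<le> C * l2norm (Proj (Y n) (Rsh (- v n) u))" using bndD(2)[OF B a] .
  also have "\<dots> = C * l2norm (Proj (X n) u)" unfolding e using Rsh_l2(2)[OF pl] by simp
  finally show "l2norm (Blk A n u) \<le> C * l2norm (Proj (X n) u)" .
qed

lemma Blk_lin:
  assumes "lin A" "u \<in> l2" "w \<in> l2"
  shows "Blk A n (\<lambda>t. u t + w t) = (\<lambda>t. Blk A n u t + Blk A n w t)"
    and "Blk A n (\<lambda>t. c * u t) = (\<lambda>t. c * Blk A n u t)"
proof -
  have pu: "Proj (Y n) (Rsh (- v n) u) \<in> l2" "Proj (Y n) (Rsh (- v n) w) \<in> l2"
    using Proj_l2(1)[OF Rsh_l2(1)[OF assms(2)]] Proj_l2(1)[OF Rsh_l2(1)[OF assms(3)]] by auto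
  show "Blk A n (\<lambda>t. u t + w t) = (\<lambda>t. Blk A n u t + Blk A n w t)"
    unfolding Blk_alt Rsh_add Proj_add linD(1)[OF assms(1) pu] ..
  show "Blk A n (\<lambda>t. c * u t) = (\<lambda>t. c * Blk A n u t)"
    unfolding Blk_alt Rsh_scale Proj_scale linD(2)[OF assms(1) pu] ..
qed

lemma Ob_lin:
  assumes "lin A" shows "lin (Ob A)"
  unfolding lin_def
proof (intro conjI ballI allI)
  fix u w :: "'g \<Rightarrow> complex" assume u: "u \<in> l2" and w: "w \<in> l2"
  show "Ob A (\<lambda>t. u t + w t) = (\<lambda>t. Ob A u t + Ob A w t)"
  proof (rule ext)
    fix t show "Ob A (\<lambda>t. u t + w t) t = Ob A u t + Ob A w t"
    proof (cases "\<exists>m\<ge>1. t \<in> X m")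
      case True
      then obtain m where m: "1 \<le> m" "t \<in> X m" by blast
      show ?thesis using Ob_pt1[OF m] Blk_lin(1)[OF assms u w, of m] by simp
    next
      case False then show ?thesis using Ob_pt0 by simp
    qed
  qed
next
  fix u :: "'g \<Rightarrow> complex" and c assume u: "u \<in> l2"
  show "Ob A (\<lambda>t. c * u t) = (\<lambda>t. c * Ob A u t)"
  proof (rule ext)
    fix t show "Ob A (\<lambda>t. c * u t) t = c * Ob A u t"
    proof (cases "\<exists>m\<ge>1. t \<in> X m")
      case True
      then obtain m where m: "1 \<le> m" "t \<in> X m" by blast
      show ?thesis using Ob_pt1[OF m] Blk_lin(2)[OF assms u u, of m c] by simp
    next
      case False then show ?thesis using Ob_pt0 by simp
    qed
  qed
qed

end


context opsetup
begin

lemma Ob_bl: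
  assumes A: "bl A C"
  shows "bl (Ob A) (C + 1)"
  unfolding bl_def bnd_def
proof (intro conjI ballI)
  show "lin (Ob A)" using Ob_lin[OF blD(1)[OF A]] .
  have C0: "0 \<le> C" using blD(3)[OF A] .
  show "0 \<le> C + 1" using C0 by simp
  fix u :: "'g \<Rightarrow> complex" assume u: "u \<in> l2"
  have "Ob A u \<in> l2 \<and> l2norm (Ob A u) \<le> (C + 1) * l2norm u"
  proof (rule l2I)
    show "0 \<le> (C + 1) * l2norm u" using C0 by simp
    fix G :: "'g set" assume G: "finite G"
    define N where "N = {n. 1 \<le> n \<and> G \<inter> X n \<noteq> {}}"
    define idx where "idx t = (THE n. 1 \<le> n \<and> t \<in> X n)" for t
    have Nsub: "N \<subseteq> idx ` G"
    proof
      fix n assume "n \<in> N"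
      then obtain t where t: "t \<in> G" "t \<in> X n" "1 \<le> n" unfolding N_def by blast
      have "idx t = n" unfolding idx_def
        by (rule the_equality) (use t X_disj in blast)+
      then show "n \<in> idx ` G" using t by blast
    qed
    have Nfin: "finite N" using finite_subset[OF Nsub] G by blast
    define S where "S i = (if i = 0 then Gamma' Y v else X i)" for i
    have Gsplit: "G = (G \<inter> Gamma' Y v) \<union> (\<Union>n\<in>N. G \<inter> X n)"
    proof
      show "G \<subseteq> (G \<inter> Gamma' Y v) \<union> (\<Union>n\<in>N. G \<inter> X n)"
      proof
        fix t assume t: "t \<in> G"
        show "t \<in> (G \<inter> Gamma' Y v) \<union> (\<Union>n\<in>N. G \<inter> X n)"
        proof (cases "\<exists>n\<ge>1. t \<in> X n")
          case True then show ?thesis using t unfolding N_def by blast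
        next
          case False then show ?thesis using t Gamma'_mem by blast
        qed
      qed
    qed auto
    have dj1: "(G \<inter> Gamma' Y v) \<inter> (\<Union>n\<in>N. G \<inter> X n) = {}" using Gamma'_mem unfolding N_def by blast
    have dj2: "\<forall>i\<in>N. \<forall>j\<in>N. i \<noteq> j \<longrightarrow> (G \<inter> X i) \<inter> (G \<inter> X j) = {}"
      using X_disj unfolding N_def by blast
    let ?f = "\<lambda>t. (cmod (Ob A u t))\<^sup>2"
    have "(\<Sum>t\<in>G. ?f t) = (\<Sum>t\<in>G \<inter> Gamma' Y v. ?f t) + (\<Sum>t\<in>(\<Union>n\<in>N. G \<inter> X n). ?f t)"
      by (subst Gsplit, rule sum.union_disjoint) (use G Nfin dj1 in auto)
    also have "(\<Sum>t\<in>(\<Union>n\<in>N. G \<inter> X n). ?f t) = (\<Sum>n\<in>N. \<Sum>t\<in>G \<inter> X n. ?f t)"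
      by (rule sum.UNION_disjoint) (use G Nfin dj2 in auto)
    also have "(\<Sum>t\<in>G \<inter> Gamma' Y v. ?f t) \<le> (l2norm (Proj (S 0) u))\<^sup>2"
    proof -
      have "(\<Sum>t\<in>G \<inter> Gamma' Y v. ?f t) = (\<Sum>t\<in>G \<inter> Gamma' Y v. (cmod (Proj (S 0) u t))\<^sup>2)"
        by (rule sum.cong) (auto simp: S_def Proj_def Ob_pt0 Gamma'_mem)
      also have "\<dots> \<le> (l2norm (Proj (S 0) u))\<^sup>2"
        by (rule l2_finsum_le[OF Proj_l2(1)[OF u]]) (use G in auto)
      finally show ?thesis .
    qed
    also have "(\<Sum>n\<in>N. \<Sum>t\<in>G \<inter> X n. ?f t) \<le> (\<Sum>n\<in>N. C\<^sup>2 * (l2norm (Proj (S n) u))\<^sup>2)"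
    proof (rule sum_mono)
      fix n assume n: "n \<in> N"
      then have n1: "1 \<le> n" unfolding N_def by auto
      have "(\<Sum>t\<in>G \<inter> X n. ?f t) = (\<Sum>t\<in>G \<inter> X n. (cmod (Blk A n u t))\<^sup>2)"
        by (rule sum.cong) (auto simp: Ob_pt1[OF n1])
      also have "\<dots> \<le> (l2norm (Blk A n u))\<^sup>2"
        by (rule l2_finsum_le[OF Blk_l2(1)[OF A u]]) (use G in auto)
      also have "\<dots> \<le> (C * l2norm (Proj (X n) u))\<^sup>2"
        by (rule power_mono[OF Blk_l2(2)[OF A u]]) simp
      also have "\<dots> = C\<^sup>2 * (l2norm (Proj (S n) u))\<^sup>2" using n1 by (simp add: S_def power_mult_distrib)
      finally show "(\<Sum>t\<in>G \<inter> X n. ?f t) \<le> C\<^sup>2 * (l2norm (Proj (S n) u))\<^sup>2" .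
    qed
    also have "(l2norm (Proj (S 0) u))\<^sup>2 + (\<Sum>n\<in>N. C\<^sup>2 * (l2norm (Proj (S n) u))\<^sup>2)
        \<le> (C + 1)\<^sup>2 * (\<Sum>i\<in>insert 0 N. (l2norm (Proj (S i) u))\<^sup>2)"
    proof -
      have z: "0 \<notin> N" unfolding N_def by auto
      have c1: "1 \<le> (C + 1)\<^sup>2"
      proof -
        have "1\<^sup>2 \<le> (C + 1)\<^sup>2" using C0 by (intro power_mono) auto
        then show ?thesis by simp
      qed
      have c2: "C\<^sup>2 \<le> (C + 1)\<^sup>2" using C0 by (intro power_mono) auto
      have "(l2norm (Proj (S 0) u))\<^sup>2 \<le> (C + 1)\<^sup>2 * (l2norm (Proj (S 0) u))\<^sup>2"
        using c1 by (simp add: mult_le_cancel_right1)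
      moreover have "(\<Sum>n\<in>N. C\<^sup>2 * (l2norm (Proj (S n) u))\<^sup>2) \<le> (\<Sum>n\<in>N. (C + 1)\<^sup>2 * (l2norm (Proj (S n) u))\<^sup>2)"
        by (rule sum_mono) (use c2 in \<open>simp add: mult_right_mono\<close>)
      ultimately show ?thesis using z Nfin by (simp add: sum_distrib_left distrib_left)
    qed
    also have "\<dots> \<le> (C + 1)\<^sup>2 * (l2norm u)\<^sup>2"
    proof (rule mult_left_mono)
      show "(\<Sum>i\<in>insert 0 N. (l2norm (Proj (S i) u))\<^sup>2) \<le> (l2norm u)\<^sup>2"
      proof (rule proj_sum_le[OF _ _ u])
        show "finite (insert 0 N)" using Nfin by simp
        show "\<forall>i\<in>insert 0 N. \<forall>j\<in>insert 0 N. i \<noteq> j \<longrightarrow> S i \<inter> S j = {}"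
          using X_disj Gamma'_mem unfolding N_def S_def by auto
      qed
    qed simp
    also have "\<dots> = ((C + 1) * l2norm u)\<^sup>2" by (simp add: power_mult_distrib)
    finally show "(\<Sum>t\<in>G. ?f t) \<le> ((C + 1) * l2norm u)\<^sup>2" by simp
  qed
  then show "Ob A u \<in> l2" "l2norm (Ob A u) \<le> (C + 1) * l2norm u" by auto
qed

end


lemma l2norm_swap: "l2norm (\<lambda>t. x t - y t) = l2norm (\<lambda>t. y t - x t)"
  unfolding l2norm_def by (simp add: norm_minus_commute)

lemma l2_add4:
  assumes "a \<in> l2" "b \<in> l2" "c \<in> l2" "d \<in> l2"
  shows "(\<lambda>t. a t + b t + c t + d t) \<in> l2"
    "l2norm (\<lambda>t. a t + b t + c t + d t) \<le> l2norm a + l2norm b + l2norm c + l2norm d"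
proof -
  have 1: "(\<lambda>t. a t + b t) \<in> l2" "l2norm (\<lambda>t. a t + b t) \<le> l2norm a + l2norm b"
    using l2_add[OF assms(1,2)] by auto
  have 2: "(\<lambda>t. a t + b t + c t) \<in> l2" "l2norm (\<lambda>t. a t + b t + c t) \<le> l2norm (\<lambda>t. a t + b t) + l2norm c"
    using l2_add[OF 1(1) assms(3)] by auto
  have 3: "(\<lambda>t. a t + b t + c t + d t) \<in> l2" "l2norm (\<lambda>t. a t + b t + c t + d t) \<le> l2norm (\<lambda>t. a t + b t + c t) + l2norm d"
    using l2_add[OF 2(1) assms(4)] by auto
  show "(\<lambda>t. a t + b t + c t + d t) \<in> l2" using 3 by simp
  show "l2norm (\<lambda>t. a t + b t + c t + d t) \<le> l2norm a + l2norm b + l2norm c + l2norm d"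
    using 1 2 3 by linarith
qed

lemma Lr_bl:
  assumes G: "bl G C"
  shows "bl (\<lambda>u t. Proj Z (G (Proj Z u)) t + (u t - Proj Z u t)) (C + 2)"
  unfolding bl_def lin_def bnd_def
proof (intro conjI ballI allI)
  note L = blD(1)[OF G] and B = blD(2)[OF G]
  show "0 \<le> C + 2" using blD(3)[OF G] by simp
  fix u :: "'a \<Rightarrow> complex" assume u: "u \<in> l2"
  have pu: "Proj Z u \<in> l2" using Proj_l2[OF u] by simp
  have g: "G (Proj Z u) \<in> l2" using bndD(1)[OF B pu] .
  have a: "Proj Z (G (Proj Z u)) \<in> l2" "l2norm (Proj Z (G (Proj Z u))) \<le> C * l2norm u"
    using Proj_l2(1)[OF g] order_trans[OF Proj_l2(2)[OF g] order_trans[OF bndD(2)[OF B pu] mult_left_mono[OF Proj_l2(2)[OF u] blD(3)[OF G]]]]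
    by auto
  have b: "(\<lambda>t. u t - Proj Z u t) \<in> l2" "l2norm (\<lambda>t. u t - Proj Z u t) \<le> l2norm u + l2norm u"
    using l2_diff[OF u pu] Proj_l2(2)[OF u, of Z] by auto
  show "(\<lambda>t. Proj Z (G (Proj Z u)) t + (u t - Proj Z u t)) \<in> l2" using l2_add[OF a(1) b(1)] by simp
  show "l2norm (\<lambda>t. Proj Z (G (Proj Z u)) t + (u t - Proj Z u t)) \<le> (C + 2) * l2norm u"
    using l2_add[OF a(1) b(1)] a(2) b(2) by (simp add: algebra_simps)
  fix c
  show "(\<lambda>t. Proj Z (G (Proj Z (\<lambda>t. c * u t))) t + (c * u t - Proj Z (\<lambda>t. c * u t) t)) =
        (\<lambda>t. c * (Proj Z (G (Proj Z u)) t + (u t - Proj Z u t)))"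
    unfolding Proj_scale linD(2)[OF L pu pu] by (auto simp: Proj_def algebra_simps)
next
  fix u w :: "'a \<Rightarrow> complex" assume u: "u \<in> l2" and w: "w \<in> l2"
  have pu: "Proj Z u \<in> l2" "Proj Z w \<in> l2" using Proj_l2 u w by auto
  show "(\<lambda>t. Proj Z (G (Proj Z (\<lambda>t. u t + w t))) t + (u t + w t - Proj Z (\<lambda>t. u t + w t) t)) =
        (\<lambda>t. Proj Z (G (Proj Z u)) t + (u t - Proj Z u t) + (Proj Z (G (Proj Z w)) t + (w t - Proj Z w t)))"
    unfolding Proj_add linD(1)[OF blD(1)[OF G] pu] by (auto simp: Proj_def algebra_simps)
qed

lemma Lconv:
  assumes PY: "strong_conv (\<lambda>r. Proj (Z r)) (Proj YY)"
    and GA: "strong_conv G Ag" and Gb: "\<And>r. bl (G r) C"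
  shows "strong_conv (\<lambda>r u t. Proj (Z r) (G r (Proj (Z r) u)) t + (u t - Proj (Z r) u t))
                     (\<lambda>u t. Proj YY (Ag (Proj YY u)) t + (u t - Proj YY u t))"
  unfolding strong_conv_def
proof (intro ballI conjI allI)
  fix u :: "'a \<Rightarrow> complex" assume u: "u \<in> l2"
  have C0: "0 \<le> C" using blD(3)[OF Gb] .
  have pu: "Proj YY u \<in> l2" using Proj_l2 u by auto
  have z: "Ag (Proj YY u) \<in> l2" using strong_convD(1)[OF GA pu] .
  have pz: "Proj YY (Ag (Proj YY u)) \<in> l2" using Proj_l2 z by auto
  show Lu: "(\<lambda>t. Proj YY (Ag (Proj YY u)) t + (u t - Proj YY u t)) \<in> l2"
    using l2_add[OF pz l2_diff[OF u pu, THEN conjunct1]] by simp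
  fix r
  show "(\<lambda>t. Proj (Z r) (G r (Proj (Z r) u)) t + (u t - Proj (Z r) u t)) \<in> l2"
    using bndD(1)[OF blD(2)[OF Lr_bl[OF Gb]] u] .
next
  fix u :: "'a \<Rightarrow> complex" assume u: "u \<in> l2"
  have C0: "0 \<le> C" using blD(3)[OF Gb] .
  have pu: "Proj YY u \<in> l2" using Proj_l2 u by auto
  have z: "Ag (Proj YY u) \<in> l2" using strong_convD(1)[OF GA pu] .
  define d1 where "d1 r = l2norm (\<lambda>t. Proj (Z r) u t - Proj YY u t)" for r
  define d2 where "d2 r = l2norm (\<lambda>t. G r (Proj YY u) t - Ag (Proj YY u) t)" for r
  define d3 where "d3 r = l2norm (\<lambda>t. Proj (Z r) (Ag (Proj YY u)) t - Proj YY (Ag (Proj YY u)) t)" for r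
  have t1: "d1 \<longlonglongrightarrow> 0" unfolding d1_def using strong_convD(3)[OF PY u] .
  have t2: "d2 \<longlonglongrightarrow> 0" unfolding d2_def using strong_convD(3)[OF GA pu] .
  have t3: "d3 \<longlonglongrightarrow> 0" unfolding d3_def using strong_convD(3)[OF PY z] .
  show "(\<lambda>r. l2norm (\<lambda>t. (Proj (Z r) (G r (Proj (Z r) u)) t + (u t - Proj (Z r) u t)) -
                         (Proj YY (Ag (Proj YY u)) t + (u t - Proj YY u t)))) \<longlonglongrightarrow> 0"
  proof (rule tendsto_sandwich[where f="\<lambda>r. 0" and h="\<lambda>r. (C + 1) * d1 r + d2 r + d3 r"])
    show "\<forall>\<^sub>F n in sequentially. 0 \<le> l2norm (\<lambda>t. (Proj (Z n) (G n (Proj (Z n) u)) t + (u t - Proj (Z n) u t)) -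
                         (Proj YY (Ag (Proj YY u)) t + (u t - Proj YY u t)))" by simp
    show "(\<lambda>r. (C + 1) * d1 r + d2 r + d3 r) \<longlonglongrightarrow> 0"
      using tendsto_add[OF tendsto_add[OF tendsto_mult_right_zero[OF t1] t2] t3] by simp
    show "\<forall>\<^sub>F r in sequentially. l2norm (\<lambda>t. (Proj (Z r) (G r (Proj (Z r) u)) t + (u t - Proj (Z r) u t)) -
                         (Proj YY (Ag (Proj YY u)) t + (u t - Proj YY u t))) \<le> (C + 1) * d1 r + d2 r + d3 r"
    proof (intro always_eventually allI)
      fix r
      note B = blD(2)[OF Gb[of r]]
      have pr: "Proj (Z r) u \<in> l2" using Proj_l2 u by auto
      have g1: "G r (Proj (Z r) u) \<in> l2" "G r (Proj YY u) \<in> l2" using bndD(1)[OF B] pr pu by auto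
      define a1 where "a1 = Proj (Z r) (\<lambda>t. G r (Proj (Z r) u) t - G r (Proj YY u) t)"
      define a2 where "a2 = Proj (Z r) (\<lambda>t. G r (Proj YY u) t - Ag (Proj YY u) t)"
      define a3 where "a3 = (\<lambda>t. Proj (Z r) (Ag (Proj YY u)) t - Proj YY (Ag (Proj YY u)) t)"
      define a4 where "a4 = (\<lambda>t. Proj YY u t - Proj (Z r) u t)"
      have dd1: "(\<lambda>t. G r (Proj (Z r) u) t - G r (Proj YY u) t) \<in> l2"
        "l2norm (\<lambda>t. G r (Proj (Z r) u) t - G r (Proj YY u) t) \<le> C * d1 r"
        using bl_diff_norm[OF Gb pr pu] unfolding d1_def by auto
      have dd2: "(\<lambda>t. G r (Proj YY u) t - Ag (Proj YY u) t) \<in> l2" using l2_diff[OF g1(2) z] by auto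
      have a1: "a1 \<in> l2" "l2norm a1 \<le> C * d1 r" unfolding a1_def using Proj_l2(1)[OF dd1(1)] order_trans[OF Proj_l2(2)[OF dd1(1)] dd1(2)] by auto
      have a2: "a2 \<in> l2" "l2norm a2 \<le> d2 r" unfolding a2_def d2_def using Proj_l2[OF dd2] by auto
      have a3: "a3 \<in> l2" "l2norm a3 = d3 r" unfolding a3_def d3_def
        using l2_diff[OF Proj_l2(1)[OF z] Proj_l2(1)[OF z]] by auto
      have a4: "a4 \<in> l2" "l2norm a4 = d1 r" unfolding a4_def d1_def
        using l2_diff[OF pu pr] l2norm_swap by auto
      have eq: "(\<lambda>t. (Proj (Z r) (G r (Proj (Z r) u)) t + (u t - Proj (Z r) u t)) -
                         (Proj YY (Ag (Proj YY u)) t + (u t - Proj YY u t))) = (\<lambda>t. a1 t + a2 t + a3 t + a4 t)"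
        unfolding a1_def a2_def a3_def a4_def by (rule ext) (simp add: Proj_def)
      show "l2norm (\<lambda>t. (Proj (Z r) (G r (Proj (Z r) u)) t + (u t - Proj (Z r) u t)) -
                         (Proj YY (Ag (Proj YY u)) t + (u t - Proj YY u t))) \<le> (C + 1) * d1 r + d2 r + d3 r"
        unfolding eq using l2_add4(2)[OF a1(1) a2(1) a3(1) a4(1)] a1(2) a2(2) a3(2) a4(2)
        by (simp add: algebra_simps)
    qed
  qed simp
qed


lemma fin_mono_choice:
  assumes "finite F" "\<And>f. f \<in> F \<Longrightarrow> \<exists>k::nat. P f k" "\<And>f k k'. P f k \<Longrightarrow> k \<le> k' \<Longrightarrow> P f k'"
  shows "\<exists>K. \<forall>f\<in>F. P f K"
  using assms(1,2)
proof (induction F rule: finite_induct)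
  case empty then show ?case by simp
next
  case (insert x F)
  obtain K where K: "\<forall>f\<in>F. P f K" using insert by blast
  obtain k where k: "P x k" using insert.prems by blast
  have "\<forall>f\<in>insert x F. P f (max K k)"
  proof
    fix f assume "f \<in> insert x F"
    then show "P f (max K k)"
    proof
      assume "f = x" then show ?thesis using assms(3)[OF k] by simp
    next
      assume "f \<in> F" then show ?thesis using assms(3)[OF K[rule_format, OF \<open>f \<in> F\<close>]] by simp
    qed
  qed
  then show ?case by blast
qed

lemma gmul_I: "a \<in> X \<Longrightarrow> b \<in> Z \<Longrightarrow> a + b \<in> gmul X Z"
  unfolding gmul_def by blast

lemma ginv_I: "a \<in> X \<Longrightarrow> - a \<in> ginv X"
  unfolding ginv_def by blast

lemma PR_eq: "Proj Y (Rsh g u) = Rsh g (Proj (gmul Y {g}) u)"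
  by (rule ext) (simp add: Proj_def Rsh_def gmul_single add.assoc)

lemma RP_eq: "Rsh (- g) (Proj Y z) = Proj (gmul Y {g}) (Rsh (- g) z)"
  by (rule ext) (simp add: Proj_def Rsh_def gmul_single)

context opsetup
begin

lemma block_conj:
  "Rsh (- (v m + g)) (Blk A m (Rsh (v m + g) u)) =
   Proj (gmul (Y m) {g}) ((Rsh (- g) \<circ> A \<circ> Rsh g) (Proj (gmul (Y m) {g}) u))"
proof -
  have e1: "Rsh (- v m) (Rsh (v m + g) u) = Rsh g u"
  proof -
    have "- v m + (v m + g) = g" by (simp add: add.assoc[symmetric])
    then show ?thesis by (simp only: Rsh_comp)
  qed
  have e2: "\<And>z. Rsh (- (v m + g)) (Rsh (v m) z) = Rsh (- g) z"
  proof -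
    fix z :: "'g \<Rightarrow> complex"
    have "- (v m + g) + v m = - g" by (simp add: minus_add add.assoc)
    then show "Rsh (- (v m + g)) (Rsh (v m) z) = Rsh (- g) z" by (simp only: Rsh_comp)
  qed
  have "Rsh (- (v m + g)) (Blk A m (Rsh (v m + g) u)) = Rsh (- g) (Proj (Y m) (A (Rsh g (Proj (gmul (Y m) {g}) u))))"
    unfolding Blk_alt e1 e2 PR_eq ..
  also have "\<dots> = Proj (gmul (Y m) {g}) (Rsh (- g) (A (Rsh g (Proj (gmul (Y m) {g}) u))))"
    by (rule RP_eq)
  finally show ?thesis by simp
qed

lemma memZ:
  assumes "a \<in> Omega_le \<Omega> n" "b \<in> Y n"
  shows "a + b \<in> Zset \<Omega> Y n"
proof -
  let ?W = "Y n \<union> Omega_le \<Omega> n"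
  have w1: "a \<in> ?W" "b \<in> ?W" "0 \<in> ?W" using assms zero_Omega_le by auto
  have "(a + - 0) + b \<in> gmul (gmul ?W (ginv ?W)) ?W"
    by (rule gmul_I[OF gmul_I[OF w1(1) ginv_I[OF w1(3)]] w1(2)])
  then show ?thesis unfolding Zset_def Let_def by simp
qed

lemma core:
  assumes A: "bl A C"
    and m1: "\<And>r. 1 \<le> m r" and mmono: "strict_mono m"
    and eta: "\<And>r. - \<eta> r \<in> Y (m r)"
    and hdef: "\<And>r. h r = v (m r) + (\<eta> r + w)"
    and PY: "strong_conv (\<lambda>r. Proj (gmul (Y (m r)) {\<eta> r + w})) (Proj YY)"
    and GA: "strong_conv (\<lambda>r. Rsh (- (\<eta> r + w)) \<circ> A \<circ> Rsh (\<eta> r + w)) Ag"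
  shows "strong_conv (\<lambda>r. Rsh (- h r) \<circ> Ob A \<circ> Rsh (h r))
           (\<lambda>u t. Proj YY (Ag (Proj YY u)) t + (u t - Proj YY u t))"
proof -
  define g where "g r = \<eta> r + w" for r
  define Z where "Z r = gmul (Y (m r)) {g r}" for r
  define G where "G r = Rsh (- g r) \<circ> A \<circ> Rsh (g r)" for r
  define T where "T r = Rsh (- h r) \<circ> Ob A \<circ> Rsh (h r)" for r
  define Lr where "Lr r = (\<lambda>u t. Proj (Z r) (G r (Proj (Z r) u)) t + (u t - Proj (Z r) u t))" for r
  define L where "L = (\<lambda>u t. Proj YY (Ag (Proj YY u)) t + (u t - Proj YY u t))"
  have C0: "0 \<le> C" using blD(3)[OF A] .
  have Gb: "\<And>r. bl (G r) C" unfolding G_def using conj_bl[OF A] .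
  have Tb: "\<And>r. bl (T r) (C + 1)" unfolding T_def using conj_bl[OF Ob_bl[OF A]] .
  have Lb: "\<And>r. bl (Lr r) (C + 2)" unfolding Lr_def using Lr_bl[OF Gb] .
  have PY': "strong_conv (\<lambda>r. Proj (Z r)) (Proj YY)" using PY unfolding Z_def g_def .
  have Geq: "G = (\<lambda>r. Rsh (- (\<eta> r + w)) \<circ> A \<circ> Rsh (\<eta> r + w))" by (rule ext) (simp add: G_def g_def)
  have GA': "strong_conv G Ag" using GA unfolding Geq .
  have LC: "strong_conv Lr L" unfolding Lr_def L_def
    by (rule Lconv[OF PY' GA' Gb])
  have hg: "\<And>r. h r = v (m r) + g r" using hdef unfolding g_def by simp
  have fin: "\<exists>R. \<forall>r\<ge>R. T r u = Lr r u" if F: "finite F" and us: "\<And>t. t \<notin> F \<Longrightarrow> u t = 0" for u F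
  proof -
    have "\<exists>K. \<forall>f\<in>F. f + - w \<in> Omega_le \<Omega> K"
    proof (rule fin_mono_choice[OF F])
      fix f
      have "f + - w \<in> (\<Union>k\<in>{1..}. Omega_pow \<Omega> k)" using Om_gen by simp
      then obtain k where "f + - w \<in> Omega_pow \<Omega> k" by blast
      then show "\<exists>k. f + - w \<in> Omega_le \<Omega> k" unfolding Omega_le_def by blast
    next
      fix f k k' assume "f + - w \<in> Omega_le \<Omega> k" "k \<le> k'"
      then show "f + - w \<in> Omega_le \<Omega> k'" using Omega_le_mono by blast
    qed
    then obtain K where K: "\<And>f. f \<in> F \<Longrightarrow> f + - w \<in> Omega_le \<Omega> K" by blast
    have "\<forall>r\<ge>K. T r u = Lr r u"
    proof (intro allI impI)
      fix r assume rK: "K \<le> r"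
      have mK: "K \<le> m r" using seq_suble[OF mmono, of r] rK by simp
      define W where "W = gmul (Zset \<Omega> Y (m r)) {- v (m r)}"
      have inW: "f + - h r \<in> W" if f: "f \<in> F" for f
      proof -
        have a: "f + - w \<in> Omega_le \<Omega> (m r)" using K[OF f] Omega_le_mono[OF mK] by blast
        have "(f + - w) + - \<eta> r \<in> Zset \<Omega> Y (m r)" by (rule memZ[OF a eta])
        moreover have "f + - h r + v (m r) = (f + - w) + - \<eta> r"
          unfolding hdef by (simp only: minus_add add.assoc add.left_inverse add_0_right)
        ultimately show ?thesis unfolding W_def gmul_single by simp
      qed
      have WX: "s \<notin> X n" if "s \<in> W" "1 \<le> n" "n \<noteq> m r" for s n
        using v_infl[of n "m r"] X_sub[of n] that m1[of r] unfolding W_def by blast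
      have zero: "Rsh (h r) u s = 0" if "1 \<le> n" "n \<noteq> m r" "s \<in> X n" for n s
      proof (cases "s + h r \<in> F")
        case True
        have "s + h r + - h r \<in> W" by (rule inW[OF True])
        then have "s \<in> W" by (simp add: add.assoc)
        then show ?thesis using WX that by blast
      next
        case False then show ?thesis using us by (simp add: Rsh_def)
      qed
      have loc: "Ob A (Rsh (h r) u) = (\<lambda>t. Blk A (m r) (Rsh (h r) u) t + Proj (Gamma' Y v) (Rsh (h r) u) t)"
        by (rule Ob_local[OF blD(1)[OF A] m1]) (use zero in blast)
      have bc: "Rsh (- h r) (Blk A (m r) (Rsh (h r) u)) = Proj (Z r) (G r (Proj (Z r) u))"
        unfolding hg Z_def G_def by (rule block_conj)
      have gam: "Rsh (- h r) (Proj (Gamma' Y v) (Rsh (h r) u)) t = u t - Proj (Z r) u t" for t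
      proof (cases "t \<in> F")
        case False then show ?thesis using us by (simp add: Rsh_def Proj_def)
      next
        case True
        have tW: "t + - h r \<in> W" by (rule inW[OF True])
        have "t + - h r \<in> Gamma' Y v \<longleftrightarrow> t + - h r \<notin> X (m r)"
          using Gamma'_mem WX[OF tW] m1[of r] by blast
        moreover have "t + - h r \<in> X (m r) \<longleftrightarrow> t \<in> Z r"
        proof -
          have "t + - h r + v (m r) = t + - g r" unfolding hg by (simp add: minus_add add.assoc)
          then show ?thesis unfolding X_mem Z_def gmul_single by simp
        qed
        ultimately show ?thesis by (simp add: Rsh_def Proj_def add.assoc)
      qed
      show "T r u = Lr r u"
      proof (rule ext)
        fix t
        have "T r u t = Rsh (- h r) (Blk A (m r) (Rsh (h r) u)) t + Rsh (- h r) (Proj (Gamma' Y v) (Rsh (h r) u)) t"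
          unfolding T_def using loc by (simp add: Rsh_def)
        then show "T r u t = Lr r u t" unfolding Lr_def bc gam by simp
      qed
    qed
    then show ?thesis by blast
  qed
  have "strong_conv T L"
    unfolding strong_conv_def
  proof (intro ballI conjI allI)
    fix u :: "'g \<Rightarrow> complex" assume u: "u \<in> l2"
    show "L u \<in> l2" using strong_convD(1)[OF LC u] .
    fix r show "T r u \<in> l2" using bndD(1)[OF blD(2)[OF Tb] u] .
  next
    fix u :: "'g \<Rightarrow> complex" assume u: "u \<in> l2"
    have Lu: "L u \<in> l2" using strong_convD(1)[OF LC u] .
    show "(\<lambda>r. l2norm (\<lambda>t. T r u t - L u t)) \<longlonglongrightarrow> 0"
    proof (rule LIMSEQ_I)
      fix e :: real assume e: "0 < e"
      define \<delta> where "\<delta> = e / (2 * (2 * C + 4))"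
      have d: "0 < \<delta>" unfolding \<delta>_def using e C0 by simp
      obtain F where F: "finite F" and rl: "(\<lambda>t. if t \<in> F then 0 else u t) \<in> l2"
        and rn: "l2norm (\<lambda>t. if t \<in> F then 0 else u t) \<le> \<delta>"
        using l2_tail[OF u d] by blast
      define uF where "uF = (\<lambda>t. if t \<in> F then u t else 0)"
      have ufs: "\<And>t. t \<notin> F \<Longrightarrow> uF t = 0" unfolding uF_def by simp
      have uFl: "uF \<in> l2" using l2_finsupp(1)[OF F ufs] .
      have dif: "(\<lambda>t. u t - uF t) = (\<lambda>t. if t \<in> F then 0 else u t)" unfolding uF_def by auto
      obtain R1 where R1: "\<And>r. R1 \<le> r \<Longrightarrow> T r uF = Lr r uF" using fin[of F uF, OF F ufs] by blast
      have "\<forall>r>0. \<exists>no. \<forall>n\<ge>no. l2norm (\<lambda>t. Lr n u t - L u t) < r"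
        using strong_convD(3)[OF LC u] unfolding LIMSEQ_def dist_real_def by simp
      then obtain R2 where R2: "\<And>r. R2 \<le> r \<Longrightarrow> l2norm (\<lambda>t. Lr r u t - L u t) < e / 2"
        using e by (meson half_gt_zero)
      show "\<exists>no. \<forall>r\<ge>no. norm (l2norm (\<lambda>t. T r u t - L u t) - 0) < e"
      proof (intro exI allI impI)
        fix r assume r: "max R1 R2 \<le> r"
        have TuF: "T r uF = Lr r uF" using R1 r by simp
        have a1: "(\<lambda>t. T r u t - T r uF t) \<in> l2" "l2norm (\<lambda>t. T r u t - T r uF t) \<le> (C + 1) * \<delta>"
          using bl_diff_norm[OF Tb u uFl] dif
            order_trans[OF _ mult_left_mono[OF rn, of "C + 1"]] C0 by auto
        have a2: "(\<lambda>t. Lr r uF t - Lr r u t) \<in> l2" "l2norm (\<lambda>t. Lr r uF t - Lr r u t) \<le> (C + 2) * \<delta>"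
        proof -
          show "(\<lambda>t. Lr r uF t - Lr r u t) \<in> l2" using bl_diff_norm(1)[OF Lb uFl u] .
          have "l2norm (\<lambda>t. Lr r uF t - Lr r u t) \<le> (C + 2) * l2norm (\<lambda>t. uF t - u t)"
            using bl_diff_norm(2)[OF Lb uFl u] .
          also have "\<dots> = (C + 2) * l2norm (\<lambda>t. u t - uF t)" using l2norm_swap by metis
          also have "\<dots> \<le> (C + 2) * \<delta>" using dif rn C0 by (simp add: mult_left_mono)
          finally show "l2norm (\<lambda>t. Lr r uF t - Lr r u t) \<le> (C + 2) * \<delta>" .
        qed
        have a3: "(\<lambda>t. Lr r u t - L u t) \<in> l2" "l2norm (\<lambda>t. Lr r u t - L u t) < e / 2"
          using l2_diff[OF bndD(1)[OF blD(2)[OF Lb] u] Lu] R2 r by auto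
        have eq: "(\<lambda>t. T r u t - L u t) = (\<lambda>t. (T r u t - T r uF t) + (Lr r uF t - Lr r u t) + (Lr r u t - L u t))"
          using TuF by (auto simp: algebra_simps)
        have "l2norm (\<lambda>t. T r u t - L u t) \<le>
              l2norm (\<lambda>t. T r u t - T r uF t) + l2norm (\<lambda>t. Lr r uF t - Lr r u t) + l2norm (\<lambda>t. Lr r u t - L u t)"
          unfolding eq using l2_add[OF a1(1) a2(1)] l2_add[OF l2_add[OF a1(1) a2(1), THEN conjunct1] a3(1)]
          by linarith
        also have "\<dots> < (C + 1) * \<delta> + (C + 2) * \<delta> + e / 2" using a1(2) a2(2) a3(2) by linarith
        also have "(C + 1) * \<delta> + (C + 2) * \<delta> \<le> e / 2"
        proof -
          have "(C + 1) * \<delta> + (C + 2) * \<delta> = (2 * C + 3) * \<delta>" by (simp add: algebra_simps)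
          also have "\<dots> \<le> (2 * C + 4) * \<delta>" using d by (simp add: mult_right_mono)
          also have "\<dots> = e / 2" unfolding \<delta>_def using C0 by (simp add: field_simps)
          finally show ?thesis .
        qed
        then have "(C + 1) * \<delta> + (C + 2) * \<delta> + e / 2 \<le> e" by simp
        finally show "norm (l2norm (\<lambda>t. T r u t - L u t) - 0) < e" by simp
      qed
    qed
  qed
  then show ?thesis unfolding T_def L_def .
qed

end


context opsetup
begin

lemma Blk_inner:
  assumes "is_adjoint A A'" "x \<in> l2" "y \<in> l2"
  shows "l2inner (Blk A n x) y = l2inner x (Blk A' n y)"
proof -
  have px: "Proj (Y n) (Rsh (- v n) x) \<in> l2" using Proj_l2(1)[OF Rsh_l2(1)[OF assms(2)]] .
  have py: "Proj (Y n) (Rsh (- v n) y) \<in> l2" using Proj_l2(1)[OF Rsh_l2(1)[OF assms(3)]] .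
  have "l2inner (Blk A n x) y = l2inner (Proj (Y n) (A (Proj (Y n) (Rsh (- v n) x)))) (Rsh (- v n) y)"
    unfolding Blk_alt by (simp add: inner_Rsh)
  also have "\<dots> = l2inner (A (Proj (Y n) (Rsh (- v n) x))) (Proj (Y n) (Rsh (- v n) y))"
    by (simp add: inner_Proj)
  also have "\<dots> = l2inner (Proj (Y n) (Rsh (- v n) x)) (A' (Proj (Y n) (Rsh (- v n) y)))"
    using assms(1) px py unfolding is_adjoint_def by blast
  also have "\<dots> = l2inner (Rsh (- v n) x) (Proj (Y n) (A' (Proj (Y n) (Rsh (- v n) y))))"
    by (simp add: inner_Proj)
  also have "\<dots> = l2inner x (Blk A' n y)"
    unfolding Blk_alt by (simp add: inner_Rsh_right)
  finally show ?thesis .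
qed

lemma adj_Ob:
  assumes A: "bl A C" and w: "w \<in> l2"
  shows "adj (Ob A) w = Ob (adj A) w"
proof (rule ext)
  fix t
  have adjA: "is_adjoint A (adj A)" using adj_is_adjoint[OF A] .
  show "adj (Ob A) w t = Ob (adj A) w t"
  proof (cases "\<exists>n\<ge>1. t \<in> X n")
    case True
    then obtain n where n: "1 \<le> n" "t \<in> X n" by blast
    have z: "delta t s = 0" if "1 \<le> m" "m \<noteq> n" "s \<in> X m" for m s
      using X_disj[of m n] that n unfolding delta_def by auto
    have "Ob A (delta t) = (\<lambda>s. Blk A n (delta t) s + Proj (Gamma' Y v) (delta t) s)"
      by (rule Ob_local[OF blD(1)[OF A] n(1)]) (use z in blast)
    also have "\<dots> = Blk A n (delta t)"
    proof -
      have "Proj (Gamma' Y v) (delta t) = (\<lambda>s. 0)"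
      proof (rule ext)
        fix s show "Proj (Gamma' Y v) (delta t) s = 0"
          using n Gamma'_mem[of t] by (cases "s = t") (auto simp: Proj_def delta_def)
      qed
      then show ?thesis by simp
    qed
    finally have e: "Ob A (delta t) = Blk A n (delta t)" .
    have "adj (Ob A) w t = l2inner w (Blk A n (delta t))" unfolding adj_def e ..
    also have "\<dots> = cnj (l2inner (delta t) (Blk (adj A) n w))"
      using Blk_inner[OF adjA delta_l2 w] by (simp add: inner_cnj[of w])
    also have "\<dots> = Blk (adj A) n w t" by (simp add: inner_delta_left)
    also have "\<dots> = Ob (adj A) w t" using Ob_pt1[OF n] by simp
    finally show ?thesis .
  next
    case False
    have z: "delta t s = 0" if "1 \<le> m" "m \<noteq> 1" "s \<in> X m" for m s
      using False that unfolding delta_def by auto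
    have "Ob A (delta t) = (\<lambda>s. Blk A 1 (delta t) s + Proj (Gamma' Y v) (delta t) s)"
      by (rule Ob_local[OF blD(1)[OF A]]) (use z in auto)
    also have "\<dots> = delta t"
    proof -
      have "Blk A 1 (delta t) = (\<lambda>s. 0)"
        by (rule Blk_zero[OF blD(1)[OF A]]) (use False in \<open>auto simp: delta_def\<close>)
      moreover have "Proj (Gamma' Y v) (delta t) = delta t"
        using False Gamma'_mem by (auto simp: Proj_def delta_def)
      ultimately show ?thesis by simp
    qed
    finally have e: "Ob A (delta t) = delta t" .
    show ?thesis unfolding adj_def e inner_delta_right using Ob_pt0 False by simp
  qed
qed

end


lemma Lsh_l2:
  assumes "u \<in> l2" shows "Lsh r u \<in> l2" "l2norm (Lsh r u) = l2norm u"
  unfolding Lsh_def using l2_reindex[OF bij_plus[of "- r"], of u] assms by auto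

lemma bl_Lsh: "bl (Lsh r) 1"
  unfolding bl_def lin_def bnd_def by (auto simp: Lsh_def Lsh_l2[unfolded Lsh_def])

lemma bl_mult:
  assumes "bounded (range a)"
  shows "\<exists>C. bl (mult_op a) C"
proof -
  obtain M where M: "\<And>t. cmod (a t) \<le> M" using assms unfolding bounded_iff by auto
  have M0: "0 \<le> M" using M[of undefined] norm_ge_zero order_trans by blast
  have "bl (mult_op a) M"
    unfolding bl_def lin_def bnd_def
  proof (intro conjI ballI allI)
    fix u :: "'a \<Rightarrow> complex" assume u: "u \<in> l2"
    have "mult_op a u \<in> l2 \<and> l2norm (mult_op a u) \<le> M * l2norm u"
      by (rule l2_dom[OF u M0]) (simp add: mult_op_def norm_mult mult_right_mono M)
    then show "mult_op a u \<in> l2" "l2norm (mult_op a u) \<le> M * l2norm u" by auto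
  qed (auto simp: mult_op_def algebra_simps M0)
  then show ?thesis by blast
qed

lemma bl_add:
  assumes "bl S C1" "bl T C2"
  shows "bl (\<lambda>u t. S u t + T u t) (C1 + C2)"
  unfolding bl_def lin_def bnd_def
proof (intro conjI ballI allI)
  show "0 \<le> C1 + C2" using blD(3)[OF assms(1)] blD(3)[OF assms(2)] by simp
  fix u :: "'a \<Rightarrow> complex" assume u: "u \<in> l2"
  have a: "S u \<in> l2" "T u \<in> l2" using bndD(1)[OF blD(2)[OF assms(1)] u] bndD(1)[OF blD(2)[OF assms(2)] u] by auto
  show "(\<lambda>t. S u t + T u t) \<in> l2" using l2_add[OF a] by simp
  show "l2norm (\<lambda>t. S u t + T u t) \<le> (C1 + C2) * l2norm u"
    using l2_add[OF a] bndD(2)[OF blD(2)[OF assms(1)] u] bndD(2)[OF blD(2)[OF assms(2)] u]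
    by (simp add: algebra_simps)
  fix c
  show "(\<lambda>t. S (\<lambda>t. c * u t) t + T (\<lambda>t. c * u t) t) = (\<lambda>t. c * (S u t + T u t))"
    using linD(2)[OF blD(1)[OF assms(1)] u u] linD(2)[OF blD(1)[OF assms(2)] u u]
    by (simp add: algebra_simps)
next
  fix u w :: "'a \<Rightarrow> complex" assume u: "u \<in> l2" and w: "w \<in> l2"
  show "(\<lambda>t. S (\<lambda>t. u t + w t) t + T (\<lambda>t. u t + w t) t) = (\<lambda>t. S u t + T u t + (S w t + T w t))"
    using linD(1)[OF blD(1)[OF assms(1)] u w] linD(1)[OF blD(1)[OF assms(2)] u w]
    by (simp add: algebra_simps)
qed

lemma bl_scale:
  assumes "bl S C"
  shows "bl (\<lambda>u t. c * S u t) (cmod c * C)"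
  unfolding bl_def lin_def bnd_def
proof (intro conjI ballI allI)
  show "0 \<le> cmod c * C" using blD(3)[OF assms] by simp
  fix u :: "'a \<Rightarrow> complex" assume u: "u \<in> l2"
  have a: "S u \<in> l2" using bndD(1)[OF blD(2)[OF assms] u] .
  show "(\<lambda>t. c * S u t) \<in> l2" using l2_scale[OF a] by simp
  show "l2norm (\<lambda>t. c * S u t) \<le> (cmod c * C) * l2norm u"
    using l2_scale[OF a, of c] bndD(2)[OF blD(2)[OF assms] u]
    by (metis (no_types, lifting) mult.assoc mult_left_mono norm_ge_zero order_trans)
  fix d
  show "(\<lambda>t. c * S (\<lambda>t. d * u t) t) = (\<lambda>t. d * (c * S u t))"
    using linD(2)[OF blD(1)[OF assms] u u] by (simp add: algebra_simps)
next
  fix u w :: "'a \<Rightarrow> complex" assume u: "u \<in> l2" and w: "w \<in> l2"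
  show "(\<lambda>t. c * S (\<lambda>t. u t + w t) t) = (\<lambda>t. c * S u t + c * S w t)"
    using linD(1)[OF blD(1)[OF assms] u w] by (simp add: algebra_simps)
qed

lemma bl_comp:
  assumes "bl S C1" "bl T C2"
  shows "bl (S \<circ> T) (C1 * C2)"
  unfolding bl_def lin_def bnd_def
proof (intro conjI ballI allI)
  show "0 \<le> C1 * C2" using blD(3)[OF assms(1)] blD(3)[OF assms(2)] by simp
  fix u :: "'a \<Rightarrow> complex" assume u: "u \<in> l2"
  have a: "T u \<in> l2" using bndD(1)[OF blD(2)[OF assms(2)] u] .
  show "(S \<circ> T) u \<in> l2" using bndD(1)[OF blD(2)[OF assms(1)] a] by simp
  have "l2norm (S (T u)) \<le> C1 * l2norm (T u)" using bndD(2)[OF blD(2)[OF assms(1)] a] .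
  also have "\<dots> \<le> C1 * (C2 * l2norm u)"
    using bndD(2)[OF blD(2)[OF assms(2)] u] blD(3)[OF assms(1)] by (rule mult_left_mono)
  finally show "l2norm ((S \<circ> T) u) \<le> C1 * C2 * l2norm u" by (simp add: mult.assoc)
  fix c
  show "(S \<circ> T) (\<lambda>t. c * u t) = (\<lambda>t. c * (S \<circ> T) u t)"
    using linD(2)[OF blD(1)[OF assms(2)] u u] linD(2)[OF blD(1)[OF assms(1)] a a] by simp
next
  fix u w :: "'a \<Rightarrow> complex" assume u: "u \<in> l2" and w: "w \<in> l2"
  have a: "T u \<in> l2" "T w \<in> l2" using bndD(1)[OF blD(2)[OF assms(2)]] u w by auto
  show "(S \<circ> T) (\<lambda>t. u t + w t) = (\<lambda>t. (S \<circ> T) u t + (S \<circ> T) w t)"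
    using linD(1)[OF blD(1)[OF assms(2)] u w] linD(1)[OF blD(1)[OF assms(1)] a] by simp
qed

lemma BDO_gen_bl: "B \<in> BDO_gen \<Longrightarrow> \<exists>C. bl B C"
proof (induction rule: BDO_gen.induct)
  case (shift r) then show ?case using bl_Lsh by blast
next
  case (mult a) then show ?case using bl_mult by blast
next
  case (add S T) then show ?case using bl_add by blast
next
  case (scale S c) then show ?case using bl_scale by blast
next
  case (comp S T) then show ?case using bl_comp by blast
qed

lemma Lsh_adjoint: "is_adjoint (Lsh r) (Lsh (- (r::'g::group_add)))"
  unfolding is_adjoint_def
proof (intro ballI conjI)
  fix u w :: "'g::group_add \<Rightarrow> complex" assume u: "u \<in> l2" and w: "w \<in> l2"
  show "Lsh r u \<in> l2" "Lsh (- r) w \<in> l2" using Lsh_l2 u w by auto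
  have b: "bij_betw (\<lambda>s. r + s) UNIV UNIV" using bij_plus[of r] by (simp add: bij_def)
  have "l2inner (Lsh r u) w = (\<Sum>\<^sub>\<infinity>t. (\<lambda>t. Lsh r u t * cnj (w t)) (r + t))"
    unfolding l2inner_def using infsum_reindex_bij_betw[OF b, of "\<lambda>t. Lsh r u t * cnj (w t)"] by simp
  also have "\<dots> = l2inner u (Lsh (- r) w)"
    unfolding l2inner_def Lsh_def by (simp add: add.assoc[symmetric])
  finally show "l2inner (Lsh r u) w = l2inner u (Lsh (- r) w)" .
qed

lemma mult_adjoint:
  assumes "bounded (range a)"
  shows "is_adjoint (mult_op a) (mult_op (\<lambda>t. cnj (a t)))"
  unfolding is_adjoint_def
proof (intro ballI conjI)
  fix u w :: "'a \<Rightarrow> complex" assume u: "u \<in> l2" and w: "w \<in> l2"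
  obtain C where C: "bl (mult_op a) C" using bl_mult[OF assms] by blast
  have "bounded (range (\<lambda>t. cnj (a t)))" using assms unfolding bounded_iff by auto
  then obtain C' where C': "bl (mult_op (\<lambda>t. cnj (a t))) C'" using bl_mult by blast
  show "mult_op a u \<in> l2" using bndD(1)[OF blD(2)[OF C] u] .
  show "mult_op (\<lambda>t. cnj (a t)) w \<in> l2" using bndD(1)[OF blD(2)[OF C'] w] .
  show "l2inner (mult_op a u) w = l2inner u (mult_op (\<lambda>t. cnj (a t)) w)"
    unfolding l2inner_def mult_op_def by (simp add: mult_ac)
qed

lemma BDO_gen_adjoint: "B \<in> BDO_gen \<Longrightarrow> \<exists>B'\<in>BDO_gen. is_adjoint B B'"
proof (induction rule: BDO_gen.induct)
  case (shift r) then show ?case using Lsh_adjoint BDO_gen.shift by blast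
next
  case (mult a)
  have "bounded (range (\<lambda>t. cnj (a t)))" using mult unfolding bounded_iff by auto
  then show ?case using mult_adjoint[OF mult] BDO_gen.mult by blast
next
  case (add S T)
  then obtain S' T' where S': "S' \<in> BDO_gen" "is_adjoint S S'" and T': "T' \<in> BDO_gen" "is_adjoint T T'" by blast
  have "is_adjoint (\<lambda>u t. S u t + T u t) (\<lambda>u t. S' u t + T' u t)"
    unfolding is_adjoint_def
  proof (intro ballI conjI)
    fix u w :: "'a \<Rightarrow> complex" assume u: "u \<in> l2" and w: "w \<in> l2"
    have a: "S u \<in> l2" "T u \<in> l2" "S' w \<in> l2" "T' w \<in> l2" using S'(2) T'(2) u w unfolding is_adjoint_def by auto
    show "(\<lambda>t. S u t + T u t) \<in> l2" "(\<lambda>t. S' w t + T' w t) \<in> l2" using l2_add a by auto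
    have "l2inner (\<lambda>t. S u t + T u t) w = l2inner (S u) w + l2inner (T u) w" by (rule inner_add_left[OF a(1,2) w])
    also have "\<dots> = l2inner u (S' w) + l2inner u (T' w)" using S'(2) T'(2) u w unfolding is_adjoint_def by auto
    also have "\<dots> = l2inner u (\<lambda>t. S' w t + T' w t)" by (rule inner_add_right[OF a(3,4) u, symmetric])
    finally show "l2inner (\<lambda>t. S u t + T u t) w = l2inner u (\<lambda>t. S' w t + T' w t)" .
  qed
  then show ?case using BDO_gen.add[OF S'(1) T'(1)] by blast
next
  case (scale S c)
  then obtain S' where S': "S' \<in> BDO_gen" "is_adjoint S S'" by blast
  have "is_adjoint (\<lambda>u t. c * S u t) (\<lambda>u t. cnj c * S' u t)"
    unfolding is_adjoint_def
  proof (intro ballI conjI)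
    fix u w :: "'a \<Rightarrow> complex" assume u: "u \<in> l2" and w: "w \<in> l2"
    have a: "S u \<in> l2" "S' w \<in> l2" using S'(2) u w unfolding is_adjoint_def by auto
    show "(\<lambda>t. c * S u t) \<in> l2" "(\<lambda>t. cnj c * S' w t) \<in> l2" using l2_scale a by auto
    show "l2inner (\<lambda>t. c * S u t) w = l2inner u (\<lambda>t. cnj c * S' w t)"
      using S'(2) u w unfolding is_adjoint_def by (simp add: inner_scale_left inner_scale_right)
  qed
  then show ?case using BDO_gen.scale[OF S'(1)] by blast
next
  case (comp S T)
  then obtain S' T' where S': "S' \<in> BDO_gen" "is_adjoint S S'" and T': "T' \<in> BDO_gen" "is_adjoint T T'" by blast
  have "is_adjoint (S \<circ> T) (T' \<circ> S')"
    unfolding is_adjoint_def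
  proof (intro ballI conjI)
    fix u w :: "'a \<Rightarrow> complex" assume u: "u \<in> l2" and w: "w \<in> l2"
    have a: "T u \<in> l2" "S' w \<in> l2" using S'(2) T'(2) u w unfolding is_adjoint_def by auto
    show "(S \<circ> T) u \<in> l2" "(T' \<circ> S') w \<in> l2" using S'(2) T'(2) a unfolding is_adjoint_def by auto
    have "l2inner (S (T u)) w = l2inner (T u) (S' w)" using S'(2) a w unfolding is_adjoint_def by auto
    also have "\<dots> = l2inner u (T' (S' w))" using T'(2) a u unfolding is_adjoint_def by auto
    finally show "l2inner ((S \<circ> T) u) w = l2inner u ((T' \<circ> S') w)" by simp
  qed
  then show ?case using BDO_gen.comp[OF T'(1) S'(1)] by blast
qed

lemma real_small_zero:
  fixes x :: real
  assumes "\<And>e. 0 < e \<Longrightarrow> x \<le> K * e" "0 \<le> x" "0 \<le> K"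
  shows "x = 0"
  using small_zero[of "complex_of_real x" K] assms by auto

lemma BDO_bl:
  assumes A: "A \<in> BDO"
  shows "\<exists>C. bl A C"
proof -
  have appr: "\<exists>B\<in>BDO_gen. \<forall>u\<in>l2. (\<lambda>t. A u t - B u t) \<in> l2 \<and> l2norm (\<lambda>t. A u t - B u t) \<le> e * l2norm u"
    if "0 < e" for e using A that unfolding BDO_def by blast
  obtain B where B: "B \<in> BDO_gen" "\<And>u. u \<in> l2 \<Longrightarrow> (\<lambda>t. A u t - B u t) \<in> l2 \<and> l2norm (\<lambda>t. A u t - B u t) \<le> 1 * l2norm u"
    using appr[of 1] by auto
  obtain C where C: "bl B C" using BDO_gen_bl[OF B(1)] by blast
  have Al2: "A u \<in> l2" "l2norm (A u) \<le> (C + 1) * l2norm u" if u: "u \<in> l2" for u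
  proof -
    have b: "B u \<in> l2" "l2norm (B u) \<le> C * l2norm u" using bndD[OF blD(2)[OF C] u] by auto
    have eq: "A u = (\<lambda>t. B u t + (A u t - B u t))" by simp
    show "A u \<in> l2" using l2_add[OF b(1) B(2)[OF u, THEN conjunct1]] eq by metis
    show "l2norm (A u) \<le> (C + 1) * l2norm u"
      using l2_add[OF b(1) B(2)[OF u, THEN conjunct1]] b(2) B(2)[OF u] eq by (simp add: algebra_simps)
  qed
  \<comment> \<open>linearity via approximation\<close>
  have approx_zero: "z = (\<lambda>t. 0)"
    if zl: "z \<in> l2" and K: "0 \<le> K" and zb: "\<And>e. 0 < e \<Longrightarrow> l2norm z \<le> K * e" for z :: "'a \<Rightarrow> complex" and K
  proof -
    have "l2norm z = 0" by (rule real_small_zero[OF zb]) (use K in auto)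
    then show ?thesis using l2norm_eq0[OF zl] by simp
  qed
  have D: "(\<lambda>t. A u t - B' u t) \<in> l2" "l2norm (\<lambda>t. A u t - B' u t) \<le> e * l2norm u"
    if "u \<in> l2" "\<forall>u\<in>l2. (\<lambda>t. A u t - B' u t) \<in> l2 \<and> l2norm (\<lambda>t. A u t - B' u t) \<le> e * l2norm u" for u B' e
    using that by auto
  have lin: "lin A"
    unfolding lin_def
  proof (intro conjI ballI allI)
    fix u w :: "'a \<Rightarrow> complex" assume u: "u \<in> l2" and w: "w \<in> l2"
    have uw: "(\<lambda>t. u t + w t) \<in> l2" using l2_add[OF u w] by simp
    let ?z = "\<lambda>t. A (\<lambda>t. u t + w t) t - (A u t + A w t)"
    have zl: "?z \<in> l2" using Al2(1)[OF uw] l2_add[OF Al2(1)[OF u] Al2(1)[OF w]] l2_diff by blast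
    have "?z = (\<lambda>t. 0)"
    proof (rule approx_zero[OF zl, of "l2norm (\<lambda>t. u t + w t) + l2norm u + l2norm w"])
      fix e :: real assume e: "0 < e"
      obtain B' where B': "B' \<in> BDO_gen" "\<forall>u\<in>l2. (\<lambda>t. A u t - B' u t) \<in> l2 \<and> l2norm (\<lambda>t. A u t - B' u t) \<le> e * l2norm u"
        using appr[OF e] by blast
      obtain C' where C': "bl B' C'" using BDO_gen_bl[OF B'(1)] by blast
      have "?z = (\<lambda>t. (A (\<lambda>t. u t + w t) t - B' (\<lambda>t. u t + w t) t) - (A u t - B' u t) - (A w t - B' w t))"
        using linD(1)[OF blD(1)[OF C'] u w] by (auto simp: algebra_simps)
      moreover have "l2norm (\<lambda>t. (A (\<lambda>t. u t + w t) t - B' (\<lambda>t. u t + w t) t) - (A u t - B' u t) - (A w t - B' w t))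
          \<le> e * l2norm (\<lambda>t. u t + w t) + e * l2norm u + e * l2norm w"
      proof -
        note d1 = D[OF uw B'(2)] and d2 = D[OF u B'(2)] and d3 = D[OF w B'(2)]
        have x: "(\<lambda>t. (A (\<lambda>t. u t + w t) t - B' (\<lambda>t. u t + w t) t) - (A u t - B' u t)) \<in> l2"
          "l2norm (\<lambda>t. (A (\<lambda>t. u t + w t) t - B' (\<lambda>t. u t + w t) t) - (A u t - B' u t)) \<le>
            l2norm (\<lambda>t. A (\<lambda>t. u t + w t) t - B' (\<lambda>t. u t + w t) t) + l2norm (\<lambda>t. A u t - B' u t)"
          using l2_diff[OF d1(1) d2(1)] by auto
        show ?thesis using l2_diff[OF x(1) d3(1)] x(2) d1(2) d2(2) d3(2) by linarith
      qed
      ultimately show "l2norm ?z \<le> (l2norm (\<lambda>t. u t + w t) + l2norm u + l2norm w) * e"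
        by (simp add: algebra_simps)
    qed simp
    then show "A (\<lambda>t. u t + w t) = (\<lambda>t. A u t + A w t)" by (metis (no_types) eq_iff_diff_eq_0 ext)
  next
    fix u :: "'a \<Rightarrow> complex" and c assume u: "u \<in> l2"
    have cu: "(\<lambda>t. c * u t) \<in> l2" using l2_scale[OF u] by simp
    let ?z = "\<lambda>t. A (\<lambda>t. c * u t) t - c * A u t"
    have zl: "?z \<in> l2" using Al2(1)[OF cu] l2_scale[OF Al2(1)[OF u]] l2_diff by blast
    have "?z = (\<lambda>t. 0)"
    proof (rule approx_zero[OF zl, of "l2norm (\<lambda>t. c * u t) + cmod c * l2norm u"])
      fix e :: real assume e: "0 < e"
      obtain B' where B': "B' \<in> BDO_gen" "\<forall>u\<in>l2. (\<lambda>t. A u t - B' u t) \<in> l2 \<and> l2norm (\<lambda>t. A u t - B' u t) \<le> e * l2norm u"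
        using appr[OF e] by blast
      obtain C' where C': "bl B' C'" using BDO_gen_bl[OF B'(1)] by blast
      have "?z = (\<lambda>t. (A (\<lambda>t. c * u t) t - B' (\<lambda>t. c * u t) t) - c * (A u t - B' u t))"
        using linD(2)[OF blD(1)[OF C'] u u] by (auto simp: algebra_simps)
      moreover have "l2norm (\<lambda>t. (A (\<lambda>t. c * u t) t - B' (\<lambda>t. c * u t) t) - c * (A u t - B' u t))
          \<le> e * l2norm (\<lambda>t. c * u t) + cmod c * (e * l2norm u)"
      proof -
        note d1 = D[OF cu B'(2)] and d2 = D[OF u B'(2)]
        have s: "(\<lambda>t. c * (A u t - B' u t)) \<in> l2" "l2norm (\<lambda>t. c * (A u t - B' u t)) \<le> cmod c * (e * l2norm u)"
          using l2_scale[OF d2(1), of c] order_trans[OF _ mult_left_mono[OF d2(2) norm_ge_zero]] by auto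
        show ?thesis using l2_diff[OF d1(1) s(1)] d1(2) s(2) by linarith
      qed
      ultimately show "l2norm ?z \<le> (l2norm (\<lambda>t. c * u t) + cmod c * l2norm u) * e"
        by (simp add: algebra_simps)
    qed simp
    then show "A (\<lambda>t. c * u t) = (\<lambda>t. c * A u t)" by (metis (no_types) eq_iff_diff_eq_0 ext)
  qed
  have "bl A (C + 1)"
    unfolding bl_def bnd_def using lin Al2 blD(3)[OF C] by auto
  then show ?thesis by blast
qed


lemma lim0_ev:
  fixes f :: "nat \<Rightarrow> real"
  assumes "f \<longlonglongrightarrow> 0" "0 < e"
  shows "\<exists>N. \<forall>n\<ge>N. f n < e"
  using order_tendstoD(2)[OF assms] unfolding eventually_sequentially by auto

definition scauchy :: "(nat \<Rightarrow> 'a lop) \<Rightarrow> bool" where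
  "scauchy T \<longleftrightarrow> (\<forall>u\<in>l2. \<forall>e>0. \<exists>N. \<forall>m\<ge>N. \<forall>n\<ge>N. l2norm (\<lambda>t. T m u t - T n u t) < e)"

lemma scauchyD:
  assumes "scauchy T" "u \<in> l2" "0 < e"
  shows "\<exists>N. \<forall>m\<ge>N. \<forall>n\<ge>N. l2norm (\<lambda>t. T m u t - T n u t) < e"
  using assms unfolding scauchy_def by blast

lemma scauchy_subseq:
  assumes "scauchy T" "strict_mono r"
  shows "scauchy (\<lambda>n. T (r n))"
  unfolding scauchy_def
proof (intro ballI allI impI)
  fix u :: "'a \<Rightarrow> complex" and e :: real assume "u \<in> l2" "0 < e"
  then obtain N where N: "\<And>m n. N \<le> m \<Longrightarrow> N \<le> n \<Longrightarrow> l2norm (\<lambda>t. T m u t - T n u t) < e"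
    using scauchyD[OF assms(1)] by blast
  show "\<exists>N. \<forall>m\<ge>N. \<forall>n\<ge>N. l2norm (\<lambda>t. T (r m) u t - T (r n) u t) < e"
    using N seq_suble[OF assms(2)] order_trans by blast
qed

lemma scauchy_shift:
  assumes "scauchy (\<lambda>n. T (k + n))"
  shows "scauchy T"
  unfolding scauchy_def
proof (intro ballI allI impI)
  fix u :: "'a \<Rightarrow> complex" and e :: real assume "u \<in> l2" "0 < e"
  then obtain N where N: "\<And>m n. N \<le> m \<Longrightarrow> N \<le> n \<Longrightarrow> l2norm (\<lambda>t. T (k + m) u t - T (k + n) u t) < e"
    using scauchyD[OF assms(1)] by blast
  show "\<exists>N. \<forall>m\<ge>N. \<forall>n\<ge>N. l2norm (\<lambda>t. T m u t - T n u t) < e"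
  proof (intro exI[of _ "k + N"] allI impI)
    fix m n assume "k + N \<le> m" "k + N \<le> n"
    then show "l2norm (\<lambda>t. T m u t - T n u t) < e" using N[of "m - k" "n - k"] by simp
  qed
qed

lemma strong_conv_scauchy:
  assumes "strong_conv T S"
  shows "scauchy T"
  unfolding scauchy_def
proof (intro ballI allI impI)
  fix u :: "'a \<Rightarrow> complex" and e :: real assume u: "u \<in> l2" and e: "0 < e"
  note d = strong_convD[OF assms u]
  obtain N where N: "\<And>n. N \<le> n \<Longrightarrow> l2norm (\<lambda>t. T n u t - S u t) < e / 2"
    using lim0_ev[OF d(3), of "e / 2"] e by auto
  show "\<exists>N. \<forall>m\<ge>N. \<forall>n\<ge>N. l2norm (\<lambda>t. T m u t - T n u t) < e"
  proof (intro exI[of _ N] allI impI)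
    fix m n assume m: "N \<le> m" and n: "N \<le> n"
    have "l2norm (\<lambda>t. (T m u t - S u t) - (T n u t - S u t)) \<le> l2norm (\<lambda>t. T m u t - S u t) + l2norm (\<lambda>t. T n u t - S u t)"
      using l2_diff[OF l2_diff[OF d(2) d(1), THEN conjunct1] l2_diff[OF d(2) d(1), THEN conjunct1]] by blast
    then show "l2norm (\<lambda>t. T m u t - T n u t) < e" using N[OF m] N[OF n] by simp
  qed
qed

lemma scauchy_lim:
  assumes T: "\<And>n u. u \<in> l2 \<Longrightarrow> T n u \<in> l2" and sc: "scauchy T"
  shows "strong_conv T (\<lambda>u t. lim (\<lambda>n. T n u t))"
  unfolding strong_conv_def
proof (intro ballI conjI allI)
  fix u :: "'a \<Rightarrow> complex" assume u: "u \<in> l2"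
  define L where "L = (\<lambda>t. lim (\<lambda>n. T n u t))"
  have conv: "(\<lambda>n. T n u t) \<longlonglongrightarrow> L t" for t
  proof -
    have "Cauchy (\<lambda>n. T n u t)"
    proof (rule metric_CauchyI)
      fix e :: real assume "0 < e"
      then obtain N where N: "\<And>m n. N \<le> m \<Longrightarrow> N \<le> n \<Longrightarrow> l2norm (\<lambda>t. T m u t - T n u t) < e"
        using scauchyD[OF sc u] by blast
      show "\<exists>M. \<forall>m\<ge>M. \<forall>n\<ge>M. dist (T m u t) (T n u t) < e"
      proof (intro exI[of _ N] allI impI)
        fix m n assume "N \<le> m" "N \<le> n"
        then show "dist (T m u t) (T n u t) < e"
          using l2_point[OF l2_diff[OF T[of u m, OF u] T[of u n, OF u], THEN conjunct1], of t] N[of m n] by (simp add: dist_norm)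
      qed
    qed
    then show ?thesis unfolding L_def by (simp add: Cauchy_convergent_iff convergent_LIMSEQ_iff)
  qed
  have main: "\<exists>N. \<forall>n\<ge>N. (\<lambda>t. T n u t - L t) \<in> l2 \<and> l2norm (\<lambda>t. T n u t - L t) \<le> e" if e: "0 < e" for e
  proof -
    obtain N where N: "\<And>m n. N \<le> m \<Longrightarrow> N \<le> n \<Longrightarrow> l2norm (\<lambda>t. T m u t - T n u t) < e"
      using scauchyD[OF sc u e] by blast
    have "\<forall>n\<ge>N. (\<lambda>t. T n u t - L t) \<in> l2 \<and> l2norm (\<lambda>t. T n u t - L t) \<le> e"
    proof (intro allI impI)
      fix n assume n: "N \<le> n"
      show "(\<lambda>t. T n u t - L t) \<in> l2 \<and> l2norm (\<lambda>t. T n u t - L t) \<le> e"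
      proof (rule l2I)
        show "0 \<le> e" using e by simp
        fix G :: "'a set" assume G: "finite G"
        have lim: "(\<lambda>k. \<Sum>t\<in>G. (cmod (T n u t - T k u t))\<^sup>2) \<longlonglongrightarrow> (\<Sum>t\<in>G. (cmod (T n u t - L t))\<^sup>2)"
          by (intro tendsto_sum tendsto_intros conv)
        show "(\<Sum>t\<in>G. (cmod (T n u t - L t))\<^sup>2) \<le> e\<^sup>2"
        proof (rule LIMSEQ_le_const2[OF lim], intro exI[of _ N] allI impI)
          fix k assume k: "N \<le> k"
          have "(\<Sum>t\<in>G. (cmod (T n u t - T k u t))\<^sup>2) \<le> (l2norm (\<lambda>t. T n u t - T k u t))\<^sup>2"
            by (rule l2_finsum_le[OF l2_diff[OF T[OF u] T[OF u], THEN conjunct1] G])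
          also have "\<dots> \<le> e\<^sup>2" using N[OF n k] by (intro power_mono) auto
          finally show "(\<Sum>t\<in>G. (cmod (T n u t - T k u t))\<^sup>2) \<le> e\<^sup>2" .
        qed
      qed
    qed
    then show ?thesis by blast
  qed
  obtain N where N: "\<forall>n\<ge>N. (\<lambda>t. T n u t - L t) \<in> l2 \<and> l2norm (\<lambda>t. T n u t - L t) \<le> 1"
    using main[of 1] by auto
  have "(\<lambda>t. T N u t - (T N u t - L t)) \<in> l2" using l2_diff[OF T[OF u]] N by blast
  then show "(\<lambda>t. lim (\<lambda>n. T n u t)) \<in> l2" unfolding L_def by simp
  show "(\<lambda>n. l2norm (\<lambda>t. T n u t - lim (\<lambda>n. T n u t))) \<longlonglongrightarrow> 0"
  proof (rule LIMSEQ_I)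
    fix e :: real assume e: "0 < e"
    obtain N where N: "\<forall>n\<ge>N. (\<lambda>t. T n u t - L t) \<in> l2 \<and> l2norm (\<lambda>t. T n u t - L t) \<le> e / 2"
      using main[of "e / 2"] e by auto
    show "\<exists>no. \<forall>n\<ge>no. norm (l2norm (\<lambda>t. T n u t - lim (\<lambda>n. T n u t)) - 0) < e"
    proof (intro exI[of _ N] allI impI)
      fix n assume "N \<le> n"
      then have "l2norm (\<lambda>t. T n u t - L t) \<le> e / 2" using N by blast
      then show "norm (l2norm (\<lambda>t. T n u t - lim (\<lambda>n. T n u t)) - 0) < e" using e unfolding L_def by simp
    qed
  qed
next
  fix u :: "'a \<Rightarrow> complex" and n assume "u \<in> l2"
  then show "T n u \<in> l2" using T by simp
qed

lemma mult_conv: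
  assumes M: "\<And>j t. cmod (a j t) \<le> M" and conv: "\<And>t. (\<lambda>j. a j t) \<longlonglongrightarrow> b t" and u: "u \<in> l2"
  shows "(\<lambda>j. l2norm (\<lambda>t. a j t * u t - b t * u t)) \<longlonglongrightarrow> 0"
proof (rule LIMSEQ_I)
  fix e :: real assume e: "0 < e"
  have M0: "0 \<le> M" using M[of 0 undefined] norm_ge_zero order_trans by blast
  have bM: "cmod (b t) \<le> M" for t
    by (rule LIMSEQ_le_const2[OF tendsto_norm[OF conv]]) (use M in auto)
  define \<delta> where "\<delta> = e / (4 * (M + 1))"
  have d: "0 < \<delta>" unfolding \<delta>_def using e M0 by simp
  obtain F where F: "finite F" and rl: "(\<lambda>t. if t \<in> F then 0 else u t) \<in> l2"
    and rn: "l2norm (\<lambda>t. if t \<in> F then 0 else u t) \<le> \<delta>" using l2_tail[OF u d] by blast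
  define uF where "uF = (\<lambda>t. if t \<in> F then u t else 0)"
  define r where "r = (\<lambda>t. if t \<in> F then 0 else u t)"
  have ufs: "\<And>t. t \<notin> F \<Longrightarrow> uF t = 0" unfolding uF_def by simp
  have lim: "(\<lambda>j. \<Sum>t\<in>F. (cmod (a j t * uF t - b t * uF t))\<^sup>2) \<longlonglongrightarrow> (\<Sum>t\<in>F. (cmod (b t * uF t - b t * uF t))\<^sup>2)"
    by (intro tendsto_sum tendsto_intros conv)
  then have "(\<lambda>j. \<Sum>t\<in>F. (cmod (a j t * uF t - b t * uF t))\<^sup>2) \<longlonglongrightarrow> 0" by simp
  moreover have "0 < (e / 2)\<^sup>2" using e by simp
  ultimately obtain N where N: "\<And>j. N \<le> j \<Longrightarrow> (\<Sum>t\<in>F. (cmod (a j t * uF t - b t * uF t))\<^sup>2) < (e / 2)\<^sup>2"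
    using lim0_ev by blast
  show "\<exists>no. \<forall>j\<ge>no. norm (l2norm (\<lambda>t. a j t * u t - b t * u t) - 0) < e"
  proof (intro exI[of _ N] allI impI)
    fix j assume j: "N \<le> j"
    have s1: "(\<lambda>t. a j t * uF t - b t * uF t) \<in> l2" "l2norm (\<lambda>t. a j t * uF t - b t * uF t) < e / 2"
    proof -
      have z: "\<And>t. t \<notin> F \<Longrightarrow> a j t * uF t - b t * uF t = 0" using ufs by simp
      show "(\<lambda>t. a j t * uF t - b t * uF t) \<in> l2" by (rule l2_finsupp(1)[OF F z])
      have "(l2norm (\<lambda>t. a j t * uF t - b t * uF t))\<^sup>2 < (e / 2)\<^sup>2" using l2_finsupp(2)[OF F z] N[OF j] by simp
      then show "l2norm (\<lambda>t. a j t * uF t - b t * uF t) < e / 2"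
        by (rule power_less_imp_less_base) (use e in simp)
    qed
    have rr: "r \<in> l2" "l2norm r \<le> \<delta>" using rl rn unfolding r_def by auto
    have s2: "(\<lambda>t. a j t * r t - b t * r t) \<in> l2" "l2norm (\<lambda>t. a j t * r t - b t * r t) \<le> (2 * M) * \<delta>"
    proof -
      have "(\<lambda>t. a j t * r t - b t * r t) \<in> l2 \<and> l2norm (\<lambda>t. a j t * r t - b t * r t) \<le> (2 * M) * l2norm r"
      proof (rule l2_dom[OF rr(1)])
        show "0 \<le> 2 * M" using M0 by simp
        fix t
        have "cmod (a j t * r t - b t * r t) = cmod (a j t - b t) * cmod (r t)" by (simp add: left_diff_distrib[symmetric] norm_mult)
        also have "\<dots> \<le> (2 * M) * cmod (r t)"
        proof (rule mult_right_mono)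
          show "cmod (a j t - b t) \<le> 2 * M" using norm_triangle_ineq4[of "a j t" "b t"] M[of j t] bM[of t] by simp
        qed simp
        finally show "cmod (a j t * r t - b t * r t) \<le> 2 * M * cmod (r t)" .
      qed
      then show "(\<lambda>t. a j t * r t - b t * r t) \<in> l2" "l2norm (\<lambda>t. a j t * r t - b t * r t) \<le> (2 * M) * \<delta>"
        using rr(2) M0 by (auto intro: order_trans[OF _ mult_left_mono[OF rr(2)]])
    qed
    have eq: "(\<lambda>t. a j t * u t - b t * u t) = (\<lambda>t. (a j t * uF t - b t * uF t) + (a j t * r t - b t * r t))"
      unfolding uF_def r_def by (auto simp: algebra_simps)
    have "l2norm (\<lambda>t. a j t * u t - b t * u t) \<le> l2norm (\<lambda>t. a j t * uF t - b t * uF t) + l2norm (\<lambda>t. a j t * r t - b t * r t)"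
      unfolding eq by (rule l2_add[OF s1(1) s2(1), THEN conjunct2])
    also have "\<dots> < e / 2 + (2 * M) * \<delta>" using s1(2) s2(2) by linarith
    also have "(2 * M) * \<delta> \<le> e / 2"
    proof -
      have "(2 * M) * \<delta> = e * (M / (2 * (M + 1)))" unfolding \<delta>_def using M0 by (simp add: field_simps)
      also have "\<dots> \<le> e * (1 / 2)" using e M0 by (intro mult_left_mono) (auto simp: field_simps)
      finally show ?thesis by simp
    qed
    then have "e / 2 + (2 * M) * \<delta> \<le> e" by simp
    finally show "norm (l2norm (\<lambda>t. a j t * u t - b t * u t) - 0) < e" by simp
  qed
qed

lemma diag_pw:
  fixes f :: "nat \<Rightarrow> 'a::countable \<Rightarrow> complex"
  assumes M: "\<And>j t. cmod (f j t) \<le> M"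
  shows "\<exists>\<phi>. strict_mono \<phi> \<and> (\<forall>t. convergent (\<lambda>j. f (\<phi> j) t))"
proof -
  define P where "P n s \<longleftrightarrow> convergent (\<lambda>j. f (s j) (from_nat n :: 'a))" for n s
  interpret subseqs P
  proof
    fix n and s :: "nat \<Rightarrow> nat" assume "strict_mono s"
    have "\<forall>j. f (s j) (from_nat n) \<in> cball 0 M" using M by (simp add: dist_norm)
    then have "\<exists>l\<in>cball 0 M. \<exists>r. strict_mono r \<and> ((\<lambda>j. f (s j) (from_nat n)) \<circ> r) \<longlonglongrightarrow> l"
      by (rule compact_cball[of "0::complex" M, unfolded compact_def, THEN spec[of _ "\<lambda>j. f (s j) (from_nat n)"], THEN mp])
    then obtain l r where "strict_mono r" "((\<lambda>j. f (s j) (from_nat n)) \<circ> r) \<longlonglongrightarrow> l"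
      by blast
    then show "\<exists>r'. strict_mono r' \<and> P n (s \<circ> r')"
      unfolding P_def convergent_def by (auto simp: o_def)
  qed
  have "convergent (\<lambda>j. f (diagseq j) t)" for t
  proof -
    let ?n = "to_nat t"
    have "P ?n (diagseq \<circ> (+) (Suc ?n))"
      by (rule diagseq_holds) (auto simp: P_def o_def dest: convergent_subseq_convergent)
    then have "convergent (\<lambda>j. f (diagseq (j + Suc ?n)) t)" unfolding P_def by (simp add: o_def add.commute)
    then obtain L where "(\<lambda>j. f (diagseq (j + Suc ?n)) t) \<longlonglongrightarrow> L" unfolding convergent_def by blast
    then have "(\<lambda>j. f (diagseq j) t) \<longlonglongrightarrow> L" by (rule LIMSEQ_offset)
    then show ?thesis unfolding convergent_def by blast
  qed
  then show ?thesis using subseq_diagseq by blast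
qed


definition rich :: "('g::group_add) lop \<Rightarrow> bool" where
  "rich T \<longleftrightarrow> (\<forall>g::nat \<Rightarrow> 'g. \<exists>\<phi>. strict_mono \<phi> \<and> scauchy (\<lambda>j. Rsh (- g (\<phi> j)) \<circ> T \<circ> Rsh (g (\<phi> j))))"

lemma scauchy_add:
  assumes "scauchy S" "scauchy T" "\<And>n u. u \<in> l2 \<Longrightarrow> S n u \<in> l2" "\<And>n u. u \<in> l2 \<Longrightarrow> T n u \<in> l2"
  shows "scauchy (\<lambda>n u t. S n u t + T n u t)"
  unfolding scauchy_def
proof (intro ballI allI impI)
  fix u :: "'a \<Rightarrow> complex" and e :: real assume u: "u \<in> l2" and e: "0 < e"
  obtain N1 where N1: "\<And>m n. N1 \<le> m \<Longrightarrow> N1 \<le> n \<Longrightarrow> l2norm (\<lambda>t. S m u t - S n u t) < e / 2"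
    using scauchyD[OF assms(1) u, of "e / 2"] e by auto
  obtain N2 where N2: "\<And>m n. N2 \<le> m \<Longrightarrow> N2 \<le> n \<Longrightarrow> l2norm (\<lambda>t. T m u t - T n u t) < e / 2"
    using scauchyD[OF assms(2) u, of "e / 2"] e by auto
  show "\<exists>N. \<forall>m\<ge>N. \<forall>n\<ge>N. l2norm (\<lambda>t. (S m u t + T m u t) - (S n u t + T n u t)) < e"
  proof (intro exI[of _ "max N1 N2"] allI impI)
    fix m n assume m: "max N1 N2 \<le> m" and n: "max N1 N2 \<le> n"
    have a: "(\<lambda>t. S m u t - S n u t) \<in> l2" "(\<lambda>t. T m u t - T n u t) \<in> l2"
      using l2_diff assms(3,4) u by blast+
    have "(\<lambda>t. (S m u t + T m u t) - (S n u t + T n u t)) = (\<lambda>t. (S m u t - S n u t) + (T m u t - T n u t))"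
      by (simp add: algebra_simps)
    then have "l2norm (\<lambda>t. (S m u t + T m u t) - (S n u t + T n u t)) \<le> l2norm (\<lambda>t. S m u t - S n u t) + l2norm (\<lambda>t. T m u t - T n u t)"
      using l2_add[OF a] by simp
    then show "l2norm (\<lambda>t. (S m u t + T m u t) - (S n u t + T n u t)) < e" using N1[of m n] N2[of m n] m n by simp
  qed
qed

lemma scauchy_scale:
  assumes "scauchy S" "\<And>n u. u \<in> l2 \<Longrightarrow> S n u \<in> l2"
  shows "scauchy (\<lambda>n u t. c * S n u t)"
  unfolding scauchy_def
proof (intro ballI allI impI)
  fix u :: "'a \<Rightarrow> complex" and e :: real assume u: "u \<in> l2" and e: "0 < e"
  obtain N where N: "\<And>m n. N \<le> m \<Longrightarrow> N \<le> n \<Longrightarrow> l2norm (\<lambda>t. S m u t - S n u t) < e / (cmod c + 1)"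
  proof -
    have "0 < cmod c + 1" by (simp add: add_nonneg_pos)
    then have "0 < e / (cmod c + 1)" using e by simp
    then show ?thesis using that scauchyD[OF assms(1) u] by blast
  qed
  show "\<exists>N. \<forall>m\<ge>N. \<forall>n\<ge>N. l2norm (\<lambda>t. c * S m u t - c * S n u t) < e"
  proof (intro exI[of _ N] allI impI)
    fix m n assume m: "N \<le> m" and n: "N \<le> n"
    have a: "(\<lambda>t. S m u t - S n u t) \<in> l2" using l2_diff assms(2) u by blast
    have "l2norm (\<lambda>t. c * S m u t - c * S n u t) = l2norm (\<lambda>t. c * (S m u t - S n u t))"
      by (simp add: algebra_simps)
    also have "\<dots> \<le> cmod c * l2norm (\<lambda>t. S m u t - S n u t)" using l2_scale[OF a] by simp
    also have "\<dots> \<le> cmod c * (e / (cmod c + 1))" using N[OF m n] by (intro mult_left_mono) auto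
    also have "\<dots> < e"
    proof -
      have p: "0 < cmod c + 1" by (simp add: add_nonneg_pos)
      have "cmod c * (e / (cmod c + 1)) = e * (cmod c / (cmod c + 1))" by simp
      also have "\<dots> < e * 1" using e p by (intro mult_strict_left_mono) (auto simp: field_simps)
      finally show ?thesis by simp
    qed
    finally show "l2norm (\<lambda>t. c * S m u t - c * S n u t) < e" .
  qed
qed

lemma scauchy_comp:
  assumes "scauchy S" "scauchy T" "\<And>n. bl (S n) C" "\<And>n. bl (T n) D"
  shows "scauchy (\<lambda>n. S n \<circ> T n)"
  unfolding scauchy_def
proof (intro ballI allI impI)
  fix u :: "'a \<Rightarrow> complex" and e :: real assume u: "u \<in> l2" and e: "0 < e"
  have C0: "0 \<le> C" using blD(3)[OF assms(3)] .
  define \<delta> where "\<delta> = e / (3 * (C + 1))"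
  have d: "0 < \<delta>" unfolding \<delta>_def using e C0 by simp
  have Tl: "\<And>n. T n u \<in> l2" using bndD(1)[OF blD(2)[OF assms(4)] u] .
  obtain N1 where N1: "\<And>m n. N1 \<le> m \<Longrightarrow> N1 \<le> n \<Longrightarrow> l2norm (\<lambda>t. T m u t - T n u t) < \<delta>"
    using scauchyD[OF assms(2) u d] by auto
  define x where "x = T N1 u"
  have xl: "x \<in> l2" unfolding x_def using Tl .
  obtain N2 where N2: "\<And>m n. N2 \<le> m \<Longrightarrow> N2 \<le> n \<Longrightarrow> l2norm (\<lambda>t. S m x t - S n x t) < e / 3"
    using scauchyD[OF assms(1) xl, of "e / 3"] e by auto
  show "\<exists>N. \<forall>m\<ge>N. \<forall>n\<ge>N. l2norm (\<lambda>t. (S m \<circ> T m) u t - (S n \<circ> T n) u t) < e"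
  proof (intro exI[of _ "max N1 N2"] allI impI)
    fix m n assume m: "max N1 N2 \<le> m" and n: "max N1 N2 \<le> n"
    have b1: "(\<lambda>t. S m (T m u) t - S m x t) \<in> l2" "l2norm (\<lambda>t. S m (T m u) t - S m x t) \<le> C * \<delta>"
    proof -
      show "(\<lambda>t. S m (T m u) t - S m x t) \<in> l2" using bl_diff_norm(1)[OF assms(3) Tl xl] .
      have "l2norm (\<lambda>t. S m (T m u) t - S m x t) \<le> C * l2norm (\<lambda>t. T m u t - x t)"
        using bl_diff_norm(2)[OF assms(3) Tl xl] .
      also have "\<dots> \<le> C * \<delta>" using N1[of m N1] m C0 unfolding x_def by (intro mult_left_mono) auto
      finally show "l2norm (\<lambda>t. S m (T m u) t - S m x t) \<le> C * \<delta>" .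
    qed
    have b2: "(\<lambda>t. S m x t - S n x t) \<in> l2" "l2norm (\<lambda>t. S m x t - S n x t) < e / 3"
      using l2_diff[OF bndD(1)[OF blD(2)[OF assms(3)] xl] bndD(1)[OF blD(2)[OF assms(3)] xl]] N2[of m n] m n by auto
    have b3: "(\<lambda>t. S n x t - S n (T n u) t) \<in> l2" "l2norm (\<lambda>t. S n x t - S n (T n u) t) \<le> C * \<delta>"
    proof -
      show "(\<lambda>t. S n x t - S n (T n u) t) \<in> l2" using bl_diff_norm(1)[OF assms(3) xl Tl] .
      have "l2norm (\<lambda>t. S n x t - S n (T n u) t) \<le> C * l2norm (\<lambda>t. x t - T n u t)"
        using bl_diff_norm(2)[OF assms(3) xl Tl] .
      also have "\<dots> \<le> C * \<delta>" using N1[of N1 n] n C0 unfolding x_def by (intro mult_left_mono) auto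
      finally show "l2norm (\<lambda>t. S n x t - S n (T n u) t) \<le> C * \<delta>" .
    qed
    have eq: "(\<lambda>t. (S m \<circ> T m) u t - (S n \<circ> T n) u t) =
      (\<lambda>t. (S m (T m u) t - S m x t) + (S m x t - S n x t) + (S n x t - S n (T n u) t))" by auto
    have "l2norm (\<lambda>t. (S m \<circ> T m) u t - (S n \<circ> T n) u t) \<le>
      l2norm (\<lambda>t. S m (T m u) t - S m x t) + l2norm (\<lambda>t. S m x t - S n x t) + l2norm (\<lambda>t. S n x t - S n (T n u) t)"
      unfolding eq using l2_add[OF b1(1) b2(1)] l2_add[OF l2_add[OF b1(1) b2(1), THEN conjunct1] b3(1)] by linarith
    also have "\<dots> < C * \<delta> + e / 3 + C * \<delta>" using b1(2) b2(2) b3(2) by linarith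
    also have "\<dots> \<le> e"
    proof -
      have "C * \<delta> = e / 3 * (C / (C + 1))" unfolding \<delta>_def using C0 by (simp add: field_simps)
      also have "\<dots> \<le> e / 3 * 1" using e C0 by (intro mult_left_mono) auto
      finally show ?thesis by simp
    qed
    finally show "l2norm (\<lambda>t. (S m \<circ> T m) u t - (S n \<circ> T n) u t) < e" .
  qed
qed

lemma conj_add: "Rsh (- s) \<circ> (\<lambda>u t. S u t + T u t) \<circ> Rsh s =
  (\<lambda>u t. (Rsh (- s) \<circ> S \<circ> Rsh s) u t + (Rsh (- s) \<circ> T \<circ> Rsh s) u t)"
  by (rule ext)+ (simp add: Rsh_def)

lemma conj_scale: "Rsh (- s) \<circ> (\<lambda>u t. c * S u t) \<circ> Rsh s = (\<lambda>u t. c * (Rsh (- s) \<circ> S \<circ> Rsh s) u t)"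
  by (rule ext)+ (simp add: Rsh_def)

lemma conj_comp: "Rsh (- s) \<circ> (S \<circ> T) \<circ> Rsh s = (Rsh (- s) \<circ> S \<circ> Rsh s) \<circ> (Rsh (- s) \<circ> T \<circ> Rsh (s::'g::group_add))"
  by (rule ext) simp

lemma conj_Lsh: "Rsh (- s) \<circ> Lsh r \<circ> Rsh s = Lsh (r::'g::group_add)"
  by (rule ext)+ (simp add: Rsh_def Lsh_def add.assoc)

lemma conj_mult: "Rsh (- s) \<circ> mult_op a \<circ> Rsh s = mult_op (\<lambda>t. a (t + - (s::'g::group_add)))"
  by (rule ext)+ (simp add: Rsh_def mult_op_def add.assoc)

lemma scauchy_const: "scauchy (\<lambda>n. T)"
  unfolding scauchy_def by simp

lemma rich_gen: "B \<in> BDO_gen \<Longrightarrow> rich (B :: ('g::{group_add,countable}) lop)"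
proof (induction rule: BDO_gen.induct)
  case (shift r)
  show ?case unfolding rich_def conj_Lsh using scauchy_const strict_mono_id by blast
next
  case (mult a)
  obtain M where M: "\<And>t. cmod (a t) \<le> M" using mult unfolding bounded_iff by auto
  show ?case unfolding rich_def
  proof
    fix g :: "nat \<Rightarrow> 'g"
    obtain \<phi> where \<phi>: "strict_mono \<phi>" "\<And>t. convergent (\<lambda>j. a (t + - g (\<phi> j)))"
      using diag_pw[of "\<lambda>j t. a (t + - g j)" M] M by blast
    define b where "b t = lim (\<lambda>j. a (t + - g (\<phi> j)))" for t
    have cv: "\<And>t. (\<lambda>j. a (t + - g (\<phi> j))) \<longlonglongrightarrow> b t" using \<phi>(2) unfolding b_def convergent_LIMSEQ_iff .
    have bM: "cmod (b t) \<le> M" for t by (rule LIMSEQ_le_const2[OF tendsto_norm[OF cv]]) (use M in auto)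
    have M0: "0 \<le> M" using M[of undefined] norm_ge_zero order_trans by blast
    have "strong_conv (\<lambda>j. mult_op (\<lambda>t. a (t + - g (\<phi> j)))) (mult_op b)"
      unfolding strong_conv_def
    proof (intro ballI conjI allI)
      fix u :: "'g \<Rightarrow> complex" assume u: "u \<in> l2"
      show "mult_op b u \<in> l2" using l2_dom[OF u M0, of "mult_op b u"] bM
        by (simp add: mult_op_def norm_mult mult_right_mono)
      fix j show "mult_op (\<lambda>t. a (t + - g (\<phi> j))) u \<in> l2"
        using l2_dom[OF u M0, of "mult_op (\<lambda>t. a (t + - g (\<phi> j))) u"] M
        by (simp add: mult_op_def norm_mult mult_right_mono)
    next
      fix u :: "'g \<Rightarrow> complex" assume u: "u \<in> l2"
      show "(\<lambda>j. l2norm (\<lambda>t. mult_op (\<lambda>t. a (t + - g (\<phi> j))) u t - mult_op b u t)) \<longlonglongrightarrow> 0"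
        unfolding mult_op_def by (rule mult_conv[where M=M, OF _ cv u]) (use M in auto)
    qed
    then have "scauchy (\<lambda>j. mult_op (\<lambda>t. a (t + - g (\<phi> j))))" by (rule strong_conv_scauchy)
    then show "\<exists>\<phi>. strict_mono \<phi> \<and> scauchy (\<lambda>j. Rsh (- g (\<phi> j)) \<circ> mult_op a \<circ> Rsh (g (\<phi> j)))"
      unfolding conj_mult using \<phi>(1) by blast
  qed
next
  case (add S T)
  obtain C1 where C1: "bl S C1" using BDO_gen_bl[OF add(1)] by blast
  obtain C2 where C2: "bl T C2" using BDO_gen_bl[OF add(2)] by blast
  show ?case unfolding rich_def
  proof
    fix g :: "nat \<Rightarrow> 'g"
    obtain \<phi>1 where p1: "strict_mono \<phi>1" "scauchy (\<lambda>j. Rsh (- g (\<phi>1 j)) \<circ> S \<circ> Rsh (g (\<phi>1 j)))"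
      using add(3) unfolding rich_def by blast
    obtain \<phi>2 where p2: "strict_mono \<phi>2" "scauchy (\<lambda>j. Rsh (- g (\<phi>1 (\<phi>2 j))) \<circ> T \<circ> Rsh (g (\<phi>1 (\<phi>2 j))))"
      using add(4)[unfolded rich_def, rule_format, of "\<lambda>j. g (\<phi>1 j)"] by blast
    have s1: "scauchy (\<lambda>j. Rsh (- g (\<phi>1 (\<phi>2 j))) \<circ> S \<circ> Rsh (g (\<phi>1 (\<phi>2 j))))"
      using scauchy_subseq[OF p1(2) p2(1)] .
    have "scauchy (\<lambda>j u t. (Rsh (- g (\<phi>1 (\<phi>2 j))) \<circ> S \<circ> Rsh (g (\<phi>1 (\<phi>2 j)))) u t + (Rsh (- g (\<phi>1 (\<phi>2 j))) \<circ> T \<circ> Rsh (g (\<phi>1 (\<phi>2 j)))) u t)"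
      by (rule scauchy_add[OF s1 p2(2)]) (use bndD(1)[OF blD(2)[OF conj_bl[OF C1]]] bndD(1)[OF blD(2)[OF conj_bl[OF C2]]] in auto)
    then show "\<exists>\<phi>. strict_mono \<phi> \<and> scauchy (\<lambda>j. Rsh (- g (\<phi> j)) \<circ> (\<lambda>u t. S u t + T u t) \<circ> Rsh (g (\<phi> j)))"
      unfolding conj_add using strict_mono_o[OF p1(1) p2(1)] by (intro exI[of _ "\<phi>1 \<circ> \<phi>2"]) (simp add: o_def)
  qed
next
  case (scale S c)
  obtain C1 where C1: "bl S C1" using BDO_gen_bl[OF scale(1)] by blast
  show ?case unfolding rich_def
  proof
    fix g :: "nat \<Rightarrow> 'g"
    obtain \<phi>1 where p1: "strict_mono \<phi>1" "scauchy (\<lambda>j. Rsh (- g (\<phi>1 j)) \<circ> S \<circ> Rsh (g (\<phi>1 j)))"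
      using scale(2) unfolding rich_def by blast
    have "scauchy (\<lambda>j u t. c * (Rsh (- g (\<phi>1 j)) \<circ> S \<circ> Rsh (g (\<phi>1 j))) u t)"
      by (rule scauchy_scale[OF p1(2)]) (use bndD(1)[OF blD(2)[OF conj_bl[OF C1]]] in auto)
    then show "\<exists>\<phi>. strict_mono \<phi> \<and> scauchy (\<lambda>j. Rsh (- g (\<phi> j)) \<circ> (\<lambda>u t. c * S u t) \<circ> Rsh (g (\<phi> j)))"
      unfolding conj_scale using p1(1) by blast
  qed
next
  case (comp S T)
  obtain C1 where C1: "bl S C1" using BDO_gen_bl[OF comp(1)] by blast
  obtain C2 where C2: "bl T C2" using BDO_gen_bl[OF comp(2)] by blast
  show ?case unfolding rich_def
  proof
    fix g :: "nat \<Rightarrow> 'g"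
    obtain \<phi>1 where p1: "strict_mono \<phi>1" "scauchy (\<lambda>j. Rsh (- g (\<phi>1 j)) \<circ> S \<circ> Rsh (g (\<phi>1 j)))"
      using comp(3) unfolding rich_def by blast
    obtain \<phi>2 where p2: "strict_mono \<phi>2" "scauchy (\<lambda>j. Rsh (- g (\<phi>1 (\<phi>2 j))) \<circ> T \<circ> Rsh (g (\<phi>1 (\<phi>2 j))))"
      using comp(4)[unfolded rich_def, rule_format, of "\<lambda>j. g (\<phi>1 j)"] by blast
    have s1: "scauchy (\<lambda>j. Rsh (- g (\<phi>1 (\<phi>2 j))) \<circ> S \<circ> Rsh (g (\<phi>1 (\<phi>2 j))))"
      using scauchy_subseq[OF p1(2) p2(1)] .
    have "scauchy (\<lambda>j. (Rsh (- g (\<phi>1 (\<phi>2 j))) \<circ> S \<circ> Rsh (g (\<phi>1 (\<phi>2 j)))) \<circ> (Rsh (- g (\<phi>1 (\<phi>2 j))) \<circ> T \<circ> Rsh (g (\<phi>1 (\<phi>2 j)))))"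
      by (rule scauchy_comp[OF s1 p2(2) conj_bl[OF C1] conj_bl[OF C2]])
    then show "\<exists>\<phi>. strict_mono \<phi> \<and> scauchy (\<lambda>j. Rsh (- g (\<phi> j)) \<circ> (S \<circ> T) \<circ> Rsh (g (\<phi> j)))"
      unfolding conj_comp using strict_mono_o[OF p1(1) p2(1)] by (intro exI[of _ "\<phi>1 \<circ> \<phi>2"]) (simp add: o_def)
  qed
qed


lemma approx_scauchy:
  assumes S: "\<And>i. scauchy (S i)" and Tl: "\<And>n u. u \<in> l2 \<Longrightarrow> T n u \<in> l2"
    and Sl: "\<And>i n u. u \<in> l2 \<Longrightarrow> S i n u \<in> l2"
    and appr: "\<And>i n u. u \<in> l2 \<Longrightarrow> l2norm (\<lambda>t. T n u t - S i n u t) \<le> l2norm u / (Suc i)"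
  shows "scauchy T"
  unfolding scauchy_def
proof (intro ballI allI impI)
  fix u :: "'a \<Rightarrow> complex" and e :: real assume u: "u \<in> l2" and e: "0 < e"
  obtain i :: nat where i: "3 * (l2norm u + 1) / e < real i" using reals_Archimedean2 by blast
  have ip: "0 < real (Suc i)" by simp
  have small: "l2norm u / Suc i < e / 3"
  proof -
    have "3 * (l2norm u + 1) < e * real i" using i e by (simp add: field_simps)
    then have "3 * l2norm u < e * real (Suc i)" using e by (simp add: algebra_simps)
    then show ?thesis using ip by (simp add: field_simps)
  qed
  have e3: "0 < e / 3" using e by simp
  obtain N where N: "\<And>m n. N \<le> m \<Longrightarrow> N \<le> n \<Longrightarrow> l2norm (\<lambda>t. S i m u t - S i n u t) < e / 3"
    using scauchyD[OF S[of i] u e3] by blast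
  show "\<exists>N. \<forall>m\<ge>N. \<forall>n\<ge>N. l2norm (\<lambda>t. T m u t - T n u t) < e"
  proof (intro exI[of _ N] allI impI)
    fix m n assume m: "N \<le> m" and n: "N \<le> n"
    have a1: "(\<lambda>t. T m u t - S i m u t) \<in> l2" using l2_diff[OF Tl[OF u] Sl[OF u]] by blast
    have a2: "(\<lambda>t. S i m u t - S i n u t) \<in> l2" using l2_diff[OF Sl[OF u] Sl[OF u]] by blast
    have a3: "(\<lambda>t. S i n u t - T n u t) \<in> l2" using l2_diff[OF Sl[OF u] Tl[OF u]] by blast
    have n3: "l2norm (\<lambda>t. S i n u t - T n u t) = l2norm (\<lambda>t. T n u t - S i n u t)" by (rule l2norm_swap)
    have eq: "(\<lambda>t. T m u t - T n u t) = (\<lambda>t. (T m u t - S i m u t) + (S i m u t - S i n u t) + (S i n u t - T n u t))"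
      by auto
    have "l2norm (\<lambda>t. T m u t - T n u t) \<le> l2norm (\<lambda>t. T m u t - S i m u t) + l2norm (\<lambda>t. S i m u t - S i n u t) + l2norm (\<lambda>t. S i n u t - T n u t)"
      unfolding eq using l2_add[OF a1 a2] l2_add[OF l2_add[OF a1 a2, THEN conjunct1] a3] by linarith
    also have "\<dots> < e" using appr[OF u, of m i] appr[OF u, of n i] n3 N[OF m n] small by linarith
    finally show "l2norm (\<lambda>t. T m u t - T n u t) < e" .
  qed
qed

lemma conj_diff_norm:
  fixes s :: "'g::group_add"
  assumes "u \<in> l2" "\<And>x. x \<in> l2 \<Longrightarrow> l2norm (\<lambda>t. A x t - B x t) \<le> c * l2norm x"
  shows "l2norm (\<lambda>t. (Rsh (- s) \<circ> A \<circ> Rsh s) u t - (Rsh (- s) \<circ> B \<circ> Rsh s) u t) \<le> c * l2norm u"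
proof -
  have su: "Rsh s u \<in> l2" using Rsh_l2 assms(1) by auto
  have "(\<lambda>t. (Rsh (- s) \<circ> A \<circ> Rsh s) u t - (Rsh (- s) \<circ> B \<circ> Rsh s) u t) = Rsh (- s) (\<lambda>t. A (Rsh s u) t - B (Rsh s u) t)"
    by (simp add: Rsh_def)
  moreover have "l2norm (Rsh (- s) (\<lambda>t. A (Rsh s u) t - B (Rsh s u) t)) = l2norm (\<lambda>t. A (Rsh s u) t - B (Rsh s u) t)"
    unfolding Rsh_def by (rule l2_reindex(2)[OF bij_plusr])
  ultimately have "l2norm (\<lambda>t. (Rsh (- s) \<circ> A \<circ> Rsh s) u t - (Rsh (- s) \<circ> B \<circ> Rsh s) u t) = l2norm (\<lambda>t. A (Rsh s u) t - B (Rsh s u) t)"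
    by simp
  also have "\<dots> \<le> c * l2norm (Rsh s u)" by (rule assms(2)[OF su])
  also have "\<dots> = c * l2norm u" using Rsh_l2(2)[OF assms(1)] by simp
  finally show ?thesis .
qed

lemma BDO_limit:
  fixes A :: "('g::{group_add,countable}) lop" and g :: "nat \<Rightarrow> 'g"
  assumes A: "A \<in> BDO"
  shows "\<exists>\<phi> Ag. strict_mono \<phi> \<and> is_limit_op A (\<lambda>j. g (\<phi> j)) Ag"
proof -
  obtain C where C: "bl A C" using BDO_bl[OF A] by blast
  have "\<forall>i. \<exists>B. B \<in> BDO_gen \<and> (\<forall>u\<in>l2. (\<lambda>t. A u t - B u t) \<in> l2 \<and> l2norm (\<lambda>t. A u t - B u t) \<le> (1 / real (Suc i)) * l2norm u)"
  proof
    fix i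
    have e: "(0::real) < 1 / real (Suc i)" by simp
    have "\<forall>\<epsilon>>0. \<exists>B\<in>BDO_gen. \<forall>u\<in>l2. (\<lambda>t. A u t - B u t) \<in> l2 \<and> l2norm (\<lambda>t. A u t - B u t) \<le> \<epsilon> * l2norm u"
      using A unfolding BDO_def by blast
    then have "\<exists>B\<in>BDO_gen. \<forall>u\<in>l2. (\<lambda>t. A u t - B u t) \<in> l2 \<and> l2norm (\<lambda>t. A u t - B u t) \<le> (1 / real (Suc i)) * l2norm u"
      using e by blast
    then show "\<exists>B. B \<in> BDO_gen \<and> (\<forall>u\<in>l2. (\<lambda>t. A u t - B u t) \<in> l2 \<and> l2norm (\<lambda>t. A u t - B u t) \<le> (1 / real (Suc i)) * l2norm u)"
      by blast
  qed
  then obtain B where B: "\<And>i. B i \<in> BDO_gen"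
    "\<And>i u. u \<in> l2 \<Longrightarrow> (\<lambda>t. A u t - B i u t) \<in> l2 \<and> l2norm (\<lambda>t. A u t - B i u t) \<le> (1 / real (Suc i)) * l2norm u"
    by metis
  have "\<forall>i. \<exists>B'. B' \<in> BDO_gen \<and> is_adjoint (B i) B'" using BDO_gen_adjoint B(1) by blast
  then obtain B' where B': "\<And>i. B' i \<in> BDO_gen" "\<And>i. is_adjoint (B i) (B' i)" by metis
  have Bb: "\<And>i. \<exists>c. bl (B i) c" using BDO_gen_bl B(1) by blast
  have B'b: "\<And>i. \<exists>c. bl (B' i) c" using BDO_gen_bl B'(1) by blast
  define P where "P i (s :: nat \<Rightarrow> nat) \<longleftrightarrow> scauchy (\<lambda>j. Rsh (- g (s j)) \<circ> B i \<circ> Rsh (g (s j))) \<and>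
                             scauchy (\<lambda>j. Rsh (- g (s j)) \<circ> B' i \<circ> Rsh (g (s j)))" for i s
  interpret subseqs P
  proof
    fix n and s :: "nat \<Rightarrow> nat" assume s: "strict_mono s"
    obtain r1 where r1: "strict_mono r1" "scauchy (\<lambda>j. Rsh (- g (s (r1 j))) \<circ> B n \<circ> Rsh (g (s (r1 j))))"
      using rich_gen[OF B(1), of n, unfolded rich_def, rule_format, of "\<lambda>j. g (s j)"] by blast
    obtain r2 where r2: "strict_mono r2" "scauchy (\<lambda>j. Rsh (- g (s (r1 (r2 j)))) \<circ> B' n \<circ> Rsh (g (s (r1 (r2 j)))))"
      using rich_gen[OF B'(1), of n, unfolded rich_def, rule_format, of "\<lambda>j. g (s (r1 j))"] by blast
    have "P n (s \<circ> (r1 \<circ> r2))" unfolding P_def using scauchy_subseq[OF r1(2) r2(1)] r2(2) by (simp add: o_def)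
    then show "\<exists>r'. strict_mono r' \<and> P n (s \<circ> r')" using strict_mono_o[OF r1(1) r2(1)] by blast
  qed
  have stab: "\<And>r s n. strict_mono r \<Longrightarrow> P n s \<Longrightarrow> P n (s \<circ> r)"
    unfolding P_def using scauchy_subseq by (simp add: o_def) blast
  define \<phi> where "\<phi> = diagseq"
  have Pd: "scauchy (\<lambda>j. Rsh (- g (\<phi> j)) \<circ> B i \<circ> Rsh (g (\<phi> j)))"
           "scauchy (\<lambda>j. Rsh (- g (\<phi> j)) \<circ> B' i \<circ> Rsh (g (\<phi> j)))" for i
  proof -
    have "P i (diagseq \<circ> (+) (Suc i))" by (rule diagseq_holds[OF stab])
    then have a: "scauchy (\<lambda>j. Rsh (- g (diagseq (Suc i + j))) \<circ> B i \<circ> Rsh (g (diagseq (Suc i + j))))"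
      and b: "scauchy (\<lambda>j. Rsh (- g (diagseq (Suc i + j))) \<circ> B' i \<circ> Rsh (g (diagseq (Suc i + j))))"
      unfolding P_def by (simp_all add: o_def)
    show "scauchy (\<lambda>j. Rsh (- g (\<phi> j)) \<circ> B i \<circ> Rsh (g (\<phi> j)))"
      unfolding \<phi>_def by (rule scauchy_shift[OF a])
    show "scauchy (\<lambda>j. Rsh (- g (\<phi> j)) \<circ> B' i \<circ> Rsh (g (\<phi> j)))"
      unfolding \<phi>_def by (rule scauchy_shift[OF b])
  qed
  have phm: "strict_mono \<phi>" unfolding \<phi>_def by (rule subseq_diagseq)
  have sA: "scauchy (\<lambda>j. Rsh (- g (\<phi> j)) \<circ> A \<circ> Rsh (g (\<phi> j)))"
  proof (rule approx_scauchy[where S="\<lambda>i j. Rsh (- g (\<phi> j)) \<circ> B i \<circ> Rsh (g (\<phi> j))"])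
    show "\<And>i. scauchy (\<lambda>j. Rsh (- g (\<phi> j)) \<circ> B i \<circ> Rsh (g (\<phi> j)))" by (rule Pd(1))
    show "\<And>n u. u \<in> l2 \<Longrightarrow> (Rsh (- g (\<phi> n)) \<circ> A \<circ> Rsh (g (\<phi> n))) u \<in> l2"
      using bndD(1)[OF blD(2)[OF conj_bl[OF C]]] by blast
    show "\<And>i n u. u \<in> l2 \<Longrightarrow> (Rsh (- g (\<phi> n)) \<circ> B i \<circ> Rsh (g (\<phi> n))) u \<in> l2"
    proof -
      fix i n and u :: "'g \<Rightarrow> complex" assume "u \<in> l2"
      obtain c where "bl (B i) c" using Bb by blast
      then show "(Rsh (- g (\<phi> n)) \<circ> B i \<circ> Rsh (g (\<phi> n))) u \<in> l2" using bndD(1)[OF blD(2)[OF conj_bl]] \<open>u \<in> l2\<close> by blast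
    qed
    show "\<And>i n u. u \<in> l2 \<Longrightarrow> l2norm (\<lambda>t. (Rsh (- g (\<phi> n)) \<circ> A \<circ> Rsh (g (\<phi> n))) u t - (Rsh (- g (\<phi> n)) \<circ> B i \<circ> Rsh (g (\<phi> n))) u t) \<le> l2norm u / (Suc i)"
      using conj_diff_norm[of _ A "B _" "1 / real (Suc _)"] B(2) by simp
  qed
  have adjdiff: "l2norm (\<lambda>t. adj A x t - B' i x t) \<le> (1 / real (Suc i)) * l2norm x" if x: "x \<in> l2" for x i
  proof -
    obtain c where c: "bl (B i) c" using Bb by blast
    define D where "D = (\<lambda>u t. A u t - B i u t)"
    have Dl: "lin D" unfolding lin_def D_def
      using linD[OF blD(1)[OF C]] linD[OF blD(1)[OF c]] by (auto simp: algebra_simps)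
    have Db: "bl D (1 / real (Suc i))" unfolding bl_def bnd_def D_def using Dl[unfolded D_def] B(2) by auto
    have "adj A x = (\<lambda>t. adj D x t + B' i x t)"
    proof (rule ext)
      fix t
      have "B' i x t = adj (B i) x t" using adj_unique[OF B'(2) x] by simp
      moreover have "adj D x t = adj A x t - adj (B i) x t"
        unfolding adj_def D_def
        by (rule inner_diff_right[OF bndD(1)[OF blD(2)[OF C] delta_l2] bndD(1)[OF blD(2)[OF c] delta_l2] x])
      ultimately show "adj A x t = adj D x t + B' i x t" by simp
    qed
    then have "(\<lambda>t. adj A x t - B' i x t) = adj D x" by auto
    then show ?thesis using adj_l2[OF Db x] by simp
  qed
  have sAs: "scauchy (\<lambda>j. Rsh (- g (\<phi> j)) \<circ> adj A \<circ> Rsh (g (\<phi> j)))"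
  proof (rule approx_scauchy[where S="\<lambda>i j. Rsh (- g (\<phi> j)) \<circ> B' i \<circ> Rsh (g (\<phi> j))"])
    show "\<And>i. scauchy (\<lambda>j. Rsh (- g (\<phi> j)) \<circ> B' i \<circ> Rsh (g (\<phi> j)))" by (rule Pd(2))
    show "\<And>n u. u \<in> l2 \<Longrightarrow> (Rsh (- g (\<phi> n)) \<circ> adj A \<circ> Rsh (g (\<phi> n))) u \<in> l2"
      using bndD(1)[OF blD(2)[OF conj_bl[OF adj_bl[OF C]]]] by blast
    show "\<And>i n u. u \<in> l2 \<Longrightarrow> (Rsh (- g (\<phi> n)) \<circ> B' i \<circ> Rsh (g (\<phi> n))) u \<in> l2"
    proof -
      fix i n and u :: "'g \<Rightarrow> complex" assume "u \<in> l2"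
      obtain c where "bl (B' i) c" using B'b by blast
      then show "(Rsh (- g (\<phi> n)) \<circ> B' i \<circ> Rsh (g (\<phi> n))) u \<in> l2" using bndD(1)[OF blD(2)[OF conj_bl]] \<open>u \<in> l2\<close> by blast
    qed
    show "\<And>i n u. u \<in> l2 \<Longrightarrow> l2norm (\<lambda>t. (Rsh (- g (\<phi> n)) \<circ> adj A \<circ> Rsh (g (\<phi> n))) u t - (Rsh (- g (\<phi> n)) \<circ> B' i \<circ> Rsh (g (\<phi> n))) u t) \<le> l2norm u / (Suc i)"
      using conj_diff_norm[of _ "adj A" "B' _" "1 / real (Suc _)"] adjdiff by simp
  qed
  define Ag where "Ag = (\<lambda>u t. lim (\<lambda>n. (Rsh (- g (\<phi> n)) \<circ> A \<circ> Rsh (g (\<phi> n))) u t))"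
  define Ags where "Ags = (\<lambda>u t. lim (\<lambda>n. (Rsh (- g (\<phi> n)) \<circ> adj A \<circ> Rsh (g (\<phi> n))) u t))"
  have c1: "strong_conv (\<lambda>j. Rsh (- g (\<phi> j)) \<circ> A \<circ> Rsh (g (\<phi> j))) Ag"
    unfolding Ag_def by (rule scauchy_lim[OF _ sA]) (use bndD(1)[OF blD(2)[OF conj_bl[OF C]]] in blast)
  have c2: "strong_conv (\<lambda>j. Rsh (- g (\<phi> j)) \<circ> adj A \<circ> Rsh (g (\<phi> j))) Ags"
    unfolding Ags_def by (rule scauchy_lim[OF _ sAs]) (use bndD(1)[OF blD(2)[OF conj_bl[OF adj_bl[OF C]]]] in blast)
  have "is_adjoint Ag Ags"
    by (rule adjoint_limit[OF c1 c2 conj_adjoint[OF adj_is_adjoint[OF C]]])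
  then have "is_limit_op A (\<lambda>j. g (\<phi> j)) Ag"
    unfolding is_limit_op_def using c1 c2 adj_is_adjoint[OF C] by blast
  then show ?thesis using phm by blast
qed


context opsetup
begin

lemma limit_formula:
  assumes A: "bl A C"
    and m1: "\<And>r. 1 \<le> m r" and mmono: "strict_mono m"
    and eta: "\<And>r. - \<eta> r \<in> Y (m r)"
    and hdef: "\<And>r. h r = v (m r) + (\<eta> r + w)"
    and PY: "strong_conv (\<lambda>r. Proj (gmul (Y (m r)) {\<eta> r + w})) (Proj YY)"
    and LA: "is_limit_op A (\<lambda>r. \<eta> r + w) Ag"
  shows "is_limit_op (Ob A) h (\<lambda>u t. Proj YY (Ag (Proj YY u)) t + (u t - Proj YY u t))"
proof -
  from LA have GA: "strong_conv (\<lambda>r. Rsh (- (\<eta> r + w)) \<circ> A \<circ> Rsh (\<eta> r + w)) Ag"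
    and "\<exists>Bs Bhs. is_adjoint A Bs \<and> is_adjoint Ag Bhs \<and> strong_conv (\<lambda>r. Rsh (- (\<eta> r + w)) \<circ> Bs \<circ> Rsh (\<eta> r + w)) Bhs"
    unfolding is_limit_op_def by auto
  then obtain As Ags where As: "is_adjoint A As" and GAs0: "strong_conv (\<lambda>r. Rsh (- (\<eta> r + w)) \<circ> As \<circ> Rsh (\<eta> r + w)) Ags"
    by blast
  have GAs: "strong_conv (\<lambda>r. Rsh (- (\<eta> r + w)) \<circ> adj A \<circ> Rsh (\<eta> r + w)) Ags"
  proof (rule strong_conv_cong[OF GAs0])
    fix n and u :: "'g \<Rightarrow> complex" assume u: "u \<in> l2"
    have "As (Rsh (\<eta> n + w) u) = adj A (Rsh (\<eta> n + w) u)" by (rule adj_unique[OF As Rsh_l2(1)[OF u]])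
    then show "(Rsh (- (\<eta> n + w)) \<circ> adj A \<circ> Rsh (\<eta> n + w)) u = (Rsh (- (\<eta> n + w)) \<circ> As \<circ> Rsh (\<eta> n + w)) u" by simp
  qed simp
  have c1: "strong_conv (\<lambda>r. Rsh (- h r) \<circ> Ob A \<circ> Rsh (h r)) (\<lambda>u t. Proj YY (Ag (Proj YY u)) t + (u t - Proj YY u t))"
    by (rule core[OF A m1 mmono eta hdef PY GA])
  have c2': "strong_conv (\<lambda>r. Rsh (- h r) \<circ> Ob (adj A) \<circ> Rsh (h r)) (\<lambda>u t. Proj YY (Ags (Proj YY u)) t + (u t - Proj YY u t))"
    by (rule core[OF adj_bl[OF A] m1 mmono eta hdef PY GAs])
  have c2: "strong_conv (\<lambda>r. Rsh (- h r) \<circ> adj (Ob A) \<circ> Rsh (h r)) (\<lambda>u t. Proj YY (Ags (Proj YY u)) t + (u t - Proj YY u t))"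
  proof (rule strong_conv_cong[OF c2'])
    fix n and u :: "'g \<Rightarrow> complex" assume u: "u \<in> l2"
    show "(Rsh (- h n) \<circ> adj (Ob A) \<circ> Rsh (h n)) u = (Rsh (- h n) \<circ> Ob (adj A) \<circ> Rsh (h n)) u"
      using adj_Ob[OF A Rsh_l2(1)[OF u]] by simp
  qed simp
  have adjOb: "is_adjoint (Ob A) (adj (Ob A))" by (rule adj_is_adjoint[OF Ob_bl[OF A]])
  have "is_adjoint (\<lambda>u t. Proj YY (Ag (Proj YY u)) t + (u t - Proj YY u t)) (\<lambda>u t. Proj YY (Ags (Proj YY u)) t + (u t - Proj YY u t))"
    by (rule adjoint_limit[OF c1 c2 conj_adjoint[OF adjOb]])
  then show ?thesis unfolding is_limit_op_def using c1 c2 adjOb by blast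
qed

end

lemma finite_gmul: "finite X \<Longrightarrow> finite Z \<Longrightarrow> finite (gmul X Z)"
proof -
  assume "finite X" "finite Z"
  moreover have "gmul X Z = (\<lambda>(a, b). a + b) ` (X \<times> Z)" unfolding gmul_def by auto
  ultimately show ?thesis by simp
qed

lemma finite_Omega_pow: "finite \<Omega> \<Longrightarrow> finite (Omega_pow \<Omega> n)"
  by (induction n) (auto intro: finite_gmul)

lemma finite_Omega_le: "finite \<Omega> \<Longrightarrow> finite (Omega_le \<Omega> n)"
  unfolding Omega_le_def using finite_Omega_pow by auto

lemma tends_to_inf_finite:
  assumes "tends_to_inf h" "finite F"
  shows "finite {n. h n \<in> F}"
proof -
  obtain N where "\<And>n. N \<le> n \<Longrightarrow> h n \<notin> F" using assms unfolding tends_to_inf_def eventually_sequentially by blast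
  then have "{n. h n \<in> F} \<subseteq> {..<N}" by (auto simp: not_le[symmetric])
  then show ?thesis using finite_subset by blast
qed

lemma choose_seq:
  fixes K :: "nat \<Rightarrow> nat"
  assumes inf: "\<And>M. infinite {n \<in> S. M < K n}"
  shows "\<exists>\<psi>::nat \<Rightarrow> nat. strict_mono \<psi> \<and> strict_mono (\<lambda>j. K (\<psi> j)) \<and> (\<forall>j. \<psi> j \<in> S)"
proof -
  have ex: "\<exists>n. n \<in> S \<and> p < n \<and> K p < K n" for p
  proof -
    have "infinite {n \<in> S. K p < K n}" by (rule inf)
    then obtain n where "p < n" "n \<in> {n \<in> S. K p < K n}" using infinite_nat_iff_unbounded by blast
    then show ?thesis by blast
  qed
  obtain n0 where n0: "n0 \<in> S" using inf[of 0] by (metis (no_types, lifting) empty_Collect_eq finite.emptyI)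
  define step where "step p = (SOME n. n \<in> S \<and> p < n \<and> K p < K n)" for p
  have st: "step p \<in> S" "p < step p" "K p < K (step p)" for p
    using someI_ex[OF ex[of p]] unfolding step_def by auto
  define psi where "psi = rec_nat n0 (\<lambda>_ p. step p)"
  have ps: "psi 0 = n0" "psi (Suc j) = step (psi j)" for j unfolding psi_def by simp_all
  have "strict_mono psi" by (rule strict_monoI_Suc) (simp add: ps st)
  moreover have "strict_mono (\<lambda>j. K (psi j))" by (rule strict_monoI_Suc) (simp add: ps st)
  moreover have "\<forall>j. psi j \<in> S" by (intro allI, case_tac j) (simp_all add: ps st n0)
  ultimately show ?thesis by (intro exI[of _ psi] conjI)
qed


theorem mainTheorem8:
  fixes \<Omega> :: "'g::{group_add,countable} set"
    and Y :: "nat \<Rightarrow> 'g set" and v :: "nat \<Rightarrow> 'g" and A :: "'g lop"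
  assumes Om_fin: "finite \<Omega>" and Om_e: "0 \<in> \<Omega>"
    and Om_gen: "(\<Union>k\<in>{1..}. Omega_pow \<Omega> k) = UNIV"
    and Y_fin: "\<And>n. 1 \<le> n \<Longrightarrow> finite (Y n)"
    and Y_inc: "\<And>m n. 1 \<le> m \<Longrightarrow> m \<le> n \<Longrightarrow> Y m \<subseteq> Y n"
    and Y_union: "(\<Union>n\<in>{1..}. Y n) = UNIV"
    and v_infl: "\<And>m n. 1 \<le> m \<Longrightarrow> 1 \<le> n \<Longrightarrow> m \<noteq> n \<Longrightarrow>
        gmul (Zset \<Omega> Y m) {- v m} \<inter> gmul (Zset \<Omega> Y n) {- v n} = {}"
    and A_BDO: "A \<in> BDO"
  defines "OpA \<equiv> (\<lambda>u t. Op_seq v Y (\<lambda>n. Proj (Y n) \<circ> A \<circ> Proj (Y n)) u t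
                          + Proj (Gamma' Y v) u t)"
  shows
   "(\<forall>h B r. tends_to_inf h \<and> is_limit_op OpA h B \<and>
       infinite {n. \<exists>k\<ge>1. h n \<in> gmul (gmul {v k} (ginv (bd_Om \<Omega> (Y k)))) (Omega_le \<Omega> r)}
     \<longrightarrow> (\<exists>k \<eta> w \<psi> YY \<phi> Ag. strict_mono k \<and> (\<forall>j. 1 \<le> k j) \<and>
           (\<forall>j. \<eta> j \<in> ginv (bd_Om \<Omega> (Y (k j)))) \<and>
           strict_mono \<psi> \<and> (\<forall>j. v (k j) + \<eta> j + w = h (\<psi> j)) \<and>
           strong_conv (\<lambda>j. Proj (gmul (Y (k j)) {\<eta> j + w})) (Proj YY) \<and>
           strict_mono \<phi> \<and> is_limit_op A (\<lambda>j. \<eta> (\<phi> j) + w) Ag \<and>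
           (\<forall>u\<in>l2. B u = (\<lambda>t. Proj YY (Ag (Proj YY u)) t + (u t - Proj YY u t)))))
  \<and> (\<forall>k \<eta> w YY nn Ag. strict_mono k \<and> (\<forall>j. 1 \<le> k j) \<and>
       (\<forall>j. \<eta> (k j) \<in> ginv (bd_Om \<Omega> (Y (k j)))) \<and>
       strong_conv (\<lambda>j. Proj (gmul (Y (k j)) {\<eta> (k j) + w})) (Proj YY) \<and>
       strict_mono nn \<and> is_limit_op A (\<lambda>r. \<eta> (k (nn r)) + w) Ag
     \<longrightarrow> is_limit_op OpA (\<lambda>r. v (k (nn r)) + \<eta> (k (nn r)) + w)
           (\<lambda>u t. Proj YY (Ag (Proj YY u)) t + (u t - Proj YY u t)))"
proof -
  interpret opsetup \<Omega> Y v by unfold_locales (use Om_gen v_infl in auto)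
  obtain C where C: "bl A C" using BDO_bl[OF A_BDO] by blast
  have OpA: "OpA = Ob A" unfolding OpA_def Ob_def by simp
  have bdY: "\<And>k e. e \<in> ginv (bd_Om \<Omega> (Y k)) \<Longrightarrow> - e \<in> Y k"
    unfolding ginv_def bd_Om_def by auto
  show ?thesis
  proof (rule conjI)
    show "\<forall>h B r. tends_to_inf h \<and> is_limit_op OpA h B \<and>
       infinite {n. \<exists>k\<ge>1. h n \<in> gmul (gmul {v k} (ginv (bd_Om \<Omega> (Y k)))) (Omega_le \<Omega> r)}
     \<longrightarrow> (\<exists>k \<eta> w \<psi> YY \<phi> Ag. strict_mono k \<and> (\<forall>j. 1 \<le> k j) \<and>
           (\<forall>j. \<eta> j \<in> ginv (bd_Om \<Omega> (Y (k j)))) \<and>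
           strict_mono \<psi> \<and> (\<forall>j. v (k j) + \<eta> j + w = h (\<psi> j)) \<and>
           strong_conv (\<lambda>j. Proj (gmul (Y (k j)) {\<eta> j + w})) (Proj YY) \<and>
           strict_mono \<phi> \<and> is_limit_op A (\<lambda>j. \<eta> (\<phi> j) + w) Ag \<and>
           (\<forall>u\<in>l2. B u = (\<lambda>t. Proj YY (Ag (Proj YY u)) t + (u t - Proj YY u t))))"
    proof (intro allI impI)
      fix h B r
      assume H: "tends_to_inf h \<and> is_limit_op OpA h B \<and>
       infinite {n. \<exists>k\<ge>1. h n \<in> gmul (gmul {v k} (ginv (bd_Om \<Omega> (Y k)))) (Omega_le \<Omega> r)}"
      define S where "S = {n. \<exists>k\<ge>1. h n \<in> gmul (gmul {v k} (ginv (bd_Om \<Omega> (Y k)))) (Omega_le \<Omega> r)}"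
      have Sinf: "infinite S" using H unfolding S_def by blast
      have hinf: "tends_to_inf h" using H by blast
      have memS: "\<exists>p. 1 \<le> fst p \<and> fst (snd p) \<in> ginv (bd_Om \<Omega> (Y (fst p))) \<and> snd (snd p) \<in> Omega_le \<Omega> r \<and> h n = v (fst p) + fst (snd p) + snd (snd p)"
        if n: "n \<in> S" for n
      proof -
        obtain k where k: "1 \<le> k" "h n \<in> gmul (gmul {v k} (ginv (bd_Om \<Omega> (Y k)))) (Omega_le \<Omega> r)"
          using n unfolding S_def by blast
        obtain a x where ax: "h n = a + x" "a \<in> gmul {v k} (ginv (bd_Om \<Omega> (Y k)))" "x \<in> Omega_le \<Omega> r"
          using k(2) unfolding gmul_def by blast
        obtain e where e: "a = v k + e" "e \<in> ginv (bd_Om \<Omega> (Y k))" using ax(2) unfolding gmul_def by blast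
        show ?thesis by (rule exI[of _ "(k, e, x)"]) (use k ax e in simp)
      qed
      have "\<forall>n. \<exists>p. n \<in> S \<longrightarrow> 1 \<le> fst p \<and> fst (snd p) \<in> ginv (bd_Om \<Omega> (Y (fst p))) \<and> snd (snd p) \<in> Omega_le \<Omega> r \<and> h n = v (fst p) + fst (snd p) + snd (snd p)"
        using memS by blast
      then obtain P where P: "\<And>n. n \<in> S \<Longrightarrow> 1 \<le> fst (P n) \<and> fst (snd (P n)) \<in> ginv (bd_Om \<Omega> (Y (fst (P n)))) \<and> snd (snd (P n)) \<in> Omega_le \<Omega> r \<and> h n = v (fst (P n)) + fst (snd (P n)) + snd (snd (P n))"
        using choice by metis
      define K where "K n = fst (P n)" for n
      define E where "E n = fst (snd (P n))" for n
      define W where "W n = snd (snd (P n))" for n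
      have KEW: "\<And>n. n \<in> S \<Longrightarrow> 1 \<le> K n \<and> E n \<in> ginv (bd_Om \<Omega> (Y (K n))) \<and> W n \<in> Omega_le \<Omega> r \<and> h n = v (K n) + E n + W n"
        unfolding K_def E_def W_def using P .
      have finO: "finite (Omega_le \<Omega> r)" by (rule finite_Omega_le[OF Om_fin])
      have "\<exists>w\<in>Omega_le \<Omega> r. infinite {n \<in> S. W n = w}"
      proof (rule ccontr)
        assume "\<not> ?thesis"
        then have "finite (\<Union>w\<in>Omega_le \<Omega> r. {n \<in> S. W n = w})" using finO by auto
        moreover have "S \<subseteq> (\<Union>w\<in>Omega_le \<Omega> r. {n \<in> S. W n = w})" using KEW by auto
        ultimately show False using Sinf finite_subset by blast
      qed
      then obtain w where w: "w \<in> Omega_le \<Omega> r" "infinite {n \<in> S. W n = w}" by blast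
      define S' where "S' = {n \<in> S. W n = w}"
      have infK: "infinite {n \<in> S'. M < K n}" for M
      proof
        assume fin1: "finite {n \<in> S'. M < K n}"
        define FM where "FM = (\<Union>k\<in>{1..M}. (\<lambda>e. v k + e + w) ` ginv (bd_Om \<Omega> (Y k)))"
        have "finite FM" unfolding FM_def ginv_def bd_Om_def using Y_fin
          by (intro finite_UN_I) (auto intro: finite_subset)
        then have fin2: "finite {n. h n \<in> FM}" by (rule tends_to_inf_finite[OF hinf])
        have "{n \<in> S'. \<not> M < K n} \<subseteq> {n. h n \<in> FM}"
        proof
          fix n assume n: "n \<in> {n \<in> S'. \<not> M < K n}"
          then have nS: "n \<in> S" and nW: "W n = w" and nK: "K n \<le> M" unfolding S'_def by auto
          have kn: "K n \<in> {1..M}" using KEW[OF nS] nK by simp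
          have en: "E n \<in> ginv (bd_Om \<Omega> (Y (K n)))" using KEW[OF nS] by simp
          have hn: "h n = v (K n) + E n + w" using KEW[OF nS] nW by simp
          have "h n \<in> (\<lambda>e. v (K n) + e + w) ` ginv (bd_Om \<Omega> (Y (K n)))" using hn en by blast
          then show "n \<in> {n. h n \<in> FM}" unfolding FM_def using kn by blast
        qed
        then have "finite {n \<in> S'. \<not> M < K n}" using fin2 finite_subset by blast
        moreover have "S' = {n \<in> S'. M < K n} \<union> {n \<in> S'. \<not> M < K n}" by auto
        ultimately have "finite S'" using fin1 by (metis finite_UnI)
        then show False using w(2) unfolding S'_def by simp
      qed
      obtain \<psi>0 :: "nat \<Rightarrow> nat" where \<psi>0: "strict_mono \<psi>0" "strict_mono (\<lambda>j. K (\<psi>0 j))" "\<And>j. \<psi>0 j \<in> S'"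
        using choose_seq[of S' K] infK by blast
      define k0 where "k0 (j::nat) = K (\<psi>0 j)" for j
      define \<eta>0 where "\<eta>0 (j::nat) = E (\<psi>0 j)" for j
      have k0m: "strict_mono k0" using \<psi>0(2) unfolding k0_def .
      have pj: "1 \<le> k0 j" "\<eta>0 j \<in> ginv (bd_Om \<Omega> (Y (k0 j)))" "v (k0 j) + \<eta>0 j + w = h (\<psi>0 j)" for j
      proof -
        have a: "\<psi>0 j \<in> S" "W (\<psi>0 j) = w" using \<psi>0(3)[of j] unfolding S'_def by auto
        note b = KEW[OF a(1)]
        show "1 \<le> k0 j" unfolding k0_def using b by simp
        show "\<eta>0 j \<in> ginv (bd_Om \<Omega> (Y (k0 j)))" unfolding k0_def \<eta>0_def using b by simp
        show "v (k0 j) + \<eta>0 j + w = h (\<psi>0 j)" unfolding k0_def \<eta>0_def using b a(2) by simp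
      qed
      define f where "f (j::nat) t = (if t \<in> gmul (Y (k0 j)) {\<eta>0 j + w} then 1 else (0::complex))" for j t
      have f1: "\<And>j t. cmod (f j t) \<le> 1" unfolding f_def by simp
      obtain \<theta> where \<theta>: "strict_mono \<theta>" "\<And>t. convergent (\<lambda>j. f (\<theta> j) t)"
        using diag_pw[of f 1, OF f1] by blast
      define c where "c t = lim (\<lambda>j. f (\<theta> j) t)" for t
      have cv: "(\<lambda>j. f (\<theta> j) t) \<longlonglongrightarrow> c t" for t using \<theta>(2) unfolding c_def convergent_LIMSEQ_iff .
      have c01: "c t \<in> {0, 1}" for t
        by (rule closed_sequentially[OF finite_imp_closed _ cv]) (auto simp: f_def)
      define YY where "YY = {t. c t = 1}"
      have PYc: "strong_conv (\<lambda>j. Proj (gmul (Y (k0 (\<theta> j))) {\<eta>0 (\<theta> j) + w})) (Proj YY)"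
        unfolding strong_conv_def
      proof (intro ballI conjI allI)
        fix u :: "'g \<Rightarrow> complex" assume u: "u \<in> l2"
        show "Proj YY u \<in> l2" using Proj_l2[OF u] by simp
        fix j show "Proj (gmul (Y (k0 (\<theta> j))) {\<eta>0 (\<theta> j) + w}) u \<in> l2" using Proj_l2[OF u] by simp
      next
        fix u :: "'g \<Rightarrow> complex" assume u: "u \<in> l2"
        have e1: "(\<lambda>t. Proj (gmul (Y (k0 (\<theta> j))) {\<eta>0 (\<theta> j) + w}) u t - Proj YY u t) = (\<lambda>t. f (\<theta> j) t * u t - c t * u t)" for j
        proof (rule ext)
          fix t show "Proj (gmul (Y (k0 (\<theta> j))) {\<eta>0 (\<theta> j) + w}) u t - Proj YY u t = f (\<theta> j) t * u t - c t * u t"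
            using c01[of t] unfolding Proj_def f_def YY_def by auto
        qed
        show "(\<lambda>j. l2norm (\<lambda>t. Proj (gmul (Y (k0 (\<theta> j))) {\<eta>0 (\<theta> j) + w}) u t - Proj YY u t)) \<longlonglongrightarrow> 0"
          unfolding e1 by (rule mult_conv[where M=1, OF _ cv u]) (simp add: f_def)
      qed
      obtain \<phi> Ag where \<phi>: "strict_mono \<phi>" "is_limit_op A (\<lambda>j. \<eta>0 (\<theta> (\<phi> j)) + w) Ag"
        using BDO_limit[OF A_BDO, of "\<lambda>j. \<eta>0 (\<theta> j) + w"] by blast
      have LF: "is_limit_op (Ob A) (\<lambda>r. h (\<psi>0 (\<theta> (\<phi> r)))) (\<lambda>u t. Proj YY (Ag (Proj YY u)) t + (u t - Proj YY u t))"
      proof (rule limit_formula[OF C, where m="\<lambda>r. k0 (\<theta> (\<phi> r))" and \<eta>="\<lambda>r. \<eta>0 (\<theta> (\<phi> r))" and w=w])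
        show "\<And>r. 1 \<le> k0 (\<theta> (\<phi> r))" using pj(1) .
        show "strict_mono (\<lambda>r. k0 (\<theta> (\<phi> r)))"
          using strict_mono_o[OF strict_mono_o[OF k0m \<theta>(1)] \<phi>(1)] by (simp add: o_def)
        show "\<And>r. - \<eta>0 (\<theta> (\<phi> r)) \<in> Y (k0 (\<theta> (\<phi> r)))" using bdY pj(2) by blast
        show "\<And>r. h (\<psi>0 (\<theta> (\<phi> r))) = v (k0 (\<theta> (\<phi> r))) + (\<eta>0 (\<theta> (\<phi> r)) + w)"
          using pj(3) by (simp add: add.assoc)
        show "strong_conv (\<lambda>r. Proj (gmul (Y (k0 (\<theta> (\<phi> r)))) {\<eta>0 (\<theta> (\<phi> r)) + w})) (Proj YY)"
          using strong_conv_subseq[OF PYc \<phi>(1)] by simp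
        show "is_limit_op A (\<lambda>r. \<eta>0 (\<theta> (\<phi> r)) + w) Ag" using \<phi>(2) .
      qed
      have s1: "strong_conv (\<lambda>r. Rsh (- h (\<psi>0 (\<theta> (\<phi> r)))) \<circ> Ob A \<circ> Rsh (h (\<psi>0 (\<theta> (\<phi> r))))) (\<lambda>u t. Proj YY (Ag (Proj YY u)) t + (u t - Proj YY u t))"
        using LF unfolding is_limit_op_def by blast
      have s0: "strong_conv (\<lambda>m. Rsh (- h m) \<circ> Ob A \<circ> Rsh (h m)) B"
        using H unfolding is_limit_op_def OpA by blast
      have mono3: "strict_mono (\<lambda>r. \<psi>0 (\<theta> (\<phi> r)))"
        using strict_mono_o[OF strict_mono_o[OF \<psi>0(1) \<theta>(1)] \<phi>(1)] by (simp add: o_def)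
      have s2: "strong_conv (\<lambda>r. Rsh (- h (\<psi>0 (\<theta> (\<phi> r)))) \<circ> Ob A \<circ> Rsh (h (\<psi>0 (\<theta> (\<phi> r))))) B"
        using strong_conv_subseq[OF s0 mono3] by simp
      have Beq: "\<forall>u\<in>l2. B u = (\<lambda>t. Proj YY (Ag (Proj YY u)) t + (u t - Proj YY u t))"
        using strong_conv_unique[OF s2 s1] by simp
      show "\<exists>k \<eta> w \<psi> YY \<phi> Ag. strict_mono k \<and> (\<forall>j. 1 \<le> k j) \<and>
           (\<forall>j. \<eta> j \<in> ginv (bd_Om \<Omega> (Y (k j)))) \<and>
           strict_mono \<psi> \<and> (\<forall>j. v (k j) + \<eta> j + w = h (\<psi> j)) \<and>
           strong_conv (\<lambda>j. Proj (gmul (Y (k j)) {\<eta> j + w})) (Proj YY) \<and>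
           strict_mono \<phi> \<and> is_limit_op A (\<lambda>j. \<eta> (\<phi> j) + w) Ag \<and>
           (\<forall>u\<in>l2. B u = (\<lambda>t. Proj YY (Ag (Proj YY u)) t + (u t - Proj YY u t)))"
      proof (intro exI conjI)
        show "strict_mono (\<lambda>j. k0 (\<theta> j))" using strict_mono_o[OF k0m \<theta>(1)] by (simp add: o_def)
        show "\<forall>j. 1 \<le> k0 (\<theta> j)" using pj(1) by blast
        show "\<forall>j. \<eta>0 (\<theta> j) \<in> ginv (bd_Om \<Omega> (Y (k0 (\<theta> j))))" using pj(2) by blast
        show "strict_mono (\<lambda>j. \<psi>0 (\<theta> j))" using strict_mono_o[OF \<psi>0(1) \<theta>(1)] by (simp add: o_def)
        show "\<forall>j. v (k0 (\<theta> j)) + \<eta>0 (\<theta> j) + w = h (\<psi>0 (\<theta> j))" using pj(3) by blast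
        show "strong_conv (\<lambda>j. Proj (gmul (Y (k0 (\<theta> j))) {\<eta>0 (\<theta> j) + w})) (Proj YY)" by (rule PYc)
        show "strict_mono \<phi>" by (rule \<phi>(1))
        show "is_limit_op A (\<lambda>j. \<eta>0 (\<theta> (\<phi> j)) + w) Ag" by (rule \<phi>(2))
        show "\<forall>u\<in>l2. B u = (\<lambda>t. Proj YY (Ag (Proj YY u)) t + (u t - Proj YY u t))" by (rule Beq)
      qed
    qed
  next
    show "\<forall>k \<eta> w YY nn Ag. strict_mono k \<and> (\<forall>j. 1 \<le> k j) \<and>
       (\<forall>j. \<eta> (k j) \<in> ginv (bd_Om \<Omega> (Y (k j)))) \<and>
       strong_conv (\<lambda>j. Proj (gmul (Y (k j)) {\<eta> (k j) + w})) (Proj YY) \<and>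
       strict_mono nn \<and> is_limit_op A (\<lambda>r. \<eta> (k (nn r)) + w) Ag
     \<longrightarrow> is_limit_op OpA (\<lambda>r. v (k (nn r)) + \<eta> (k (nn r)) + w)
           (\<lambda>u t. Proj YY (Ag (Proj YY u)) t + (u t - Proj YY u t))"
    proof (intro allI impI)
      fix k \<eta> w YY nn Ag
      assume H: "strict_mono k \<and> (\<forall>j. 1 \<le> k j) \<and>
       (\<forall>j. \<eta> (k j) \<in> ginv (bd_Om \<Omega> (Y (k j)))) \<and>
       strong_conv (\<lambda>j. Proj (gmul (Y (k j)) {\<eta> (k j) + w})) (Proj YY) \<and>
       strict_mono nn \<and> is_limit_op A (\<lambda>r. \<eta> (k (nn r)) + w) Ag"
      show "is_limit_op OpA (\<lambda>r. v (k (nn r)) + \<eta> (k (nn r)) + w)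
           (\<lambda>u t. Proj YY (Ag (Proj YY u)) t + (u t - Proj YY u t))"
        unfolding OpA
      proof (rule limit_formula[OF C, where m="\<lambda>r. k (nn r)" and \<eta>="\<lambda>r. \<eta> (k (nn r))" and w=w])
        show "\<And>r. 1 \<le> k (nn r)" using H by blast
        show "strict_mono (\<lambda>r. k (nn r))" using strict_mono_o[of k nn] H by (simp add: o_def)
        show "\<And>r. - \<eta> (k (nn r)) \<in> Y (k (nn r))" using bdY H by blast
        show "\<And>r. v (k (nn r)) + \<eta> (k (nn r)) + w = v (k (nn r)) + (\<eta> (k (nn r)) + w)"
          by (simp add: add.assoc)
        show "strong_conv (\<lambda>r. Proj (gmul (Y (k (nn r))) {\<eta> (k (nn r)) + w})) (Proj YY)"
          using strong_conv_subseq[of "\<lambda>j. Proj (gmul (Y (k j)) {\<eta> (k j) + w})" "Proj YY" nn] H by simp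
        show "is_limit_op A (\<lambda>r. \<eta> (k (nn r)) + w) Ag" using H by blast
      qed
    qed
  qed
qed


end
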